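(* The diagram $\mathcal D_c$ admits a lifting, with respect to the functor $\operatorname{Con}_c$, by a diagram of finite lattices and lattice embeddings.
   Context: Posets are viewed as categories (one morphism $p\to q$ iff $p\leq q$); a $P$-diagram in a category is a functor from $P$. $\operatorname{Con}_c$ is the functor sending a lattice $L$ to its $\{\vee,0\}$-semilattice of compact (finitely generated) congruences, and a lattice homomorphism $f\colon K\to L$ to the map sending a compact congruence $\alpha$ of $K$ to the congruence of $L$ generated by $\{(f(x),f(y)):(x,y)\in\alpha\}$. A $P$-diagram $\mathcal L$ of lattices lifts a $P$-diagram $\mathcal S$ of semilattices if $\operatorname{Con}_c\circ\mathcal L$ and $\mathcal S$ are naturally isomorphic. The diagram $\mathcal D_c$ is indexed by $\mathcal P(\{0,1,2\})$ ordered by inclusion. Let $U=\mathcal P(\{0,1,2,3,4\})$ with union and $\varnothing$. Put $\xi_0=\{0,4\},\xi_1=\{3\},\xi_2=\{2\},\xi_3=\{1,4\}$; $\eta_0=\{0,4\},\eta_1=\{1,4\},\eta_2=\{2\},\eta_3=\{3,4\}$; $\zeta_0=\{0,4\},\zeta_1=\{1\},\zeta_2=\{3\},\zeta_3=\{2,4\}$; $\alpha_0=\{0,1,4\},\beta_0=\{2,3,4\}$; $\alpha_1=\{0,3,4\},\beta_1=\{1,2,4\}$; $\alpha_2=\{0,2,4\},\beta_2=\{1,3,4\}$. Let $T_0$ (resp. $T_1$, $T_2$) be the $\{\vee,0\}$-subsemilattice of $U$ generated by the $\xi_j$ (resp. $\eta_j$, $\zeta_j$), $j<4$; $S_i$ ($i<3$)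 the one generated by $\{\alpha_i,\beta_i\}$; $\mathbf 2=\{\varnothing,\{0,1,2,3,4\}\}$. $\mathcal D_c$ assigns $\mathbf 2$ to $\varnothing$, $S_i$ to $\{i\}$, $T_j$ to $\{0,1,2\}\setminus\{j\}$, $U$ to $\{0,1,2\}$, with inclusion maps. *)

theory Defs
  imports Main
begin

record 'a latt =
  lcarrier :: "'a set"
  ljoin :: "'a \<Rightarrow> 'a \<Rightarrow> 'a"
  lmeet :: "'a \<Rightarrow> 'a \<Rightarrow> 'a"

definition is_lattice :: "('a, 'b) latt_scheme \<Rightarrow> bool" where
  "is_lattice L \<longleftrightarrow> lcarrier L \<noteq> {} \<and>
     (\<forall>x\<in>lcarrier L. \<forall>y\<in>lcarrier L.
        ljoin L x y \<in> lcarrier L \<and> lmeet L x y \<in> lcarrier L \<and>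
        ljoin L x y = ljoin L y x \<and> lmeet L x y = lmeet L y x \<and>
        ljoin L x (lmeet L x y) = x \<and> lmeet L x (ljoin L x y) = x) \<and>
     (\<forall>x\<in>lcarrier L. \<forall>y\<in>lcarrier L. \<forall>z\<in>lcarrier L.
        ljoin L (ljoin L x y) z = ljoin L x (ljoin L y z) \<and>
        lmeet L (lmeet L x y) z = lmeet L x (lmeet L y z))"

definition lattice_hom :: "('a, 'b) latt_scheme \<Rightarrow> ('c, 'd) latt_scheme \<Rightarrow> ('a \<Rightarrow> 'c) \<Rightarrow> bool" where
  "lattice_hom K L f \<longleftrightarrow> f ` lcarrier K \<subseteq> lcarrier L \<and>
     (\<forall>x\<in>lcarrier K. \<forall>y\<in>lcarrier K.
        f (ljoin K x y) = ljoin L (f x) (f y) \<and> f (lmeet K x y) = lmeet L (f x) (f y))"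

definition lattice_embedding :: "('a, 'b) latt_scheme \<Rightarrow> ('c, 'd) latt_scheme \<Rightarrow> ('a \<Rightarrow> 'c) \<Rightarrow> bool" where
  "lattice_embedding K L f \<longleftrightarrow> lattice_hom K L f \<and> inj_on f (lcarrier K)"

definition lcongruence :: "('a, 'b) latt_scheme \<Rightarrow> ('a \<times> 'a) set \<Rightarrow> bool" where
  "lcongruence L \<theta> \<longleftrightarrow> equiv (lcarrier L) \<theta> \<and>
     (\<forall>x y u v. (x, y) \<in> \<theta> \<longrightarrow> (u, v) \<in> \<theta> \<longrightarrow>
        (ljoin L x u, ljoin L y v) \<in> \<theta> \<and> (lmeet L x u, lmeet L y v) \<in> \<theta>)"

definition Cg :: "('a, 'b) latt_scheme \<Rightarrow> ('a \<times> 'a) set \<Rightarrow> ('a \<times> 'a) set" where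
  "Cg L R = \<Inter> {\<theta>. lcongruence L \<theta> \<and> R \<subseteq> \<theta>}"

text \<open>Compact (= finitely generated) congruences.\<close>
definition Con_c :: "('a, 'b) latt_scheme \<Rightarrow> ('a \<times> 'a) set set" where
  "Con_c L = {Cg L F | F. finite F \<and> F \<subseteq> lcarrier L \<times> lcarrier L}"

definition con_join :: "('a, 'b) latt_scheme \<Rightarrow> ('a \<times> 'a) set \<Rightarrow> ('a \<times> 'a) set \<Rightarrow> ('a \<times> 'a) set" where
  "con_join L \<alpha> \<beta> = Cg L (\<alpha> \<union> \<beta>)"

definition con_zero :: "('a, 'b) latt_scheme \<Rightarrow> ('a \<times> 'a) set" where
  "con_zero L = Id_on (lcarrier L)"

definition Con_c_map :: "('c, 'd) latt_scheme \<Rightarrow> ('a \<Rightarrow> 'c) \<Rightarrow> ('a \<times> 'a) set \<Rightarrow> ('c \<times> 'c) set" where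
  "Con_c_map L f \<alpha> = Cg L ((\<lambda>(x, y). (f x, f y)) ` \<alpha>)"

text \<open>The {\<or>,0}-subsemilattice of (Pow {0..4}, \<union>, {}) generated by G.\<close>
definition gen_sl :: "nat set set \<Rightarrow> nat set set" where
  "gen_sl G = {\<Union> F | F. F \<subseteq> G}"

definition U_sl :: "nat set set" where
  "U_sl = Pow {0,1,2,3,4}"

definition two_sl :: "nat set set" where
  "two_sl = {{}, {0,1,2,3,4}}"

definition xi_gens :: "nat set list" where
  "xi_gens = [{0,4}, {3}, {2}, {1,4}]"

definition eta_gens :: "nat set list" where
  "eta_gens = [{0,4}, {1,4}, {2}, {3,4}]"

definition zeta_gens :: "nat set list" where
  "zeta_gens = [{0,4}, {1}, {3}, {2,4}]"

definition T_sl :: "nat \<Rightarrow> nat set set" where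
  "T_sl j = gen_sl (set ([xi_gens, eta_gens, zeta_gens] ! j))"

definition S_sl :: "nat \<Rightarrow> nat set set" where
  "S_sl i = gen_sl (set ([[{0,1,4}, {2,3,4}], [{0,3,4}, {1,2,4}], [{0,2,4}, {1,3,4}]] ! i))"

text \<open>D_c on an index p \<subseteq> {0,1,2}; all transition maps are inclusions.\<close>
definition Dc :: "nat set \<Rightarrow> nat set set" where
  "Dc p = (if p = {} then two_sl
           else if p = {0,1,2} then U_sl
           else if card p = 1 then S_sl (the_elem p)
           else T_sl (the_elem ({0,1,2} - p)))"

definition lattice_diagram :: "(nat set \<Rightarrow> ('a, 'b) latt_scheme) \<Rightarrow> (nat set \<Rightarrow> nat set \<Rightarrow> 'a \<Rightarrow> 'a) \<Rightarrow> bool" where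
  "lattice_diagram L f \<longleftrightarrow>
     (\<forall>p. p \<subseteq> {0,1,2} \<longrightarrow> is_lattice (L p)) \<and>
     (\<forall>p q. p \<subseteq> q \<and> q \<subseteq> {0,1,2} \<longrightarrow> lattice_hom (L p) (L q) (f p q)) \<and>
     (\<forall>p. p \<subseteq> {0,1,2} \<longrightarrow> (\<forall>x\<in>lcarrier (L p). f p p x = x)) \<and>
     (\<forall>p q r. p \<subseteq> q \<and> q \<subseteq> r \<and> r \<subseteq> {0,1,2} \<longrightarrow>
        (\<forall>x\<in>lcarrier (L p). f p r x = f q r (f p q x)))"

text \<open>Con_c \<circ> (L,f) is naturally isomorphic to D_c (whose arrows are inclusions):
  a family of {\<or>,0}-semilattice isomorphisms \<phi> p : Con_c (L p) \<rightarrow> Dc p, natural in p.\<close>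
definition lifts_Dc :: "(nat set \<Rightarrow> ('a, 'b) latt_scheme) \<Rightarrow> (nat set \<Rightarrow> nat set \<Rightarrow> 'a \<Rightarrow> 'a) \<Rightarrow> bool" where
  "lifts_Dc L f \<longleftrightarrow>
     (\<exists>\<phi> :: nat set \<Rightarrow> ('a \<times> 'a) set \<Rightarrow> nat set.
        (\<forall>p. p \<subseteq> {0,1,2} \<longrightarrow>
           bij_betw (\<phi> p) (Con_c (L p)) (Dc p) \<and>
           \<phi> p (con_zero (L p)) = {} \<and>
           (\<forall>\<alpha>\<in>Con_c (L p). \<forall>\<beta>\<in>Con_c (L p).
              \<phi> p (con_join (L p) \<alpha> \<beta>) = \<phi> p \<alpha> \<union> \<phi> p \<beta>)) \<and>
        (\<forall>p q. p \<subseteq> q \<and> q \<subseteq> {0,1,2} \<longrightarrow>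
           (\<forall>\<alpha>\<in>Con_c (L p). \<phi> q (Con_c_map (L q) (f p q) \<alpha>) = \<phi> p \<alpha>)))"

end

theory Submission
  imports Defs
begin


definition cj :: "nat \<Rightarrow> nat \<Rightarrow> nat" where
 "cj a b = max (a mod 2) (b mod 2) + 2 * max (a div 2 mod 2) (b div 2 mod 2) + 4 * max (a div 4) (b div 4)"
definition cm :: "nat \<Rightarrow> nat \<Rightarrow> nat" where
 "cm a b = min (a mod 2) (b mod 2) + 2 * min (a div 2 mod 2) (b div 2 mod 2) + 4 * min (a div 4) (b div 4)"
definition gj :: "nat \<Rightarrow> nat \<Rightarrow> nat" where
 "gj a b = (if a = 8 then (if b = 0 \<or> b = 8 then 8 else 7) else if b = 8 then (if a = 0 then 8 else 7) else cj a b)"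
definition gm :: "nat \<Rightarrow> nat \<Rightarrow> nat" where
 "gm a b = (if a = 8 then (if b = 7 \<or> b = 8 then 8 else 0) else if b = 8 then (if a = 7 then 8 else 0) else cm a b)"
lemma nine: "(a::nat) < 9 \<longleftrightarrow> a = 0 \<or> a = 1 \<or> a = 2 \<or> a = 3 \<or> a = 4 \<or> a = 5 \<or> a = 6 \<or> a = 7 \<or> a = 8" by auto
lemma G_2: "a < 9 \<Longrightarrow> b < 9 \<Longrightarrow> gj a b < 9 \<and> gm a b < 9 \<and> gj a b = gj b a \<and> gm a b = gm b a \<and>
   gj a (gm a b) = a \<and> gm a (gj a b) = a \<and> gj a a = a \<and> gm a a = a \<and> gm (gj a b) b = b \<and> gm b (gj a b) = b"
  unfolding nine by (elim disjE; simp add: gj_def gm_def cj_def cm_def)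
lemma G_assoc: "a < 9 \<Longrightarrow> b < 9 \<Longrightarrow> c < 9 \<Longrightarrow> gj (gj a b) c = gj a (gj b c) \<and> gm (gm a b) c = gm a (gm b c)"
  unfolding nine by (elim disjE; simp add: gj_def gm_def cj_def cm_def)

definition enc :: "bool \<Rightarrow> bool \<Rightarrow> bool \<Rightarrow> bool \<Rightarrow> nat \<Rightarrow> nat" where
  "enc b0 b1 b2 b3 g = of_bool b0 + 2 * (of_bool b1 + 2 * (of_bool b2 + 2 * (of_bool b3 + 2 * g)))"
definition bt :: "nat \<Rightarrow> nat \<Rightarrow> bool" where "bt c x = odd (x div 2 ^ c)"
definition gp :: "nat \<Rightarrow> nat" where "gp x = x div 16"

lemma bt_0: "bt 0 (of_bool b + 2 * r) = b"
  unfolding bt_def by (cases b) auto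
lemma bt_Suc: "bt (Suc c) (of_bool b + 2 * r) = bt c r"
  unfolding bt_def by (cases b) (auto simp: div_mult2_eq)
lemma gp_alt: "gp (of_bool b0 + 2 * (of_bool b1 + 2 * (of_bool b2 + 2 * (of_bool b3 + 2 * g)))) = g"
  unfolding gp_def by (cases b0; cases b1; cases b2; cases b3) auto

lemma dec_enc[simp]:
  "bt 0 (enc b0 b1 b2 b3 g) = b0" "bt 1 (enc b0 b1 b2 b3 g) = b1"
  "bt 2 (enc b0 b1 b2 b3 g) = b2" "bt 3 (enc b0 b1 b2 b3 g) = b3"
  "gp (enc b0 b1 b2 b3 g) = g" "bt (Suc 0) (enc b0 b1 b2 b3 g) = b1"
proof -
  have i: "bt 1 = bt (Suc 0)" "bt 2 = bt (Suc (Suc 0))" "bt 3 = bt (Suc (Suc (Suc 0)))"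
    by (simp_all add: numeral_eq_Suc)
  show "bt 0 (enc b0 b1 b2 b3 g) = b0" "bt 1 (enc b0 b1 b2 b3 g) = b1"
  "bt 2 (enc b0 b1 b2 b3 g) = b2" "bt 3 (enc b0 b1 b2 b3 g) = b3"
  "gp (enc b0 b1 b2 b3 g) = g" "bt (Suc 0) (enc b0 b1 b2 b3 g) = b1"
  unfolding enc_def i by (simp_all only: bt_0 gp_alt bt_Suc)
qed

lemma enc_inject[simp]: "enc a0 a1 a2 a3 g = enc b0 b1 b2 b3 h \<longleftrightarrow> a0 = b0 \<and> a1 = b1 \<and> a2 = b2 \<and> a3 = b3 \<and> g = h"
proof
  assume H: "enc a0 a1 a2 a3 g = enc b0 b1 b2 b3 h"
  show "a0 = b0 \<and> a1 = b1 \<and> a2 = b2 \<and> a3 = b3 \<and> g = h"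
    using arg_cong[OF H, of "bt 0"] arg_cong[OF H, of "bt 1"] arg_cong[OF H, of "bt 2"]
      arg_cong[OF H, of "bt 3"] arg_cong[OF H, of "gp"] by simp
qed simp

lemma enc_less[simp]: "enc b0 b1 b2 b3 g < 144 \<longleftrightarrow> g < 9"
  by (cases b0; cases b1; cases b2; cases b3; simp add: enc_def; arith)

lemma enc_dec: "enc (bt 0 x) (bt 1 x) (bt 2 x) (bt 3 x) (gp x) = x"
proof -
  have h: "\<And>n::nat. of_bool (odd n) + 2 * (n div 2) = n" by simp
  have e: "x div 2 ^ 2 = x div 2 div 2" "x div 2 ^ 3 = x div 2 div 2 div 2"
    "x div 16 = x div 2 div 2 div 2 div 2" "x div 2 ^ 0 = x" "x div 2 ^ 1 = x div 2"
    by (simp_all add: div_mult2_eq flip: mult.assoc power_add)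
  show ?thesis unfolding enc_def bt_def gp_def e by (simp only: h)
qed

lemma U_ex: "(x::nat) < 144 \<Longrightarrow> \<exists>b0 b1 b2 b3 g. g < 9 \<and> x = enc b0 b1 b2 b3 g"
  by (metis enc_dec enc_less)



definition joinU :: "nat \<Rightarrow> nat \<Rightarrow> nat" where
  "joinU x y = enc (bt 0 x \<or> bt 0 y) (bt 1 x \<or> bt 1 y) (bt 2 x \<or> bt 2 y) (bt 3 x \<or> bt 3 y) (gj (gp x) (gp y))"
definition meetU :: "nat \<Rightarrow> nat \<Rightarrow> nat" where
  "meetU x y = enc (bt 0 x \<and> bt 0 y) (bt 1 x \<and> bt 1 y) (bt 2 x \<and> bt 2 y) (bt 3 x \<and> bt 3 y) (gm (gp x) (gp y))"
definition pr :: "nat \<Rightarrow> nat \<Rightarrow> nat" where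
  "pr c x = (if c = 4 then gp x else of_bool (bt c x))"
definition jC :: "nat \<Rightarrow> nat \<Rightarrow> nat \<Rightarrow> nat" where
  "jC c a b = (if c = 4 then gj a b else max a b)"
definition mC :: "nat \<Rightarrow> nat \<Rightarrow> nat \<Rightarrow> nat" where
  "mC c a b = (if c = 4 then gm a b else min a b)"

definition LL :: "nat set \<Rightarrow> nat latt" where
  "LL C = \<lparr>lcarrier = C, ljoin = joinU, lmeet = meetU\<rparr>"

lemma LL_simps[simp]: "lcarrier (LL C) = C" "ljoin (LL C) = joinU" "lmeet (LL C) = meetU"
  by (simp_all add: LL_def)

lemma five: "(c::nat) < 5 \<longleftrightarrow> c = 0 \<or> c = 1 \<or> c = 2 \<or> c = 3 \<or> c = 4" by auto

lemma join_enc[simp]: "joinU (enc a0 a1 a2 a3 g) (enc b0 b1 b2 b3 h) = enc (a0 \<or> b0) (a1 \<or> b1) (a2 \<or> b2) (a3 \<or> b3) (gj g h)"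
  by (simp add: joinU_def)
lemma meet_enc[simp]: "meetU (enc a0 a1 a2 a3 g) (enc b0 b1 b2 b3 h) = enc (a0 \<and> b0) (a1 \<and> b1) (a2 \<and> b2) (a3 \<and> b3) (gm g h)"
  by (simp add: meetU_def)

lemma pr_enc[simp]: "pr 0 (enc b0 b1 b2 b3 g) = of_bool b0" "pr 1 (enc b0 b1 b2 b3 g) = of_bool b1"
  "pr 2 (enc b0 b1 b2 b3 g) = of_bool b2" "pr 3 (enc b0 b1 b2 b3 g) = of_bool b3"
  "pr 4 (enc b0 b1 b2 b3 g) = g"
  by (simp_all add: pr_def)

lemma pr_join: "c < 5 \<Longrightarrow> pr c (joinU x y) = jC c (pr c x) (pr c y)"
  unfolding five joinU_def by (elim disjE) (simp_all add: jC_def pr_def)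
lemma pr_meet: "c < 5 \<Longrightarrow> pr c (meetU x y) = mC c (pr c x) (pr c y)"
  unfolding five meetU_def by (elim disjE) (simp_all add: mC_def pr_def)

lemma pr_lt2: "c < 4 \<Longrightarrow> pr c x \<in> {0,1}"
  by (simp add: pr_def)

lemma of_bool_eq_nat[simp]: "(of_bool a :: nat) = of_bool b \<longleftrightarrow> a = b"
  by (cases a; cases b) auto

lemma U_eq: assumes "x < 144" "y < 144" "\<forall>c<5. pr c x = pr c y" shows "x = y"
proof -
  have "pr 0 x = pr 0 y" "pr 1 x = pr 1 y" "pr 2 x = pr 2 y" "pr 3 x = pr 3 y" "pr 4 x = pr 4 y"
    using assms(3) by simp_all
  then have "bt 0 x = bt 0 y" "bt 1 x = bt 1 y" "bt 2 x = bt 2 y" "bt 3 x = bt 3 y" "gp x = gp y"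
    unfolding pr_def by simp_all
  note eqs = this
  have "x = enc (bt 0 x) (bt 1 x) (bt 2 x) (bt 3 x) (gp x)" by (rule enc_dec[symmetric])
  also have "\<dots> = enc (bt 0 y) (bt 1 y) (bt 2 y) (bt 3 y) (gp y)" using eqs by (simp only:)
  also have "\<dots> = y" by (rule enc_dec)
  finally show ?thesis .
qed

lemma U_laws:
  assumes "x < 144" "y < 144" "z < 144"
  shows "joinU x y < 144" "meetU x y < 144" "joinU x y = joinU y x" "meetU x y = meetU y x"
    "joinU x (meetU x y) = x" "meetU x (joinU x y) = x"
    "joinU (joinU x y) z = joinU x (joinU y z)" "meetU (meetU x y) z = meetU x (meetU y z)"
    "joinU x x = x" "meetU x x = x" "meetU (joinU x y) y = y"
proof -
  obtain a0 a1 a2 a3 g where x: "g < 9" "x = enc a0 a1 a2 a3 g" using U_ex[OF assms(1)] by blast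
  obtain b0 b1 b2 b3 h where y: "h < 9" "y = enc b0 b1 b2 b3 h" using U_ex[OF assms(2)] by blast
  obtain c0 c1 c2 c3 k where z: "k < 9" "z = enc c0 c1 c2 c3 k" using U_ex[OF assms(3)] by blast
  show "joinU x y < 144" "meetU x y < 144" 
    "joinU x (meetU x y) = x" "meetU x (joinU x y) = x"
    "joinU x x = x" "meetU x x = x" "meetU (joinU x y) y = y"
    using x y z by (auto simp: G_2)
  show "joinU x y = joinU y x" "meetU x y = meetU y x"
    using x y z G_2[of g h] by (auto)
  show "joinU (joinU x y) z = joinU x (joinU y z)" "meetU (meetU x y) z = meetU x (meetU y z)"
    using x y z G_assoc[of g h k] by (auto)
qed




definition sub :: "nat set \<Rightarrow> bool" where
  "sub C \<longleftrightarrow> C \<noteq> {} \<and> C \<subseteq> {..<144} \<and> (\<forall>x\<in>C. \<forall>y\<in>C. joinU x y \<in> C \<and> meetU x y \<in> C)"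
definition D :: "(nat \<times> nat) set \<Rightarrow> nat set" where
  "D R = {c. c < 5 \<and> (\<exists>(x,y)\<in>R. pr c x \<noteq> pr c y)}"
definition Th :: "nat set \<Rightarrow> nat set \<Rightarrow> (nat \<times> nat) set" where
  "Th C S = {(x,y). x \<in> C \<and> y \<in> C \<and> (\<forall>c<5. pr c x \<noteq> pr c y \<longrightarrow> c \<in> S)}"
definition charC :: "nat set \<Rightarrow> bool" where
  "charC C \<longleftrightarrow> (\<forall>\<theta>. lcongruence (LL C) \<theta> \<longrightarrow> Th C (D \<theta>) \<subseteq> \<theta>)"
definition simple_on :: "nat set \<Rightarrow> (nat \<Rightarrow> nat \<Rightarrow> nat) \<Rightarrow> (nat \<Rightarrow> nat \<Rightarrow> nat) \<Rightarrow> bool" where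
  "simple_on V j m \<longleftrightarrow> (\<forall>\<psi>. \<psi> \<subseteq> V \<times> V \<longrightarrow> (\<forall>v\<in>V. (v,v) \<in> \<psi>) \<longrightarrow> sym \<psi> \<longrightarrow> trans \<psi> \<longrightarrow>
     (\<forall>g h v. (g,h) \<in> \<psi> \<longrightarrow> v \<in> V \<longrightarrow> (j g v, j h v) \<in> \<psi> \<and> (m g v, m h v) \<in> \<psi>) \<longrightarrow>
     (\<exists>g h. (g,h) \<in> \<psi> \<and> g \<noteq> h) \<longrightarrow> \<psi> = V \<times> V)"

lemma sub_lattice: assumes "sub C" shows "is_lattice (LL C)"
proof -
  have ne: "C \<noteq> {}" and lt: "\<And>x. x \<in> C \<Longrightarrow> x < 144"
    and cl: "\<And>x y. x \<in> C \<Longrightarrow> y \<in> C \<Longrightarrow> joinU x y \<in> C \<and> meetU x y \<in> C"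
    using assms unfolding sub_def by auto
  have 2: "\<forall>x\<in>C. \<forall>y\<in>C. joinU x y \<in> C \<and> meetU x y \<in> C \<and> joinU x y = joinU y x \<and> meetU x y = meetU y x \<and>
     joinU x (meetU x y) = x \<and> meetU x (joinU x y) = x"
  proof (intro ballI)
    fix x y assume a: "x \<in> C" "y \<in> C"
    then have "x < 144" "y < 144" using lt by auto
    then show "joinU x y \<in> C \<and> meetU x y \<in> C \<and> joinU x y = joinU y x \<and> meetU x y = meetU y x \<and>
     joinU x (meetU x y) = x \<and> meetU x (joinU x y) = x" using cl[OF a] U_laws[of x y x] by simp
  qed
  have 3: "\<forall>x\<in>C. \<forall>y\<in>C. \<forall>z\<in>C. joinU (joinU x y) z = joinU x (joinU y z) \<and> meetU (meetU x y) z = meetU x (meetU y z)"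
  proof (intro ballI)
    fix x y z assume a: "x \<in> C" "y \<in> C" "z \<in> C"
    then have "x < 144" "y < 144" "z < 144" using lt by auto
    then show "joinU (joinU x y) z = joinU x (joinU y z) \<and> meetU (meetU x y) z = meetU x (meetU y z)"
      using U_laws[of x y z] by simp
  qed
  show ?thesis unfolding is_lattice_def LL_simps using ne 2 3 by blast
qed

lemma sub_hom: "sub C \<Longrightarrow> C \<subseteq> C' \<Longrightarrow> lattice_hom (LL C) (LL C') (\<lambda>x. x)"
  unfolding lattice_hom_def sub_def by auto

lemma Th_cong: assumes "sub C" shows "lcongruence (LL C) (Th C S)"
proof -
  have cl: "\<And>x y. x \<in> C \<Longrightarrow> y \<in> C \<Longrightarrow> joinU x y \<in> C \<and> meetU x y \<in> C" using assms unfolding sub_def by auto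
  show ?thesis
  proof -
    have a: "Th C S \<subseteq> C \<times> C" unfolding Th_def by auto
    have b: "refl_on C (Th C S)" unfolding refl_on_def Th_def by auto
    have c: "sym (Th C S)" unfolding sym_def Th_def by auto
    have d: "trans (Th C S)" unfolding trans_def Th_def by fastforce
    have e: "\<forall>x y u v. (x, y) \<in> Th C S \<longrightarrow> (u, v) \<in> Th C S \<longrightarrow>
        (joinU x u, joinU y v) \<in> Th C S \<and> (meetU x u, meetU y v) \<in> Th C S"
    proof (intro allI impI)
      fix x y u v assume "(x, y) \<in> Th C S" "(u, v) \<in> Th C S"
      then show "(joinU x u, joinU y v) \<in> Th C S \<and> (meetU x u, meetU y v) \<in> Th C S"
        unfolding Th_def using cl by (auto simp: pr_join pr_meet) (metis+)
    qed
    show ?thesis unfolding lcongruence_def equiv_def using a b c d e by simp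
  qed
qed

lemma Cg_sub: "R \<subseteq> Cg L R" unfolding Cg_def by blast
lemma Cg_least: "lcongruence L \<theta> \<Longrightarrow> R \<subseteq> \<theta> \<Longrightarrow> Cg L R \<subseteq> \<theta>" unfolding Cg_def by blast

lemma Inter_cong: assumes H: "\<And>\<theta>. \<theta> \<in> F \<Longrightarrow> lcongruence L \<theta>" and ne: "F \<noteq> {}" shows "lcongruence L (\<Inter>F)"
proof -
  obtain \<theta>0 where t0: "\<theta>0 \<in> F" using ne by blast
  have "\<Inter>F \<subseteq> \<theta>0" using t0 by blast
  also have "\<theta>0 \<subseteq> lcarrier L \<times> lcarrier L" using H[OF t0] unfolding lcongruence_def equiv_def by blast
  finally have s: "\<Inter>F \<subseteq> lcarrier L \<times> lcarrier L" .
  have r: "refl_on (lcarrier L) (\<Inter>F)"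
    unfolding refl_on_def
  proof (intro ballI InterI)
    fix x \<theta> assume "x \<in> lcarrier L" "\<theta> \<in> F"
    then show "(x,x) \<in> \<theta>" using H unfolding lcongruence_def equiv_def refl_on_def by blast
  qed
  have sy: "sym (\<Inter>F)"
  proof (rule symI, rule InterI)
    fix x y \<theta> assume "(x,y) \<in> \<Inter>F" "\<theta> \<in> F"
    then have "(x,y) \<in> \<theta>" "sym \<theta>" using H unfolding lcongruence_def equiv_def by blast+
    then show "(y,x) \<in> \<theta>" by (rule symD[rotated])
  qed
  have tr: "trans (\<Inter>F)"
  proof (rule transI, rule InterI)
    fix x y z \<theta> assume "(x,y) \<in> \<Inter>F" "(y,z) \<in> \<Inter>F" "\<theta> \<in> F"
    then have "(x,y) \<in> \<theta>" "(y,z) \<in> \<theta>" "trans \<theta>" using H unfolding lcongruence_def equiv_def by blast+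
    then show "(x,z) \<in> \<theta>" by (meson transD)
  qed
  have c: "\<forall>x y u v. (x, y) \<in> \<Inter>F \<longrightarrow> (u, v) \<in> \<Inter>F \<longrightarrow>
        (ljoin L x u, ljoin L y v) \<in> \<Inter>F \<and> (lmeet L x u, lmeet L y v) \<in> \<Inter>F"
  proof (intro allI impI conjI InterI)
    fix x y u v \<theta> assume a: "(x,y) \<in> \<Inter>F" "(u,v) \<in> \<Inter>F" "\<theta> \<in> F"
    then have "(x,y) \<in> \<theta>" "(u,v) \<in> \<theta>" by blast+
    moreover have "\<forall>x y u v. (x, y) \<in> \<theta> \<longrightarrow> (u, v) \<in> \<theta> \<longrightarrow>
        (ljoin L x u, ljoin L y v) \<in> \<theta> \<and> (lmeet L x u, lmeet L y v) \<in> \<theta>"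
      using H[OF a(3)] unfolding lcongruence_def by blast
    ultimately show "(ljoin L x u, ljoin L y v) \<in> \<theta>" "(lmeet L x u, lmeet L y v) \<in> \<theta>" by blast+
  qed
  show ?thesis unfolding lcongruence_def equiv_def using s r sy tr c by blast
qed

lemma Cg_cong: assumes "sub C" "R \<subseteq> C \<times> C" shows "lcongruence (LL C) (Cg (LL C) R)"
proof -
  have e: "Th C UNIV = C \<times> C" unfolding Th_def by auto
  have "lcongruence (LL C) (C \<times> C)" using Th_cong[OF assms(1), of UNIV] unfolding e .
  then have "C \<times> C \<in> {\<theta>. lcongruence (LL C) \<theta> \<and> R \<subseteq> \<theta>}"
    using assms(2) by auto
  then show ?thesis unfolding Cg_def by (intro Inter_cong) auto
qed

lemma cong_sub: "lcongruence (LL C) \<theta> \<Longrightarrow> \<theta> \<subseteq> C \<times> C"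
  unfolding lcongruence_def equiv_def by simp

lemma cong_Th: "lcongruence (LL C) \<theta> \<Longrightarrow> \<theta> \<subseteq> Th C (D \<theta>)"
  using cong_sub[of C \<theta>] unfolding Th_def D_def by blast

lemma D_mono: "R \<subseteq> R' \<Longrightarrow> D R \<subseteq> D R'" unfolding D_def by blast
lemma D_Th: "D (Th C S) \<subseteq> S" unfolding D_def Th_def by blast
lemma D_Un: "D (A \<union> B) = D A \<union> D B" unfolding D_def by blast
lemma D_Id: "D (Id_on C) = {}" unfolding D_def by auto

lemma D_Cg: assumes "sub C" "R \<subseteq> C \<times> C" shows "D (Cg (LL C) R) = D R"
proof
  show "D R \<subseteq> D (Cg (LL C) R)" by (rule D_mono[OF Cg_sub])
  have "R \<subseteq> Th C (D R)" using assms(2) unfolding Th_def D_def by blast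
  then have "Cg (LL C) R \<subseteq> Th C (D R)" by (rule Cg_least[OF Th_cong[OF assms(1)]])
  then show "D (Cg (LL C) R) \<subseteq> D R" using D_mono D_Th by blast
qed

lemma Con_c_cong: assumes "sub C" "\<theta> \<in> Con_c (LL C)" shows "lcongruence (LL C) \<theta>"
  using assms Cg_cong unfolding Con_c_def by auto

lemma inj_D: assumes "sub C" "charC C" shows "inj_on D (Con_c (LL C))"
proof (rule inj_onI)
  fix a b assume a: "a \<in> Con_c (LL C)" and b: "b \<in> Con_c (LL C)" and e: "D a = D b"
  have ca: "lcongruence (LL C) a" and cb: "lcongruence (LL C) b" using Con_c_cong assms(1) a b by auto
  have "a \<subseteq> Th C (D a)" by (rule cong_Th[OF ca])
  also have "\<dots> \<subseteq> b" using assms(2) cb e unfolding charC_def by auto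
  finally have 1: "a \<subseteq> b" .
  have "b \<subseteq> Th C (D b)" by (rule cong_Th[OF cb])
  also have "\<dots> \<subseteq> a" using assms(2) ca unfolding charC_def e[symmetric] by auto
  finally show "a = b" using 1 by auto
qed

lemma img_D: assumes "sub C" shows "D ` Con_c (LL C) = {D F | F. finite F \<and> F \<subseteq> C \<times> C}"
  unfolding Con_c_def using D_Cg[OF assms] by auto

lemma simple_01: assumes "V \<subseteq> {0,1}" shows "simple_on V j m"
  unfolding simple_on_def
proof (intro allI impI)
  fix \<psi> assume s: "\<psi> \<subseteq> V \<times> V" and r: "\<forall>v\<in>V. (v, v) \<in> \<psi>" and sy: "sym \<psi>"
    and ex: "\<exists>g h. (g, h) \<in> \<psi> \<and> g \<noteq> h"
  then obtain g h where gh: "(g,h) \<in> \<psi>" "g \<noteq> h" by blast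
  have hg: "(h,g) \<in> \<psi>" using sy gh by (auto dest: symD)
  show "\<psi> = V \<times> V"
  proof
    show "V \<times> V \<subseteq> \<psi>"
    proof
      fix p assume "p \<in> V \<times> V"
      then obtain a b where p: "p = (a,b)" "a \<in> V" "b \<in> V" by blast
      show "p \<in> \<psi>"
      proof (cases "a = b")
        case True then show ?thesis using r p by auto
      next
        case False
        have "g \<in> {0,1}" "h \<in> {0,1}" "a \<in> {0,1}" "b \<in> {0,1}" using gh(1) s assms p by auto
        then have "(a,b) = (g,h) \<or> (a,b) = (h,g)" using False gh(2) by auto
        then show ?thesis using gh hg p by auto
      qed
    qed
  qed (rule s)
qed




lemma prod_char:
  assumes sub: "sub C" and I: "I \<subseteq> {..<5}"
    and inj: "\<forall>x\<in>C. \<forall>y\<in>C. (\<forall>c\<in>I. pr c x = pr c y) \<longrightarrow> x = y"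
    and mix: "\<forall>x\<in>C. \<forall>y\<in>C. \<forall>c\<in>I. \<exists>z\<in>C. pr c z = pr c y \<and> (\<forall>c'\<in>I. c' \<noteq> c \<longrightarrow> pr c' z = pr c' x)"
    and bC: "b \<in> C" and tC: "t \<in> C" and bt: "\<forall>x\<in>C. meetU (joinU x b) t = x"
    and simp: "\<forall>c\<in>I. simple_on (pr c ` C) (jC c) (mC c)"
    and cong: "lcongruence (LL C) \<theta>"
  shows "{(x,y). x \<in> C \<and> y \<in> C \<and> (\<forall>c\<in>I. pr c x \<noteq> pr c y \<longrightarrow> c \<in> D \<theta>)} \<subseteq> \<theta>"
proof -
  have \<theta>C: "\<theta> \<subseteq> C \<times> C" using cong unfolding lcongruence_def equiv_def by simp
  have rf: "\<And>x. x \<in> C \<Longrightarrow> (x,x) \<in> \<theta>" using cong unfolding lcongruence_def equiv_def refl_on_def by simp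
  have sy: "\<And>x y. (x,y) \<in> \<theta> \<Longrightarrow> (y,x) \<in> \<theta>" using cong unfolding lcongruence_def equiv_def sym_def by blast
  have tr: "\<And>x y z. (x,y) \<in> \<theta> \<Longrightarrow> (y,z) \<in> \<theta> \<Longrightarrow> (x,z) \<in> \<theta>"
    using cong unfolding lcongruence_def equiv_def trans_def by blast
  have cj: "\<And>x y u v. (x,y) \<in> \<theta> \<Longrightarrow> (u,v) \<in> \<theta> \<Longrightarrow> (joinU x u, joinU y v) \<in> \<theta>"
    using cong unfolding lcongruence_def by simp
  have cm: "\<And>x y u v. (x,y) \<in> \<theta> \<Longrightarrow> (u,v) \<in> \<theta> \<Longrightarrow> (meetU x u, meetU y v) \<in> \<theta>"
    using cong unfolding lcongruence_def by simp
  have lt: "\<And>x. x \<in> C \<Longrightarrow> x < 144" and cl: "\<And>x y. x \<in> C \<Longrightarrow> y \<in> C \<Longrightarrow> joinU x y \<in> C \<and> meetU x y \<in> C"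
    using sub unfolding sub_def by auto
  have prj: "\<And>c x y. c \<in> I \<Longrightarrow> pr c (joinU x y) = jC c (pr c x) (pr c y)" using I pr_join by auto
  have prm: "\<And>c x y. c \<in> I \<Longrightarrow> pr c (meetU x y) = mC c (pr c x) (pr c y)" using I pr_meet by auto
  have absb: "meetU (joinU x w) w = w" if "x \<in> C" "w \<in> C" for x w using U_laws(11)[of x w x] lt that by auto
  have idj: "joinU x x = x" if "x \<in> C" for x using U_laws(9)[of x x x] lt that by auto
  have idm: "meetU x x = x" if "x \<in> C" for x using U_laws(10)[of x x x] lt that by auto
  have injI: "\<And>x y. x \<in> C \<Longrightarrow> y \<in> C \<Longrightarrow> (\<And>c. c \<in> I \<Longrightarrow> pr c x = pr c y) \<Longrightarrow> x = y"
    using inj by blast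
  define mx where "mx x y c = (SOME z. z \<in> C \<and> pr c z = pr c y \<and> (\<forall>c'\<in>I. c' \<noteq> c \<longrightarrow> pr c' z = pr c' x))" for x y c
  have mxp: "mx x y c \<in> C \<and> pr c (mx x y c) = pr c y \<and> (\<forall>c'\<in>I. c' \<noteq> c \<longrightarrow> pr c' (mx x y c) = pr c' x)"
    if "x \<in> C" "y \<in> C" "c \<in> I" for x y c
  proof -
    have "\<exists>z. z \<in> C \<and> pr c z = pr c y \<and> (\<forall>c'\<in>I. c' \<noteq> c \<longrightarrow> pr c' z = pr c' x)" using mix that by blast
    then show ?thesis unfolding mx_def by (rule someI_ex)
  qed
  define V where "V c = pr c ` C" for c
  define \<psi> where "\<psi> c = {(g,h). g \<in> V c \<and> h \<in> V c \<and> (\<forall>z1\<in>C. \<forall>z2\<in>C. pr c z1 = g \<longrightarrow> pr c z2 = h \<longrightarrow>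
      (\<forall>c'\<in>I. c' \<noteq> c \<longrightarrow> pr c' z1 = pr c' z2) \<longrightarrow> (z1,z2) \<in> \<theta>)}" for c
  have \<psi>D: "(z1,z2) \<in> \<theta>" if "(g,h) \<in> \<psi> c" "z1 \<in> C" "z2 \<in> C" "pr c z1 = g" "pr c z2 = h"
      "\<And>c'. c' \<in> I \<Longrightarrow> c' \<noteq> c \<Longrightarrow> pr c' z1 = pr c' z2" for g h c z1 z2
    using that unfolding \<psi>_def by blast
  have \<psi>I: "(g,h) \<in> \<psi> c" if "g \<in> V c" "h \<in> V c" "\<And>z1 z2. z1 \<in> C \<Longrightarrow> z2 \<in> C \<Longrightarrow> pr c z1 = g \<Longrightarrow> pr c z2 = h \<Longrightarrow>
      (\<And>c'. c' \<in> I \<Longrightarrow> c' \<noteq> c \<Longrightarrow> pr c' z1 = pr c' z2) \<Longrightarrow> (z1,z2) \<in> \<theta>" for g h c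
    using that unfolding \<psi>_def by blast
  have A: "(pr c x, pr c y) \<in> \<psi> c" if c: "c \<in> I" and xy: "(x,y) \<in> \<theta>" for c x y
  proof -
    have x: "x \<in> C" and y: "y \<in> C" using xy \<theta>C by auto
    show ?thesis
    proof (rule \<psi>I)
      show "pr c x \<in> V c" "pr c y \<in> V c" using x y unfolding V_def by auto
      fix z1 z2 assume z1: "z1 \<in> C" and z2: "z2 \<in> C" and e1: "pr c z1 = pr c x" and e2: "pr c z2 = pr c y"
        and off: "\<And>c'. c' \<in> I \<Longrightarrow> c' \<noteq> c \<Longrightarrow> pr c' z1 = pr c' z2"
      define m where "m = mx z1 b c"
      define n where "n = mx z1 t c"
      have m: "m \<in> C" "pr c m = pr c b" "\<And>c'. c' \<in> I \<Longrightarrow> c' \<noteq> c \<Longrightarrow> pr c' m = pr c' z1"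
        using mxp[OF z1 bC c] unfolding m_def by auto
      have n: "n \<in> C" "pr c n = pr c t" "\<And>c'. c' \<in> I \<Longrightarrow> c' \<noteq> c \<Longrightarrow> pr c' n = pr c' z1"
        using mxp[OF z1 tC c] unfolding n_def by auto
      have q1: "meetU (joinU x m) n = z1"
      proof (rule injI)
        show "meetU (joinU x m) n \<in> C" using cl x m(1) n(1) by blast
        show "z1 \<in> C" by fact
        fix c' assume c': "c' \<in> I"
        show "pr c' (meetU (joinU x m) n) = pr c' z1"
        proof (cases "c' = c")
          case True
          have "pr c' (meetU (joinU x m) n) = mC c (jC c (pr c x) (pr c b)) (pr c t)"
            using True c' m n prj prm by simp
          also have "\<dots> = pr c (meetU (joinU x b) t)" using c prj prm by simp
          also have "\<dots> = pr c x" using bt x by simp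
          finally show ?thesis using True e1 by simp
        next
          case False
          have "pr c' (meetU (joinU x m) n) = mC c' (jC c' (pr c' x) (pr c' z1)) (pr c' z1)"
            using False c' m n prj prm by simp
          also have "\<dots> = pr c' (meetU (joinU x z1) z1)" using c' prj prm by simp
          also have "\<dots> = pr c' z1" using absb x z1 by simp
          finally show ?thesis .
        qed
      qed
      have q2: "meetU (joinU y m) n = z2"
      proof (rule injI)
        show "meetU (joinU y m) n \<in> C" using cl y m(1) n(1) by blast
        show "z2 \<in> C" by fact
        fix c' assume c': "c' \<in> I"
        show "pr c' (meetU (joinU y m) n) = pr c' z2"
        proof (cases "c' = c")
          case True
          have "pr c' (meetU (joinU y m) n) = mC c (jC c (pr c y) (pr c b)) (pr c t)"
            using True c' m n prj prm by simp
          also have "\<dots> = pr c (meetU (joinU y b) t)" using c prj prm by simp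
          also have "\<dots> = pr c y" using bt y by simp
          finally show ?thesis using True e2 by simp
        next
          case False
          have "pr c' (meetU (joinU y m) n) = mC c' (jC c' (pr c' y) (pr c' z1)) (pr c' z1)"
            using False c' m n prj prm by simp
          also have "\<dots> = pr c' (meetU (joinU y z1) z1)" using c' prj prm by simp
          also have "\<dots> = pr c' z1" using absb y z1 by simp
          finally show ?thesis using off[OF c' False] by simp
        qed
      qed
      have "(meetU (joinU x m) n, meetU (joinU y m) n) \<in> \<theta>"
        using cm[OF cj[OF xy rf[OF m(1)]] rf[OF n(1)]] .
      then show "(z1, z2) \<in> \<theta>" using q1 q2 by simp
    qed
  qed
  have B: "\<psi> c = V c \<times> V c" if c: "c \<in> I" and cD: "c \<in> D \<theta>" for c
  proof -
    obtain x y where xy: "(x,y) \<in> \<theta>" "pr c x \<noteq> pr c y" using cD unfolding D_def by auto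
    have s: "simple_on (V c) (jC c) (mC c)" using simp c unfolding V_def by blast
    have h1: "\<psi> c \<subseteq> V c \<times> V c" unfolding \<psi>_def by auto
    have h2: "\<forall>v\<in>V c. (v,v) \<in> \<psi> c"
    proof
      fix v assume v: "v \<in> V c"
      show "(v,v) \<in> \<psi> c"
      proof (rule \<psi>I[OF v v])
        fix z1 z2 assume z: "z1 \<in> C" "z2 \<in> C" "pr c z1 = v" "pr c z2 = v"
          and off: "\<And>c'. c' \<in> I \<Longrightarrow> c' \<noteq> c \<Longrightarrow> pr c' z1 = pr c' z2"
        have "z1 = z2"
        proof (rule injI[OF z(1) z(2)])
          fix c' assume c': "c' \<in> I"
          show "pr c' z1 = pr c' z2"
          proof (cases "c' = c")
            case True then show ?thesis using z by simp
          next
            case False then show ?thesis using off c' by simp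
          qed
        qed
        then show "(z1,z2) \<in> \<theta>" using rf z by simp
      qed
    qed
    have h3: "sym (\<psi> c)"
    proof (rule symI)
      fix g h assume gh: "(g,h) \<in> \<psi> c"
      then have gV: "g \<in> V c" "h \<in> V c" unfolding \<psi>_def by auto
      show "(h,g) \<in> \<psi> c"
      proof (rule \<psi>I[OF gV(2) gV(1)])
        fix z1 z2 assume z: "z1 \<in> C" "z2 \<in> C" "pr c z1 = h" "pr c z2 = g"
          and off: "\<And>c'. c' \<in> I \<Longrightarrow> c' \<noteq> c \<Longrightarrow> pr c' z1 = pr c' z2"
        have "(z2,z1) \<in> \<theta>" by (rule \<psi>D[OF gh z(2) z(1) z(4) z(3)]) (simp add: off)
        then show "(z1,z2) \<in> \<theta>" by (rule sy)
      qed
    qed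
    have h4: "trans (\<psi> c)"
    proof (rule transI)
      fix g h k assume gh: "(g,h) \<in> \<psi> c" and hk: "(h,k) \<in> \<psi> c"
      then have gV: "g \<in> V c" "h \<in> V c" "k \<in> V c" unfolding \<psi>_def by auto
      obtain yh where yh: "yh \<in> C" "pr c yh = h" using gV(2) unfolding V_def by auto
      show "(g,k) \<in> \<psi> c"
      proof (rule \<psi>I[OF gV(1) gV(3)])
        fix z1 z3 assume z: "z1 \<in> C" "z3 \<in> C" "pr c z1 = g" "pr c z3 = k"
          and off: "\<And>c'. c' \<in> I \<Longrightarrow> c' \<noteq> c \<Longrightarrow> pr c' z1 = pr c' z3"
        define z2 where "z2 = mx z1 yh c"
        have z2: "z2 \<in> C" "pr c z2 = h" "\<And>c'. c' \<in> I \<Longrightarrow> c' \<noteq> c \<Longrightarrow> pr c' z2 = pr c' z1"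
          using mxp[OF z(1) yh(1) c] yh(2) unfolding z2_def by auto
        have 1: "(z1,z2) \<in> \<theta>" by (rule \<psi>D[OF gh z(1) z2(1) z(3) z2(2)]) (simp add: z2(3))
        have 2: "(z2,z3) \<in> \<theta>" by (rule \<psi>D[OF hk z2(1) z(2) z2(2) z(4)]) (simp add: z2(3) off)
        show "(z1,z3) \<in> \<theta>" using tr[OF 1 2] .
      qed
    qed
    have h5: "\<forall>g h v. (g,h) \<in> \<psi> c \<longrightarrow> v \<in> V c \<longrightarrow> (jC c g v, jC c h v) \<in> \<psi> c \<and> (mC c g v, mC c h v) \<in> \<psi> c"
    proof (intro allI impI)
      fix g h v assume gh: "(g,h) \<in> \<psi> c" and v: "v \<in> V c"
      then have gV: "g \<in> V c" "h \<in> V c" unfolding \<psi>_def by auto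
      obtain yg where yg: "yg \<in> C" "pr c yg = g" using gV(1) unfolding V_def by auto
      obtain yh where yh: "yh \<in> C" "pr c yh = h" using gV(2) unfolding V_def by auto
      obtain yv where yv: "yv \<in> C" "pr c yv = v" using v unfolding V_def by auto
      have "jC c g v = pr c (joinU yg yv)" "jC c h v = pr c (joinU yh yv)"
        "mC c g v = pr c (meetU yg yv)" "mC c h v = pr c (meetU yh yv)"
        using prj[OF c] prm[OF c] yg yh yv by simp_all
      moreover have "joinU yg yv \<in> C" "joinU yh yv \<in> C" "meetU yg yv \<in> C" "meetU yh yv \<in> C"
        using cl yg(1) yh(1) yv(1) by blast+
      ultimately have jV: "jC c g v \<in> V c" "jC c h v \<in> V c" "mC c g v \<in> V c" "mC c h v \<in> V c"
        unfolding V_def by auto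
      show "(jC c g v, jC c h v) \<in> \<psi> c \<and> (mC c g v, mC c h v) \<in> \<psi> c"
      proof
        show "(jC c g v, jC c h v) \<in> \<psi> c"
        proof (rule \<psi>I[OF jV(1) jV(2)])
          fix z1 z2 assume z: "z1 \<in> C" "z2 \<in> C" "pr c z1 = jC c g v" "pr c z2 = jC c h v"
            and off: "\<And>c'. c' \<in> I \<Longrightarrow> c' \<noteq> c \<Longrightarrow> pr c' z1 = pr c' z2"
          define y1 where "y1 = mx z1 yg c"
          define y2 where "y2 = mx z1 yh c"
          define w where "w = mx z1 yv c"
          have y1: "y1 \<in> C" "pr c y1 = g" "\<And>c'. c' \<in> I \<Longrightarrow> c' \<noteq> c \<Longrightarrow> pr c' y1 = pr c' z1"
            using mxp[OF z(1) yg(1) c] yg(2) unfolding y1_def by auto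
          have y2: "y2 \<in> C" "pr c y2 = h" "\<And>c'. c' \<in> I \<Longrightarrow> c' \<noteq> c \<Longrightarrow> pr c' y2 = pr c' z1"
            using mxp[OF z(1) yh(1) c] yh(2) unfolding y2_def by auto
          have w: "w \<in> C" "pr c w = v" "\<And>c'. c' \<in> I \<Longrightarrow> c' \<noteq> c \<Longrightarrow> pr c' w = pr c' z1"
            using mxp[OF z(1) yv(1) c] yv(2) unfolding w_def by auto
          have 1: "(y1,y2) \<in> \<theta>" by (rule \<psi>D[OF gh y1(1) y2(1) y1(2) y2(2)]) (simp add: y1(3) y2(3))
          have e1: "joinU y1 w = z1"
          proof (rule injI)
            show "joinU y1 w \<in> C" using cl y1(1) w(1) by blast
            show "z1 \<in> C" by fact
            fix c' assume c': "c' \<in> I"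
            show "pr c' (joinU y1 w) = pr c' z1"
            proof (cases "c' = c")
              case True then show ?thesis using prj[OF c'] y1 w z by simp
            next
              case False
              have "pr c' (joinU y1 w) = jC c' (pr c' z1) (pr c' z1)" using prj[OF c'] y1(3)[OF c' False] w(3)[OF c' False] by simp
              also have "\<dots> = pr c' (joinU z1 z1)" using prj[OF c'] by simp
              finally show ?thesis using idj[OF z(1)] by simp
            qed
          qed
          have e2: "joinU y2 w = z2"
          proof (rule injI)
            show "joinU y2 w \<in> C" using cl y2(1) w(1) by blast
            show "z2 \<in> C" by fact
            fix c' assume c': "c' \<in> I"
            show "pr c' (joinU y2 w) = pr c' z2"
            proof (cases "c' = c")
              case True then show ?thesis using prj[OF c'] y2 w z by simp
            next
              case False
              have "pr c' (joinU y2 w) = jC c' (pr c' z1) (pr c' z1)" using prj[OF c'] y2(3)[OF c' False] w(3)[OF c' False] by simp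
              also have "\<dots> = pr c' (joinU z1 z1)" using prj[OF c'] by simp
              finally show ?thesis using idj[OF z(1)] off[OF c' False] by simp
            qed
          qed
          show "(z1,z2) \<in> \<theta>" using cj[OF 1 rf[OF w(1)]] e1 e2 by simp
        qed
        show "(mC c g v, mC c h v) \<in> \<psi> c"
        proof (rule \<psi>I[OF jV(3) jV(4)])
          fix z1 z2 assume z: "z1 \<in> C" "z2 \<in> C" "pr c z1 = mC c g v" "pr c z2 = mC c h v"
            and off: "\<And>c'. c' \<in> I \<Longrightarrow> c' \<noteq> c \<Longrightarrow> pr c' z1 = pr c' z2"
          define y1 where "y1 = mx z1 yg c"
          define y2 where "y2 = mx z1 yh c"
          define w where "w = mx z1 yv c"
          have y1: "y1 \<in> C" "pr c y1 = g" "\<And>c'. c' \<in> I \<Longrightarrow> c' \<noteq> c \<Longrightarrow> pr c' y1 = pr c' z1"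
            using mxp[OF z(1) yg(1) c] yg(2) unfolding y1_def by auto
          have y2: "y2 \<in> C" "pr c y2 = h" "\<And>c'. c' \<in> I \<Longrightarrow> c' \<noteq> c \<Longrightarrow> pr c' y2 = pr c' z1"
            using mxp[OF z(1) yh(1) c] yh(2) unfolding y2_def by auto
          have w: "w \<in> C" "pr c w = v" "\<And>c'. c' \<in> I \<Longrightarrow> c' \<noteq> c \<Longrightarrow> pr c' w = pr c' z1"
            using mxp[OF z(1) yv(1) c] yv(2) unfolding w_def by auto
          have 1: "(y1,y2) \<in> \<theta>" by (rule \<psi>D[OF gh y1(1) y2(1) y1(2) y2(2)]) (simp add: y1(3) y2(3))
          have e1: "meetU y1 w = z1"
          proof (rule injI)
            show "meetU y1 w \<in> C" using cl y1(1) w(1) by blast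
            show "z1 \<in> C" by fact
            fix c' assume c': "c' \<in> I"
            show "pr c' (meetU y1 w) = pr c' z1"
            proof (cases "c' = c")
              case True then show ?thesis using prm[OF c'] y1 w z by simp
            next
              case False
              have "pr c' (meetU y1 w) = mC c' (pr c' z1) (pr c' z1)" using prm[OF c'] y1(3)[OF c' False] w(3)[OF c' False] by simp
              also have "\<dots> = pr c' (meetU z1 z1)" using prm[OF c'] by simp
              finally show ?thesis using idm[OF z(1)] by simp
            qed
          qed
          have e2: "meetU y2 w = z2"
          proof (rule injI)
            show "meetU y2 w \<in> C" using cl y2(1) w(1) by blast
            show "z2 \<in> C" by fact
            fix c' assume c': "c' \<in> I"
            show "pr c' (meetU y2 w) = pr c' z2"
            proof (cases "c' = c")
              case True then show ?thesis using prm[OF c'] y2 w z by simp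
            next
              case False
              have "pr c' (meetU y2 w) = mC c' (pr c' z1) (pr c' z1)" using prm[OF c'] y2(3)[OF c' False] w(3)[OF c' False] by simp
              also have "\<dots> = pr c' (meetU z1 z1)" using prm[OF c'] by simp
              finally show ?thesis using idm[OF z(1)] off[OF c' False] by simp
            qed
          qed
          show "(z1,z2) \<in> \<theta>" using cm[OF 1 rf[OF w(1)]] e1 e2 by simp
        qed
      qed
    qed
    have h6: "\<exists>g h. (g,h) \<in> \<psi> c \<and> g \<noteq> h" using A[OF c xy(1)] xy(2) by blast
    show ?thesis using s h1 h2 h3 h4 h5 h6 unfolding simple_on_def by blast
  qed
  have main: "finite F \<Longrightarrow> \<forall>u\<in>C. \<forall>v\<in>C. (\<forall>c\<in>I. pr c u \<noteq> pr c v \<longrightarrow> c \<in> F \<and> c \<in> D \<theta>) \<longrightarrow> (u,v) \<in> \<theta>" for F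
  proof (induction F rule: finite_induct)
    case empty
    show ?case
    proof (intro ballI impI)
      fix u v assume uv: "u \<in> C" "v \<in> C" and H: "\<forall>c\<in>I. pr c u \<noteq> pr c v \<longrightarrow> c \<in> {} \<and> c \<in> D \<theta>"
      have "u = v" by (rule injI[OF uv]) (use H in auto)
      then show "(u,v) \<in> \<theta>" using rf uv by simp
    qed
  next
    case (insert c F)
    show ?case
    proof (intro ballI impI)
      fix u v assume u: "u \<in> C" and v: "v \<in> C" and H: "\<forall>c'\<in>I. pr c' u \<noteq> pr c' v \<longrightarrow> c' \<in> insert c F \<and> c' \<in> D \<theta>"
      show "(u,v) \<in> \<theta>"
      proof (cases "c \<in> I")
        case False
        then have "\<forall>c'\<in>I. pr c' u \<noteq> pr c' v \<longrightarrow> c' \<in> F \<and> c' \<in> D \<theta>" using H by auto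
        then show ?thesis using insert.IH u v by blast
      next
        case cI: True
        define z where "z = mx v u c"
        have z: "z \<in> C" "pr c z = pr c u" "\<And>c'. c' \<in> I \<Longrightarrow> c' \<noteq> c \<Longrightarrow> pr c' z = pr c' v"
          using mxp[OF v u cI] unfolding z_def by auto
        have "\<forall>c'\<in>I. pr c' u \<noteq> pr c' z \<longrightarrow> c' \<in> F \<and> c' \<in> D \<theta>"
        proof (intro ballI impI)
          fix c' assume c': "c' \<in> I" and d: "pr c' u \<noteq> pr c' z"
          then have ne: "c' \<noteq> c" using z(2) by auto
          then have "pr c' u \<noteq> pr c' v" using d z(3)[OF c'] by simp
          then show "c' \<in> F \<and> c' \<in> D \<theta>" using H c' ne by auto
        qed
        then have 1: "(u,z) \<in> \<theta>" using insert.IH u z(1) by blast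
        have 2: "(z,v) \<in> \<theta>"
        proof (cases "pr c u = pr c v")
          case True
          have "z = v" using z(1) v
          proof (rule injI)
            fix c' assume "c' \<in> I" then show "pr c' z = pr c' v" using z True by (cases "c' = c") auto
          qed
          then show ?thesis using rf v by simp
        next
          case False
          then have "c \<in> D \<theta>" using H cI by auto
          then have "\<psi> c = V c \<times> V c" using B cI by blast
          moreover have "pr c z \<in> V c" "pr c v \<in> V c" using z(1) v unfolding V_def by auto
          ultimately have "(pr c z, pr c v) \<in> \<psi> c" by auto
          then show ?thesis using \<psi>D z(1) v z(3) by blast
        qed
        show ?thesis using tr[OF 1 2] .
      qed
    qed
  qed
  have "finite I" using I finite_subset by blast
  then show ?thesis using main[of I] by blast
qed




lemma gtab:
  "gj 0 0 = 0"
  "gm 0 0 = 0"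
  "gj 0 1 = 1"
  "gm 0 1 = 0"
  "gj 0 2 = 2"
  "gm 0 2 = 0"
  "gj 0 3 = 3"
  "gm 0 3 = 0"
  "gj 0 4 = 4"
  "gm 0 4 = 0"
  "gj 0 5 = 5"
  "gm 0 5 = 0"
  "gj 0 6 = 6"
  "gm 0 6 = 0"
  "gj 0 7 = 7"
  "gm 0 7 = 0"
  "gj 0 8 = 8"
  "gm 0 8 = 0"
  "gj 1 0 = 1"
  "gm 1 0 = 0"
  "gj 1 1 = 1"
  "gm 1 1 = 1"
  "gj 1 2 = 3"
  "gm 1 2 = 0"
  "gj 1 3 = 3"
  "gm 1 3 = 1"
  "gj 1 4 = 5"
  "gm 1 4 = 0"
  "gj 1 5 = 5"
  "gm 1 5 = 1"
  "gj 1 6 = 7"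
  "gm 1 6 = 0"
  "gj 1 7 = 7"
  "gm 1 7 = 1"
  "gj 1 8 = 7"
  "gm 1 8 = 0"
  "gj 2 0 = 2"
  "gm 2 0 = 0"
  "gj 2 1 = 3"
  "gm 2 1 = 0"
  "gj 2 2 = 2"
  "gm 2 2 = 2"
  "gj 2 3 = 3"
  "gm 2 3 = 2"
  "gj 2 4 = 6"
  "gm 2 4 = 0"
  "gj 2 5 = 7"
  "gm 2 5 = 0"
  "gj 2 6 = 6"
  "gm 2 6 = 2"
  "gj 2 7 = 7"
  "gm 2 7 = 2"
  "gj 2 8 = 7"
  "gm 2 8 = 0"
  "gj 3 0 = 3"
  "gm 3 0 = 0"
  "gj 3 1 = 3"
  "gm 3 1 = 1"
  "gj 3 2 = 3"
  "gm 3 2 = 2"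
  "gj 3 3 = 3"
  "gm 3 3 = 3"
  "gj 3 4 = 7"
  "gm 3 4 = 0"
  "gj 3 5 = 7"
  "gm 3 5 = 1"
  "gj 3 6 = 7"
  "gm 3 6 = 2"
  "gj 3 7 = 7"
  "gm 3 7 = 3"
  "gj 3 8 = 7"
  "gm 3 8 = 0"
  "gj 4 0 = 4"
  "gm 4 0 = 0"
  "gj 4 1 = 5"
  "gm 4 1 = 0"
  "gj 4 2 = 6"
  "gm 4 2 = 0"
  "gj 4 3 = 7"
  "gm 4 3 = 0"
  "gj 4 4 = 4"
  "gm 4 4 = 4"
  "gj 4 5 = 5"
  "gm 4 5 = 4"
  "gj 4 6 = 6"
  "gm 4 6 = 4"
  "gj 4 7 = 7"
  "gm 4 7 = 4"
  "gj 4 8 = 7"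
  "gm 4 8 = 0"
  "gj 5 0 = 5"
  "gm 5 0 = 0"
  "gj 5 1 = 5"
  "gm 5 1 = 1"
  "gj 5 2 = 7"
  "gm 5 2 = 0"
  "gj 5 3 = 7"
  "gm 5 3 = 1"
  "gj 5 4 = 5"
  "gm 5 4 = 4"
  "gj 5 5 = 5"
  "gm 5 5 = 5"
  "gj 5 6 = 7"
  "gm 5 6 = 4"
  "gj 5 7 = 7"
  "gm 5 7 = 5"
  "gj 5 8 = 7"
  "gm 5 8 = 0"
  "gj 6 0 = 6"
  "gm 6 0 = 0"
  "gj 6 1 = 7"
  "gm 6 1 = 0"
  "gj 6 2 = 6"
  "gm 6 2 = 2"
  "gj 6 3 = 7"
  "gm 6 3 = 2"
  "gj 6 4 = 6"
  "gm 6 4 = 4"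
  "gj 6 5 = 7"
  "gm 6 5 = 4"
  "gj 6 6 = 6"
  "gm 6 6 = 6"
  "gj 6 7 = 7"
  "gm 6 7 = 6"
  "gj 6 8 = 7"
  "gm 6 8 = 0"
  "gj 7 0 = 7"
  "gm 7 0 = 0"
  "gj 7 1 = 7"
  "gm 7 1 = 1"
  "gj 7 2 = 7"
  "gm 7 2 = 2"
  "gj 7 3 = 7"
  "gm 7 3 = 3"
  "gj 7 4 = 7"
  "gm 7 4 = 4"
  "gj 7 5 = 7"
  "gm 7 5 = 5"
  "gj 7 6 = 7"
  "gm 7 6 = 6"
  "gj 7 7 = 7"
  "gm 7 7 = 7"
  "gj 7 8 = 7"
  "gm 7 8 = 8"
  "gj 8 0 = 8"
  "gm 8 0 = 0"
  "gj 8 1 = 7"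
  "gm 8 1 = 0"
  "gj 8 2 = 7"
  "gm 8 2 = 0"
  "gj 8 3 = 7"
  "gm 8 3 = 0"
  "gj 8 4 = 7"
  "gm 8 4 = 0"
  "gj 8 5 = 7"
  "gm 8 5 = 0"
  "gj 8 6 = 7"
  "gm 8 6 = 0"
  "gj 8 7 = 7"
  "gm 8 7 = 8"
  "gj 8 8 = 8"
  "gm 8 8 = 8"
  "gj 0 (Suc 0) = 1"
  "gm 0 (Suc 0) = 0"
  "gj (Suc 0) 0 = 1"
  "gm (Suc 0) 0 = 0"
  "gj (Suc 0) (Suc 0) = 1"
  "gm (Suc 0) (Suc 0) = 1"
  "gj (Suc 0) 2 = 3"
  "gm (Suc 0) 2 = 0"
  "gj (Suc 0) 3 = 3"
  "gm (Suc 0) 3 = 1"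
  "gj (Suc 0) 4 = 5"
  "gm (Suc 0) 4 = 0"
  "gj (Suc 0) 5 = 5"
  "gm (Suc 0) 5 = 1"
  "gj (Suc 0) 6 = 7"
  "gm (Suc 0) 6 = 0"
  "gj (Suc 0) 7 = 7"
  "gm (Suc 0) 7 = 1"
  "gj (Suc 0) 8 = 7"
  "gm (Suc 0) 8 = 0"
  "gj 2 (Suc 0) = 3"
  "gm 2 (Suc 0) = 0"
  "gj 3 (Suc 0) = 3"
  "gm 3 (Suc 0) = 1"
  "gj 4 (Suc 0) = 5"
  "gm 4 (Suc 0) = 0"
  "gj 5 (Suc 0) = 5"
  "gm 5 (Suc 0) = 1"
  "gj 6 (Suc 0) = 7"
  "gm 6 (Suc 0) = 0"
  "gj 7 (Suc 0) = 7"
  "gm 7 (Suc 0) = 1"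
  "gj 8 (Suc 0) = 7"
  "gm 8 (Suc 0) = 0"
  by (simp_all add: gj_def gm_def cj_def cm_def)

lemma G_simple: "simple_on {..<9} gj gm"
  unfolding simple_on_def
proof (intro allI impI)
  fix \<psi> assume sub: "\<psi> \<subseteq> {..<9} \<times> {..<9}" and rf: "\<forall>v\<in>{..<9}. (v,v) \<in> \<psi>" and sy: "sym \<psi>" and tr: "trans \<psi>"
    and cc: "\<forall>g h v. (g,h) \<in> \<psi> \<longrightarrow> v \<in> {..<9} \<longrightarrow> (gj g v, gj h v) \<in> \<psi> \<and> (gm g v, gm h v) \<in> \<psi>"
    and ex: "\<exists>g h. (g,h) \<in> \<psi> \<and> g \<noteq> h"
  have cJ: "\<And>g h v. (g,h) \<in> \<psi> \<Longrightarrow> v < 9 \<Longrightarrow> (gj g v, gj h v) \<in> \<psi>" using cc by auto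
  have cM: "\<And>g h v. (g,h) \<in> \<psi> \<Longrightarrow> v < 9 \<Longrightarrow> (gm g v, gm h v) \<in> \<psi>" using cc by auto
  from ex obtain g h where gh: "(g,h) \<in> \<psi>" "g \<noteq> h" by blast
  have g9: "g < 9" "h < 9" using gh sub by auto
  have f_0_1: "(0,1) \<in> \<psi> \<Longrightarrow> (0,7) \<in> \<psi>"
  proof -
    assume p_0_1: "(0,1) \<in> \<psi>"
    have p_6_7: "(6,7) \<in> \<psi>" using cJ[OF p_0_1, of 6] by (simp add: gtab)
    have p_0_8: "(0,8) \<in> \<psi>" using cM[OF p_6_7, of 8] by (simp add: gtab)
    have p_8_7: "(8,7) \<in> \<psi>" using cJ[OF p_0_1, of 8] by (simp add: gtab)
    have p_0_7: "(0,7) \<in> \<psi>" using tr p_0_8 p_8_7 by (rule transD)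
    show ?thesis using p_0_7 .
  qed
  have f_0_2: "(0,2) \<in> \<psi> \<Longrightarrow> (0,7) \<in> \<psi>"
  proof -
    assume p_0_2: "(0,2) \<in> \<psi>"
    have p_5_7: "(5,7) \<in> \<psi>" using cJ[OF p_0_2, of 5] by (simp add: gtab)
    have p_0_8: "(0,8) \<in> \<psi>" using cM[OF p_5_7, of 8] by (simp add: gtab)
    have p_8_7: "(8,7) \<in> \<psi>" using cJ[OF p_0_2, of 8] by (simp add: gtab)
    have p_0_7: "(0,7) \<in> \<psi>" using tr p_0_8 p_8_7 by (rule transD)
    show ?thesis using p_0_7 .
  qed
  have f_0_3: "(0,3) \<in> \<psi> \<Longrightarrow> (0,7) \<in> \<psi>"
  proof -
    assume p_0_3: "(0,3) \<in> \<psi>"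
    have p_4_7: "(4,7) \<in> \<psi>" using cJ[OF p_0_3, of 4] by (simp add: gtab)
    have p_0_8: "(0,8) \<in> \<psi>" using cM[OF p_4_7, of 8] by (simp add: gtab)
    have p_8_7: "(8,7) \<in> \<psi>" using cJ[OF p_0_3, of 8] by (simp add: gtab)
    have p_0_7: "(0,7) \<in> \<psi>" using tr p_0_8 p_8_7 by (rule transD)
    show ?thesis using p_0_7 .
  qed
  have f_0_4: "(0,4) \<in> \<psi> \<Longrightarrow> (0,7) \<in> \<psi>"
  proof -
    assume p_0_4: "(0,4) \<in> \<psi>"
    have p_3_7: "(3,7) \<in> \<psi>" using cJ[OF p_0_4, of 3] by (simp add: gtab)
    have p_0_8: "(0,8) \<in> \<psi>" using cM[OF p_3_7, of 8] by (simp add: gtab)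
    have p_8_7: "(8,7) \<in> \<psi>" using cJ[OF p_0_4, of 8] by (simp add: gtab)
    have p_0_7: "(0,7) \<in> \<psi>" using tr p_0_8 p_8_7 by (rule transD)
    show ?thesis using p_0_7 .
  qed
  have f_0_5: "(0,5) \<in> \<psi> \<Longrightarrow> (0,7) \<in> \<psi>"
  proof -
    assume p_0_5: "(0,5) \<in> \<psi>"
    have p_2_7: "(2,7) \<in> \<psi>" using cJ[OF p_0_5, of 2] by (simp add: gtab)
    have p_0_8: "(0,8) \<in> \<psi>" using cM[OF p_2_7, of 8] by (simp add: gtab)
    have p_8_7: "(8,7) \<in> \<psi>" using cJ[OF p_0_5, of 8] by (simp add: gtab)
    have p_0_7: "(0,7) \<in> \<psi>" using tr p_0_8 p_8_7 by (rule transD)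
    show ?thesis using p_0_7 .
  qed
  have f_0_6: "(0,6) \<in> \<psi> \<Longrightarrow> (0,7) \<in> \<psi>"
  proof -
    assume p_0_6: "(0,6) \<in> \<psi>"
    have p_1_7: "(1,7) \<in> \<psi>" using cJ[OF p_0_6, of 1] by (simp add: gtab)
    have p_0_8: "(0,8) \<in> \<psi>" using cM[OF p_1_7, of 8] by (simp add: gtab)
    have p_8_7: "(8,7) \<in> \<psi>" using cJ[OF p_0_6, of 8] by (simp add: gtab)
    have p_0_7: "(0,7) \<in> \<psi>" using tr p_0_8 p_8_7 by (rule transD)
    show ?thesis using p_0_7 .
  qed
  have f_0_7: "(0,7) \<in> \<psi> \<Longrightarrow> (0,7) \<in> \<psi>"
  proof -
    assume p_0_7: "(0,7) \<in> \<psi>"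
    show ?thesis using p_0_7 .
  qed
  have f_0_8: "(0,8) \<in> \<psi> \<Longrightarrow> (0,7) \<in> \<psi>"
  proof -
    assume p_0_8: "(0,8) \<in> \<psi>"
    have p_1_7: "(1,7) \<in> \<psi>" using cJ[OF p_0_8, of 1] by (simp add: gtab)
    have p_0_2: "(0,2) \<in> \<psi>" using cM[OF p_1_7, of 2] by (simp add: gtab)
    have p_2_7: "(2,7) \<in> \<psi>" using cJ[OF p_0_8, of 2] by (simp add: gtab)
    have p_0_7: "(0,7) \<in> \<psi>" using tr p_0_2 p_2_7 by (rule transD)
    show ?thesis using p_0_7 .
  qed
  have f_1_0: "(1,0) \<in> \<psi> \<Longrightarrow> (0,7) \<in> \<psi>"
  proof -
    assume p_1_0: "(1,0) \<in> \<psi>"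
    have p_7_6: "(7,6) \<in> \<psi>" using cJ[OF p_1_0, of 6] by (simp add: gtab)
    have p_7_8: "(7,8) \<in> \<psi>" using cJ[OF p_1_0, of 8] by (simp add: gtab)
    have p_6_0: "(6,0) \<in> \<psi>" using cM[OF p_7_8, of 6] by (simp add: gtab)
    have p_7_0: "(7,0) \<in> \<psi>" using tr p_7_6 p_6_0 by (rule transD)
    have p_0_7: "(0,7) \<in> \<psi>" using sy p_7_0 by (rule symD)
    show ?thesis using p_0_7 .
  qed
  have f_1_2: "(1,2) \<in> \<psi> \<Longrightarrow> (0,7) \<in> \<psi>"
  proof -
    assume p_1_2: "(1,2) \<in> \<psi>"
    have p_5_7: "(5,7) \<in> \<psi>" using cJ[OF p_1_2, of 5] by (simp add: gtab)
    have p_0_8: "(0,8) \<in> \<psi>" using cM[OF p_5_7, of 8] by (simp add: gtab)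
    have p_0_2: "(0,2) \<in> \<psi>" using cM[OF p_1_2, of 2] by (simp add: gtab)
    have p_8_7: "(8,7) \<in> \<psi>" using cJ[OF p_0_2, of 8] by (simp add: gtab)
    have p_0_7: "(0,7) \<in> \<psi>" using tr p_0_8 p_8_7 by (rule transD)
    show ?thesis using p_0_7 .
  qed
  have f_1_3: "(1,3) \<in> \<psi> \<Longrightarrow> (0,7) \<in> \<psi>"
  proof -
    assume p_1_3: "(1,3) \<in> \<psi>"
    have p_5_7: "(5,7) \<in> \<psi>" using cJ[OF p_1_3, of 4] by (simp add: gtab)
    have p_0_8: "(0,8) \<in> \<psi>" using cM[OF p_5_7, of 8] by (simp add: gtab)
    have p_0_2: "(0,2) \<in> \<psi>" using cM[OF p_1_3, of 2] by (simp add: gtab)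
    have p_8_7: "(8,7) \<in> \<psi>" using cJ[OF p_0_2, of 8] by (simp add: gtab)
    have p_0_7: "(0,7) \<in> \<psi>" using tr p_0_8 p_8_7 by (rule transD)
    show ?thesis using p_0_7 .
  qed
  have f_1_4: "(1,4) \<in> \<psi> \<Longrightarrow> (0,7) \<in> \<psi>"
  proof -
    assume p_1_4: "(1,4) \<in> \<psi>"
    have p_3_7: "(3,7) \<in> \<psi>" using cJ[OF p_1_4, of 3] by (simp add: gtab)
    have p_0_8: "(0,8) \<in> \<psi>" using cM[OF p_3_7, of 8] by (simp add: gtab)
    have p_0_4: "(0,4) \<in> \<psi>" using cM[OF p_1_4, of 4] by (simp add: gtab)
    have p_8_7: "(8,7) \<in> \<psi>" using cJ[OF p_0_4, of 8] by (simp add: gtab)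
    have p_0_7: "(0,7) \<in> \<psi>" using tr p_0_8 p_8_7 by (rule transD)
    show ?thesis using p_0_7 .
  qed
  have f_1_5: "(1,5) \<in> \<psi> \<Longrightarrow> (0,7) \<in> \<psi>"
  proof -
    assume p_1_5: "(1,5) \<in> \<psi>"
    have p_3_7: "(3,7) \<in> \<psi>" using cJ[OF p_1_5, of 2] by (simp add: gtab)
    have p_0_8: "(0,8) \<in> \<psi>" using cM[OF p_3_7, of 8] by (simp add: gtab)
    have p_0_4: "(0,4) \<in> \<psi>" using cM[OF p_1_5, of 4] by (simp add: gtab)
    have p_8_7: "(8,7) \<in> \<psi>" using cJ[OF p_0_4, of 8] by (simp add: gtab)
    have p_0_7: "(0,7) \<in> \<psi>" using tr p_0_8 p_8_7 by (rule transD)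
    show ?thesis using p_0_7 .
  qed
  have f_1_6: "(1,6) \<in> \<psi> \<Longrightarrow> (0,7) \<in> \<psi>"
  proof -
    assume p_1_6: "(1,6) \<in> \<psi>"
    have p_0_6: "(0,6) \<in> \<psi>" using cM[OF p_1_6, of 6] by (simp add: gtab)
    have p_7_6: "(7,6) \<in> \<psi>" using cJ[OF p_1_6, of 6] by (simp add: gtab)
    have p_6_7: "(6,7) \<in> \<psi>" using sy p_7_6 by (rule symD)
    have p_0_7: "(0,7) \<in> \<psi>" using tr p_0_6 p_6_7 by (rule transD)
    show ?thesis using p_0_7 .
  qed
  have f_1_7: "(1,7) \<in> \<psi> \<Longrightarrow> (0,7) \<in> \<psi>"
  proof -
    assume p_1_7: "(1,7) \<in> \<psi>"
    have p_0_2: "(0,2) \<in> \<psi>" using cM[OF p_1_7, of 2] by (simp add: gtab)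
    have p_0_8: "(0,8) \<in> \<psi>" using cM[OF p_1_7, of 8] by (simp add: gtab)
    have p_2_7: "(2,7) \<in> \<psi>" using cJ[OF p_0_8, of 2] by (simp add: gtab)
    have p_0_7: "(0,7) \<in> \<psi>" using tr p_0_2 p_2_7 by (rule transD)
    show ?thesis using p_0_7 .
  qed
  have f_1_8: "(1,8) \<in> \<psi> \<Longrightarrow> (0,7) \<in> \<psi>"
  proof -
    assume p_1_8: "(1,8) \<in> \<psi>"
    have p_0_8: "(0,8) \<in> \<psi>" using cM[OF p_1_8, of 8] by (simp add: gtab)
    have p_7_8: "(7,8) \<in> \<psi>" using cJ[OF p_1_8, of 8] by (simp add: gtab)
    have p_8_7: "(8,7) \<in> \<psi>" using sy p_7_8 by (rule symD)
    have p_0_7: "(0,7) \<in> \<psi>" using tr p_0_8 p_8_7 by (rule transD)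
    show ?thesis using p_0_7 .
  qed
  have f_2_0: "(2,0) \<in> \<psi> \<Longrightarrow> (0,7) \<in> \<psi>"
  proof -
    assume p_2_0: "(2,0) \<in> \<psi>"
    have p_7_5: "(7,5) \<in> \<psi>" using cJ[OF p_2_0, of 5] by (simp add: gtab)
    have p_7_8: "(7,8) \<in> \<psi>" using cJ[OF p_2_0, of 8] by (simp add: gtab)
    have p_5_0: "(5,0) \<in> \<psi>" using cM[OF p_7_8, of 5] by (simp add: gtab)
    have p_7_0: "(7,0) \<in> \<psi>" using tr p_7_5 p_5_0 by (rule transD)
    have p_0_7: "(0,7) \<in> \<psi>" using sy p_7_0 by (rule symD)
    show ?thesis using p_0_7 .
  qed
  have f_2_1: "(2,1) \<in> \<psi> \<Longrightarrow> (0,7) \<in> \<psi>"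
  proof -
    assume p_2_1: "(2,1) \<in> \<psi>"
    have p_6_7: "(6,7) \<in> \<psi>" using cJ[OF p_2_1, of 6] by (simp add: gtab)
    have p_0_8: "(0,8) \<in> \<psi>" using cM[OF p_6_7, of 8] by (simp add: gtab)
    have p_0_1: "(0,1) \<in> \<psi>" using cM[OF p_2_1, of 1] by (simp add: gtab)
    have p_8_7: "(8,7) \<in> \<psi>" using cJ[OF p_0_1, of 8] by (simp add: gtab)
    have p_0_7: "(0,7) \<in> \<psi>" using tr p_0_8 p_8_7 by (rule transD)
    show ?thesis using p_0_7 .
  qed
  have f_2_3: "(2,3) \<in> \<psi> \<Longrightarrow> (0,7) \<in> \<psi>"
  proof -
    assume p_2_3: "(2,3) \<in> \<psi>"
    have p_6_7: "(6,7) \<in> \<psi>" using cJ[OF p_2_3, of 4] by (simp add: gtab)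
    have p_0_8: "(0,8) \<in> \<psi>" using cM[OF p_6_7, of 8] by (simp add: gtab)
    have p_0_1: "(0,1) \<in> \<psi>" using cM[OF p_2_3, of 1] by (simp add: gtab)
    have p_8_7: "(8,7) \<in> \<psi>" using cJ[OF p_0_1, of 8] by (simp add: gtab)
    have p_0_7: "(0,7) \<in> \<psi>" using tr p_0_8 p_8_7 by (rule transD)
    show ?thesis using p_0_7 .
  qed
  have f_2_4: "(2,4) \<in> \<psi> \<Longrightarrow> (0,7) \<in> \<psi>"
  proof -
    assume p_2_4: "(2,4) \<in> \<psi>"
    have p_3_7: "(3,7) \<in> \<psi>" using cJ[OF p_2_4, of 3] by (simp add: gtab)
    have p_0_8: "(0,8) \<in> \<psi>" using cM[OF p_3_7, of 8] by (simp add: gtab)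
    have p_0_4: "(0,4) \<in> \<psi>" using cM[OF p_2_4, of 4] by (simp add: gtab)
    have p_8_7: "(8,7) \<in> \<psi>" using cJ[OF p_0_4, of 8] by (simp add: gtab)
    have p_0_7: "(0,7) \<in> \<psi>" using tr p_0_8 p_8_7 by (rule transD)
    show ?thesis using p_0_7 .
  qed
  have f_2_5: "(2,5) \<in> \<psi> \<Longrightarrow> (0,7) \<in> \<psi>"
  proof -
    assume p_2_5: "(2,5) \<in> \<psi>"
    have p_0_5: "(0,5) \<in> \<psi>" using cM[OF p_2_5, of 5] by (simp add: gtab)
    have p_7_5: "(7,5) \<in> \<psi>" using cJ[OF p_2_5, of 5] by (simp add: gtab)
    have p_5_7: "(5,7) \<in> \<psi>" using sy p_7_5 by (rule symD)
    have p_0_7: "(0,7) \<in> \<psi>" using tr p_0_5 p_5_7 by (rule transD)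
    show ?thesis using p_0_7 .
  qed
  have f_2_6: "(2,6) \<in> \<psi> \<Longrightarrow> (0,7) \<in> \<psi>"
  proof -
    assume p_2_6: "(2,6) \<in> \<psi>"
    have p_3_7: "(3,7) \<in> \<psi>" using cJ[OF p_2_6, of 1] by (simp add: gtab)
    have p_0_8: "(0,8) \<in> \<psi>" using cM[OF p_3_7, of 8] by (simp add: gtab)
    have p_0_4: "(0,4) \<in> \<psi>" using cM[OF p_2_6, of 4] by (simp add: gtab)
    have p_8_7: "(8,7) \<in> \<psi>" using cJ[OF p_0_4, of 8] by (simp add: gtab)
    have p_0_7: "(0,7) \<in> \<psi>" using tr p_0_8 p_8_7 by (rule transD)
    show ?thesis using p_0_7 .
  qed
  have f_2_7: "(2,7) \<in> \<psi> \<Longrightarrow> (0,7) \<in> \<psi>"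
  proof -
    assume p_2_7: "(2,7) \<in> \<psi>"
    have p_0_1: "(0,1) \<in> \<psi>" using cM[OF p_2_7, of 1] by (simp add: gtab)
    have p_0_8: "(0,8) \<in> \<psi>" using cM[OF p_2_7, of 8] by (simp add: gtab)
    have p_1_7: "(1,7) \<in> \<psi>" using cJ[OF p_0_8, of 1] by (simp add: gtab)
    have p_0_7: "(0,7) \<in> \<psi>" using tr p_0_1 p_1_7 by (rule transD)
    show ?thesis using p_0_7 .
  qed
  have f_2_8: "(2,8) \<in> \<psi> \<Longrightarrow> (0,7) \<in> \<psi>"
  proof -
    assume p_2_8: "(2,8) \<in> \<psi>"
    have p_0_8: "(0,8) \<in> \<psi>" using cM[OF p_2_8, of 8] by (simp add: gtab)
    have p_7_8: "(7,8) \<in> \<psi>" using cJ[OF p_2_8, of 8] by (simp add: gtab)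
    have p_8_7: "(8,7) \<in> \<psi>" using sy p_7_8 by (rule symD)
    have p_0_7: "(0,7) \<in> \<psi>" using tr p_0_8 p_8_7 by (rule transD)
    show ?thesis using p_0_7 .
  qed
  have f_3_0: "(3,0) \<in> \<psi> \<Longrightarrow> (0,7) \<in> \<psi>"
  proof -
    assume p_3_0: "(3,0) \<in> \<psi>"
    have p_7_4: "(7,4) \<in> \<psi>" using cJ[OF p_3_0, of 4] by (simp add: gtab)
    have p_7_8: "(7,8) \<in> \<psi>" using cJ[OF p_3_0, of 8] by (simp add: gtab)
    have p_4_0: "(4,0) \<in> \<psi>" using cM[OF p_7_8, of 4] by (simp add: gtab)
    have p_7_0: "(7,0) \<in> \<psi>" using tr p_7_4 p_4_0 by (rule transD)
    have p_0_7: "(0,7) \<in> \<psi>" using sy p_7_0 by (rule symD)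
    show ?thesis using p_0_7 .
  qed
  have f_3_1: "(3,1) \<in> \<psi> \<Longrightarrow> (0,7) \<in> \<psi>"
  proof -
    assume p_3_1: "(3,1) \<in> \<psi>"
    have p_2_0: "(2,0) \<in> \<psi>" using cM[OF p_3_1, of 2] by (simp add: gtab)
    have p_7_8: "(7,8) \<in> \<psi>" using cJ[OF p_2_0, of 8] by (simp add: gtab)
    have p_7_5: "(7,5) \<in> \<psi>" using cJ[OF p_3_1, of 4] by (simp add: gtab)
    have p_8_0: "(8,0) \<in> \<psi>" using cM[OF p_7_5, of 8] by (simp add: gtab)
    have p_7_0: "(7,0) \<in> \<psi>" using tr p_7_8 p_8_0 by (rule transD)
    have p_0_7: "(0,7) \<in> \<psi>" using sy p_7_0 by (rule symD)
    show ?thesis using p_0_7 .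
  qed
  have f_3_2: "(3,2) \<in> \<psi> \<Longrightarrow> (0,7) \<in> \<psi>"
  proof -
    assume p_3_2: "(3,2) \<in> \<psi>"
    have p_1_0: "(1,0) \<in> \<psi>" using cM[OF p_3_2, of 1] by (simp add: gtab)
    have p_7_8: "(7,8) \<in> \<psi>" using cJ[OF p_1_0, of 8] by (simp add: gtab)
    have p_7_6: "(7,6) \<in> \<psi>" using cJ[OF p_3_2, of 4] by (simp add: gtab)
    have p_8_0: "(8,0) \<in> \<psi>" using cM[OF p_7_6, of 8] by (simp add: gtab)
    have p_7_0: "(7,0) \<in> \<psi>" using tr p_7_8 p_8_0 by (rule transD)
    have p_0_7: "(0,7) \<in> \<psi>" using sy p_7_0 by (rule symD)
    show ?thesis using p_0_7 .
  qed
  have f_3_4: "(3,4) \<in> \<psi> \<Longrightarrow> (0,7) \<in> \<psi>"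
  proof -
    assume p_3_4: "(3,4) \<in> \<psi>"
    have p_0_4: "(0,4) \<in> \<psi>" using cM[OF p_3_4, of 4] by (simp add: gtab)
    have p_7_4: "(7,4) \<in> \<psi>" using cJ[OF p_3_4, of 4] by (simp add: gtab)
    have p_4_7: "(4,7) \<in> \<psi>" using sy p_7_4 by (rule symD)
    have p_0_7: "(0,7) \<in> \<psi>" using tr p_0_4 p_4_7 by (rule transD)
    show ?thesis using p_0_7 .
  qed
  have f_3_5: "(3,5) \<in> \<psi> \<Longrightarrow> (0,7) \<in> \<psi>"
  proof -
    assume p_3_5: "(3,5) \<in> \<psi>"
    have p_3_7: "(3,7) \<in> \<psi>" using cJ[OF p_3_5, of 2] by (simp add: gtab)
    have p_0_8: "(0,8) \<in> \<psi>" using cM[OF p_3_7, of 8] by (simp add: gtab)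
    have p_0_4: "(0,4) \<in> \<psi>" using cM[OF p_3_5, of 4] by (simp add: gtab)
    have p_8_7: "(8,7) \<in> \<psi>" using cJ[OF p_0_4, of 8] by (simp add: gtab)
    have p_0_7: "(0,7) \<in> \<psi>" using tr p_0_8 p_8_7 by (rule transD)
    show ?thesis using p_0_7 .
  qed
  have f_3_6: "(3,6) \<in> \<psi> \<Longrightarrow> (0,7) \<in> \<psi>"
  proof -
    assume p_3_6: "(3,6) \<in> \<psi>"
    have p_3_7: "(3,7) \<in> \<psi>" using cJ[OF p_3_6, of 1] by (simp add: gtab)
    have p_0_8: "(0,8) \<in> \<psi>" using cM[OF p_3_7, of 8] by (simp add: gtab)
    have p_0_4: "(0,4) \<in> \<psi>" using cM[OF p_3_6, of 4] by (simp add: gtab)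
    have p_8_7: "(8,7) \<in> \<psi>" using cJ[OF p_0_4, of 8] by (simp add: gtab)
    have p_0_7: "(0,7) \<in> \<psi>" using tr p_0_8 p_8_7 by (rule transD)
    show ?thesis using p_0_7 .
  qed
  have f_3_7: "(3,7) \<in> \<psi> \<Longrightarrow> (0,7) \<in> \<psi>"
  proof -
    assume p_3_7: "(3,7) \<in> \<psi>"
    have p_0_4: "(0,4) \<in> \<psi>" using cM[OF p_3_7, of 4] by (simp add: gtab)
    have p_0_8: "(0,8) \<in> \<psi>" using cM[OF p_3_7, of 8] by (simp add: gtab)
    have p_4_7: "(4,7) \<in> \<psi>" using cJ[OF p_0_8, of 4] by (simp add: gtab)
    have p_0_7: "(0,7) \<in> \<psi>" using tr p_0_4 p_4_7 by (rule transD)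
    show ?thesis using p_0_7 .
  qed
  have f_3_8: "(3,8) \<in> \<psi> \<Longrightarrow> (0,7) \<in> \<psi>"
  proof -
    assume p_3_8: "(3,8) \<in> \<psi>"
    have p_0_8: "(0,8) \<in> \<psi>" using cM[OF p_3_8, of 8] by (simp add: gtab)
    have p_7_8: "(7,8) \<in> \<psi>" using cJ[OF p_3_8, of 8] by (simp add: gtab)
    have p_8_7: "(8,7) \<in> \<psi>" using sy p_7_8 by (rule symD)
    have p_0_7: "(0,7) \<in> \<psi>" using tr p_0_8 p_8_7 by (rule transD)
    show ?thesis using p_0_7 .
  qed
  have f_4_0: "(4,0) \<in> \<psi> \<Longrightarrow> (0,7) \<in> \<psi>"
  proof -
    assume p_4_0: "(4,0) \<in> \<psi>"
    have p_7_3: "(7,3) \<in> \<psi>" using cJ[OF p_4_0, of 3] by (simp add: gtab)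
    have p_7_8: "(7,8) \<in> \<psi>" using cJ[OF p_4_0, of 8] by (simp add: gtab)
    have p_3_0: "(3,0) \<in> \<psi>" using cM[OF p_7_8, of 3] by (simp add: gtab)
    have p_7_0: "(7,0) \<in> \<psi>" using tr p_7_3 p_3_0 by (rule transD)
    have p_0_7: "(0,7) \<in> \<psi>" using sy p_7_0 by (rule symD)
    show ?thesis using p_0_7 .
  qed
  have f_4_1: "(4,1) \<in> \<psi> \<Longrightarrow> (0,7) \<in> \<psi>"
  proof -
    assume p_4_1: "(4,1) \<in> \<psi>"
    have p_6_7: "(6,7) \<in> \<psi>" using cJ[OF p_4_1, of 6] by (simp add: gtab)
    have p_0_8: "(0,8) \<in> \<psi>" using cM[OF p_6_7, of 8] by (simp add: gtab)
    have p_0_1: "(0,1) \<in> \<psi>" using cM[OF p_4_1, of 1] by (simp add: gtab)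
    have p_8_7: "(8,7) \<in> \<psi>" using cJ[OF p_0_1, of 8] by (simp add: gtab)
    have p_0_7: "(0,7) \<in> \<psi>" using tr p_0_8 p_8_7 by (rule transD)
    show ?thesis using p_0_7 .
  qed
  have f_4_2: "(4,2) \<in> \<psi> \<Longrightarrow> (0,7) \<in> \<psi>"
  proof -
    assume p_4_2: "(4,2) \<in> \<psi>"
    have p_5_7: "(5,7) \<in> \<psi>" using cJ[OF p_4_2, of 5] by (simp add: gtab)
    have p_0_8: "(0,8) \<in> \<psi>" using cM[OF p_5_7, of 8] by (simp add: gtab)
    have p_0_2: "(0,2) \<in> \<psi>" using cM[OF p_4_2, of 2] by (simp add: gtab)
    have p_8_7: "(8,7) \<in> \<psi>" using cJ[OF p_0_2, of 8] by (simp add: gtab)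
    have p_0_7: "(0,7) \<in> \<psi>" using tr p_0_8 p_8_7 by (rule transD)
    show ?thesis using p_0_7 .
  qed
  have f_4_3: "(4,3) \<in> \<psi> \<Longrightarrow> (0,7) \<in> \<psi>"
  proof -
    assume p_4_3: "(4,3) \<in> \<psi>"
    have p_0_3: "(0,3) \<in> \<psi>" using cM[OF p_4_3, of 3] by (simp add: gtab)
    have p_7_3: "(7,3) \<in> \<psi>" using cJ[OF p_4_3, of 3] by (simp add: gtab)
    have p_3_7: "(3,7) \<in> \<psi>" using sy p_7_3 by (rule symD)
    have p_0_7: "(0,7) \<in> \<psi>" using tr p_0_3 p_3_7 by (rule transD)
    show ?thesis using p_0_7 .
  qed
  have f_4_5: "(4,5) \<in> \<psi> \<Longrightarrow> (0,7) \<in> \<psi>"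
  proof -
    assume p_4_5: "(4,5) \<in> \<psi>"
    have p_6_7: "(6,7) \<in> \<psi>" using cJ[OF p_4_5, of 2] by (simp add: gtab)
    have p_0_8: "(0,8) \<in> \<psi>" using cM[OF p_6_7, of 8] by (simp add: gtab)
    have p_0_1: "(0,1) \<in> \<psi>" using cM[OF p_4_5, of 1] by (simp add: gtab)
    have p_8_7: "(8,7) \<in> \<psi>" using cJ[OF p_0_1, of 8] by (simp add: gtab)
    have p_0_7: "(0,7) \<in> \<psi>" using tr p_0_8 p_8_7 by (rule transD)
    show ?thesis using p_0_7 .
  qed
  have f_4_6: "(4,6) \<in> \<psi> \<Longrightarrow> (0,7) \<in> \<psi>"
  proof -
    assume p_4_6: "(4,6) \<in> \<psi>"
    have p_5_7: "(5,7) \<in> \<psi>" using cJ[OF p_4_6, of 1] by (simp add: gtab)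
    have p_0_8: "(0,8) \<in> \<psi>" using cM[OF p_5_7, of 8] by (simp add: gtab)
    have p_0_2: "(0,2) \<in> \<psi>" using cM[OF p_4_6, of 2] by (simp add: gtab)
    have p_8_7: "(8,7) \<in> \<psi>" using cJ[OF p_0_2, of 8] by (simp add: gtab)
    have p_0_7: "(0,7) \<in> \<psi>" using tr p_0_8 p_8_7 by (rule transD)
    show ?thesis using p_0_7 .
  qed
  have f_4_7: "(4,7) \<in> \<psi> \<Longrightarrow> (0,7) \<in> \<psi>"
  proof -
    assume p_4_7: "(4,7) \<in> \<psi>"
    have p_0_1: "(0,1) \<in> \<psi>" using cM[OF p_4_7, of 1] by (simp add: gtab)
    have p_0_8: "(0,8) \<in> \<psi>" using cM[OF p_4_7, of 8] by (simp add: gtab)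
    have p_1_7: "(1,7) \<in> \<psi>" using cJ[OF p_0_8, of 1] by (simp add: gtab)
    have p_0_7: "(0,7) \<in> \<psi>" using tr p_0_1 p_1_7 by (rule transD)
    show ?thesis using p_0_7 .
  qed
  have f_4_8: "(4,8) \<in> \<psi> \<Longrightarrow> (0,7) \<in> \<psi>"
  proof -
    assume p_4_8: "(4,8) \<in> \<psi>"
    have p_0_8: "(0,8) \<in> \<psi>" using cM[OF p_4_8, of 8] by (simp add: gtab)
    have p_7_8: "(7,8) \<in> \<psi>" using cJ[OF p_4_8, of 8] by (simp add: gtab)
    have p_8_7: "(8,7) \<in> \<psi>" using sy p_7_8 by (rule symD)
    have p_0_7: "(0,7) \<in> \<psi>" using tr p_0_8 p_8_7 by (rule transD)
    show ?thesis using p_0_7 .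
  qed
  have f_5_0: "(5,0) \<in> \<psi> \<Longrightarrow> (0,7) \<in> \<psi>"
  proof -
    assume p_5_0: "(5,0) \<in> \<psi>"
    have p_7_2: "(7,2) \<in> \<psi>" using cJ[OF p_5_0, of 2] by (simp add: gtab)
    have p_7_8: "(7,8) \<in> \<psi>" using cJ[OF p_5_0, of 8] by (simp add: gtab)
    have p_2_0: "(2,0) \<in> \<psi>" using cM[OF p_7_8, of 2] by (simp add: gtab)
    have p_7_0: "(7,0) \<in> \<psi>" using tr p_7_2 p_2_0 by (rule transD)
    have p_0_7: "(0,7) \<in> \<psi>" using sy p_7_0 by (rule symD)
    show ?thesis using p_0_7 .
  qed
  have f_5_1: "(5,1) \<in> \<psi> \<Longrightarrow> (0,7) \<in> \<psi>"
  proof -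
    assume p_5_1: "(5,1) \<in> \<psi>"
    have p_4_0: "(4,0) \<in> \<psi>" using cM[OF p_5_1, of 4] by (simp add: gtab)
    have p_7_8: "(7,8) \<in> \<psi>" using cJ[OF p_4_0, of 8] by (simp add: gtab)
    have p_7_3: "(7,3) \<in> \<psi>" using cJ[OF p_5_1, of 2] by (simp add: gtab)
    have p_8_0: "(8,0) \<in> \<psi>" using cM[OF p_7_3, of 8] by (simp add: gtab)
    have p_7_0: "(7,0) \<in> \<psi>" using tr p_7_8 p_8_0 by (rule transD)
    have p_0_7: "(0,7) \<in> \<psi>" using sy p_7_0 by (rule symD)
    show ?thesis using p_0_7 .
  qed
  have f_5_2: "(5,2) \<in> \<psi> \<Longrightarrow> (0,7) \<in> \<psi>"
  proof -
    assume p_5_2: "(5,2) \<in> \<psi>"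
    have p_0_2: "(0,2) \<in> \<psi>" using cM[OF p_5_2, of 2] by (simp add: gtab)
    have p_7_2: "(7,2) \<in> \<psi>" using cJ[OF p_5_2, of 2] by (simp add: gtab)
    have p_2_7: "(2,7) \<in> \<psi>" using sy p_7_2 by (rule symD)
    have p_0_7: "(0,7) \<in> \<psi>" using tr p_0_2 p_2_7 by (rule transD)
    show ?thesis using p_0_7 .
  qed
  have f_5_3: "(5,3) \<in> \<psi> \<Longrightarrow> (0,7) \<in> \<psi>"
  proof -
    assume p_5_3: "(5,3) \<in> \<psi>"
    have p_5_7: "(5,7) \<in> \<psi>" using cJ[OF p_5_3, of 4] by (simp add: gtab)
    have p_0_8: "(0,8) \<in> \<psi>" using cM[OF p_5_7, of 8] by (simp add: gtab)
    have p_0_2: "(0,2) \<in> \<psi>" using cM[OF p_5_3, of 2] by (simp add: gtab)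
    have p_8_7: "(8,7) \<in> \<psi>" using cJ[OF p_0_2, of 8] by (simp add: gtab)
    have p_0_7: "(0,7) \<in> \<psi>" using tr p_0_8 p_8_7 by (rule transD)
    show ?thesis using p_0_7 .
  qed
  have f_5_4: "(5,4) \<in> \<psi> \<Longrightarrow> (0,7) \<in> \<psi>"
  proof -
    assume p_5_4: "(5,4) \<in> \<psi>"
    have p_1_0: "(1,0) \<in> \<psi>" using cM[OF p_5_4, of 1] by (simp add: gtab)
    have p_7_8: "(7,8) \<in> \<psi>" using cJ[OF p_1_0, of 8] by (simp add: gtab)
    have p_7_6: "(7,6) \<in> \<psi>" using cJ[OF p_5_4, of 2] by (simp add: gtab)
    have p_8_0: "(8,0) \<in> \<psi>" using cM[OF p_7_6, of 8] by (simp add: gtab)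
    have p_7_0: "(7,0) \<in> \<psi>" using tr p_7_8 p_8_0 by (rule transD)
    have p_0_7: "(0,7) \<in> \<psi>" using sy p_7_0 by (rule symD)
    show ?thesis using p_0_7 .
  qed
  have f_5_6: "(5,6) \<in> \<psi> \<Longrightarrow> (0,7) \<in> \<psi>"
  proof -
    assume p_5_6: "(5,6) \<in> \<psi>"
    have p_5_7: "(5,7) \<in> \<psi>" using cJ[OF p_5_6, of 1] by (simp add: gtab)
    have p_0_8: "(0,8) \<in> \<psi>" using cM[OF p_5_7, of 8] by (simp add: gtab)
    have p_0_2: "(0,2) \<in> \<psi>" using cM[OF p_5_6, of 2] by (simp add: gtab)
    have p_8_7: "(8,7) \<in> \<psi>" using cJ[OF p_0_2, of 8] by (simp add: gtab)
    have p_0_7: "(0,7) \<in> \<psi>" using tr p_0_8 p_8_7 by (rule transD)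
    show ?thesis using p_0_7 .
  qed
  have f_5_7: "(5,7) \<in> \<psi> \<Longrightarrow> (0,7) \<in> \<psi>"
  proof -
    assume p_5_7: "(5,7) \<in> \<psi>"
    have p_0_2: "(0,2) \<in> \<psi>" using cM[OF p_5_7, of 2] by (simp add: gtab)
    have p_0_8: "(0,8) \<in> \<psi>" using cM[OF p_5_7, of 8] by (simp add: gtab)
    have p_2_7: "(2,7) \<in> \<psi>" using cJ[OF p_0_8, of 2] by (simp add: gtab)
    have p_0_7: "(0,7) \<in> \<psi>" using tr p_0_2 p_2_7 by (rule transD)
    show ?thesis using p_0_7 .
  qed
  have f_5_8: "(5,8) \<in> \<psi> \<Longrightarrow> (0,7) \<in> \<psi>"
  proof -
    assume p_5_8: "(5,8) \<in> \<psi>"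
    have p_0_8: "(0,8) \<in> \<psi>" using cM[OF p_5_8, of 8] by (simp add: gtab)
    have p_7_8: "(7,8) \<in> \<psi>" using cJ[OF p_5_8, of 8] by (simp add: gtab)
    have p_8_7: "(8,7) \<in> \<psi>" using sy p_7_8 by (rule symD)
    have p_0_7: "(0,7) \<in> \<psi>" using tr p_0_8 p_8_7 by (rule transD)
    show ?thesis using p_0_7 .
  qed
  have f_6_0: "(6,0) \<in> \<psi> \<Longrightarrow> (0,7) \<in> \<psi>"
  proof -
    assume p_6_0: "(6,0) \<in> \<psi>"
    have p_7_1: "(7,1) \<in> \<psi>" using cJ[OF p_6_0, of 1] by (simp add: gtab)
    have p_7_8: "(7,8) \<in> \<psi>" using cJ[OF p_6_0, of 8] by (simp add: gtab)
    have p_1_0: "(1,0) \<in> \<psi>" using cM[OF p_7_8, of 1] by (simp add: gtab)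
    have p_7_0: "(7,0) \<in> \<psi>" using tr p_7_1 p_1_0 by (rule transD)
    have p_0_7: "(0,7) \<in> \<psi>" using sy p_7_0 by (rule symD)
    show ?thesis using p_0_7 .
  qed
  have f_6_1: "(6,1) \<in> \<psi> \<Longrightarrow> (0,7) \<in> \<psi>"
  proof -
    assume p_6_1: "(6,1) \<in> \<psi>"
    have p_0_1: "(0,1) \<in> \<psi>" using cM[OF p_6_1, of 1] by (simp add: gtab)
    have p_7_1: "(7,1) \<in> \<psi>" using cJ[OF p_6_1, of 1] by (simp add: gtab)
    have p_1_7: "(1,7) \<in> \<psi>" using sy p_7_1 by (rule symD)
    have p_0_7: "(0,7) \<in> \<psi>" using tr p_0_1 p_1_7 by (rule transD)
    show ?thesis using p_0_7 .
  qed
  have f_6_2: "(6,2) \<in> \<psi> \<Longrightarrow> (0,7) \<in> \<psi>"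
  proof -
    assume p_6_2: "(6,2) \<in> \<psi>"
    have p_4_0: "(4,0) \<in> \<psi>" using cM[OF p_6_2, of 4] by (simp add: gtab)
    have p_7_8: "(7,8) \<in> \<psi>" using cJ[OF p_4_0, of 8] by (simp add: gtab)
    have p_7_3: "(7,3) \<in> \<psi>" using cJ[OF p_6_2, of 1] by (simp add: gtab)
    have p_8_0: "(8,0) \<in> \<psi>" using cM[OF p_7_3, of 8] by (simp add: gtab)
    have p_7_0: "(7,0) \<in> \<psi>" using tr p_7_8 p_8_0 by (rule transD)
    have p_0_7: "(0,7) \<in> \<psi>" using sy p_7_0 by (rule symD)
    show ?thesis using p_0_7 .
  qed
  have f_6_3: "(6,3) \<in> \<psi> \<Longrightarrow> (0,7) \<in> \<psi>"
  proof -
    assume p_6_3: "(6,3) \<in> \<psi>"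
    have p_6_7: "(6,7) \<in> \<psi>" using cJ[OF p_6_3, of 4] by (simp add: gtab)
    have p_0_8: "(0,8) \<in> \<psi>" using cM[OF p_6_7, of 8] by (simp add: gtab)
    have p_0_1: "(0,1) \<in> \<psi>" using cM[OF p_6_3, of 1] by (simp add: gtab)
    have p_8_7: "(8,7) \<in> \<psi>" using cJ[OF p_0_1, of 8] by (simp add: gtab)
    have p_0_7: "(0,7) \<in> \<psi>" using tr p_0_8 p_8_7 by (rule transD)
    show ?thesis using p_0_7 .
  qed
  have f_6_4: "(6,4) \<in> \<psi> \<Longrightarrow> (0,7) \<in> \<psi>"
  proof -
    assume p_6_4: "(6,4) \<in> \<psi>"
    have p_2_0: "(2,0) \<in> \<psi>" using cM[OF p_6_4, of 2] by (simp add: gtab)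
    have p_7_8: "(7,8) \<in> \<psi>" using cJ[OF p_2_0, of 8] by (simp add: gtab)
    have p_7_5: "(7,5) \<in> \<psi>" using cJ[OF p_6_4, of 1] by (simp add: gtab)
    have p_8_0: "(8,0) \<in> \<psi>" using cM[OF p_7_5, of 8] by (simp add: gtab)
    have p_7_0: "(7,0) \<in> \<psi>" using tr p_7_8 p_8_0 by (rule transD)
    have p_0_7: "(0,7) \<in> \<psi>" using sy p_7_0 by (rule symD)
    show ?thesis using p_0_7 .
  qed
  have f_6_5: "(6,5) \<in> \<psi> \<Longrightarrow> (0,7) \<in> \<psi>"
  proof -
    assume p_6_5: "(6,5) \<in> \<psi>"
    have p_6_7: "(6,7) \<in> \<psi>" using cJ[OF p_6_5, of 2] by (simp add: gtab)
    have p_0_8: "(0,8) \<in> \<psi>" using cM[OF p_6_7, of 8] by (simp add: gtab)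
    have p_0_1: "(0,1) \<in> \<psi>" using cM[OF p_6_5, of 1] by (simp add: gtab)
    have p_8_7: "(8,7) \<in> \<psi>" using cJ[OF p_0_1, of 8] by (simp add: gtab)
    have p_0_7: "(0,7) \<in> \<psi>" using tr p_0_8 p_8_7 by (rule transD)
    show ?thesis using p_0_7 .
  qed
  have f_6_7: "(6,7) \<in> \<psi> \<Longrightarrow> (0,7) \<in> \<psi>"
  proof -
    assume p_6_7: "(6,7) \<in> \<psi>"
    have p_0_1: "(0,1) \<in> \<psi>" using cM[OF p_6_7, of 1] by (simp add: gtab)
    have p_0_8: "(0,8) \<in> \<psi>" using cM[OF p_6_7, of 8] by (simp add: gtab)
    have p_1_7: "(1,7) \<in> \<psi>" using cJ[OF p_0_8, of 1] by (simp add: gtab)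
    have p_0_7: "(0,7) \<in> \<psi>" using tr p_0_1 p_1_7 by (rule transD)
    show ?thesis using p_0_7 .
  qed
  have f_6_8: "(6,8) \<in> \<psi> \<Longrightarrow> (0,7) \<in> \<psi>"
  proof -
    assume p_6_8: "(6,8) \<in> \<psi>"
    have p_0_8: "(0,8) \<in> \<psi>" using cM[OF p_6_8, of 8] by (simp add: gtab)
    have p_7_8: "(7,8) \<in> \<psi>" using cJ[OF p_6_8, of 8] by (simp add: gtab)
    have p_8_7: "(8,7) \<in> \<psi>" using sy p_7_8 by (rule symD)
    have p_0_7: "(0,7) \<in> \<psi>" using tr p_0_8 p_8_7 by (rule transD)
    show ?thesis using p_0_7 .
  qed
  have f_7_0: "(7,0) \<in> \<psi> \<Longrightarrow> (0,7) \<in> \<psi>"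
  proof -
    assume p_7_0: "(7,0) \<in> \<psi>"
    have p_0_7: "(0,7) \<in> \<psi>" using sy p_7_0 by (rule symD)
    show ?thesis using p_0_7 .
  qed
  have f_7_1: "(7,1) \<in> \<psi> \<Longrightarrow> (0,7) \<in> \<psi>"
  proof -
    assume p_7_1: "(7,1) \<in> \<psi>"
    have p_2_0: "(2,0) \<in> \<psi>" using cM[OF p_7_1, of 2] by (simp add: gtab)
    have p_7_8: "(7,8) \<in> \<psi>" using cJ[OF p_2_0, of 8] by (simp add: gtab)
    have p_8_0: "(8,0) \<in> \<psi>" using cM[OF p_7_1, of 8] by (simp add: gtab)
    have p_7_0: "(7,0) \<in> \<psi>" using tr p_7_8 p_8_0 by (rule transD)
    have p_0_7: "(0,7) \<in> \<psi>" using sy p_7_0 by (rule symD)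
    show ?thesis using p_0_7 .
  qed
  have f_7_2: "(7,2) \<in> \<psi> \<Longrightarrow> (0,7) \<in> \<psi>"
  proof -
    assume p_7_2: "(7,2) \<in> \<psi>"
    have p_1_0: "(1,0) \<in> \<psi>" using cM[OF p_7_2, of 1] by (simp add: gtab)
    have p_7_8: "(7,8) \<in> \<psi>" using cJ[OF p_1_0, of 8] by (simp add: gtab)
    have p_8_0: "(8,0) \<in> \<psi>" using cM[OF p_7_2, of 8] by (simp add: gtab)
    have p_7_0: "(7,0) \<in> \<psi>" using tr p_7_8 p_8_0 by (rule transD)
    have p_0_7: "(0,7) \<in> \<psi>" using sy p_7_0 by (rule symD)
    show ?thesis using p_0_7 .
  qed
  have f_7_3: "(7,3) \<in> \<psi> \<Longrightarrow> (0,7) \<in> \<psi>"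
  proof -
    assume p_7_3: "(7,3) \<in> \<psi>"
    have p_4_0: "(4,0) \<in> \<psi>" using cM[OF p_7_3, of 4] by (simp add: gtab)
    have p_7_8: "(7,8) \<in> \<psi>" using cJ[OF p_4_0, of 8] by (simp add: gtab)
    have p_8_0: "(8,0) \<in> \<psi>" using cM[OF p_7_3, of 8] by (simp add: gtab)
    have p_7_0: "(7,0) \<in> \<psi>" using tr p_7_8 p_8_0 by (rule transD)
    have p_0_7: "(0,7) \<in> \<psi>" using sy p_7_0 by (rule symD)
    show ?thesis using p_0_7 .
  qed
  have f_7_4: "(7,4) \<in> \<psi> \<Longrightarrow> (0,7) \<in> \<psi>"
  proof -
    assume p_7_4: "(7,4) \<in> \<psi>"
    have p_1_0: "(1,0) \<in> \<psi>" using cM[OF p_7_4, of 1] by (simp add: gtab)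
    have p_7_8: "(7,8) \<in> \<psi>" using cJ[OF p_1_0, of 8] by (simp add: gtab)
    have p_8_0: "(8,0) \<in> \<psi>" using cM[OF p_7_4, of 8] by (simp add: gtab)
    have p_7_0: "(7,0) \<in> \<psi>" using tr p_7_8 p_8_0 by (rule transD)
    have p_0_7: "(0,7) \<in> \<psi>" using sy p_7_0 by (rule symD)
    show ?thesis using p_0_7 .
  qed
  have f_7_5: "(7,5) \<in> \<psi> \<Longrightarrow> (0,7) \<in> \<psi>"
  proof -
    assume p_7_5: "(7,5) \<in> \<psi>"
    have p_2_0: "(2,0) \<in> \<psi>" using cM[OF p_7_5, of 2] by (simp add: gtab)
    have p_7_8: "(7,8) \<in> \<psi>" using cJ[OF p_2_0, of 8] by (simp add: gtab)
    have p_8_0: "(8,0) \<in> \<psi>" using cM[OF p_7_5, of 8] by (simp add: gtab)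
    have p_7_0: "(7,0) \<in> \<psi>" using tr p_7_8 p_8_0 by (rule transD)
    have p_0_7: "(0,7) \<in> \<psi>" using sy p_7_0 by (rule symD)
    show ?thesis using p_0_7 .
  qed
  have f_7_6: "(7,6) \<in> \<psi> \<Longrightarrow> (0,7) \<in> \<psi>"
  proof -
    assume p_7_6: "(7,6) \<in> \<psi>"
    have p_1_0: "(1,0) \<in> \<psi>" using cM[OF p_7_6, of 1] by (simp add: gtab)
    have p_7_8: "(7,8) \<in> \<psi>" using cJ[OF p_1_0, of 8] by (simp add: gtab)
    have p_8_0: "(8,0) \<in> \<psi>" using cM[OF p_7_6, of 8] by (simp add: gtab)
    have p_7_0: "(7,0) \<in> \<psi>" using tr p_7_8 p_8_0 by (rule transD)
    have p_0_7: "(0,7) \<in> \<psi>" using sy p_7_0 by (rule symD)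
    show ?thesis using p_0_7 .
  qed
  have f_7_8: "(7,8) \<in> \<psi> \<Longrightarrow> (0,7) \<in> \<psi>"
  proof -
    assume p_7_8: "(7,8) \<in> \<psi>"
    have p_1_0: "(1,0) \<in> \<psi>" using cM[OF p_7_8, of 1] by (simp add: gtab)
    have p_7_6: "(7,6) \<in> \<psi>" using cJ[OF p_1_0, of 6] by (simp add: gtab)
    have p_6_0: "(6,0) \<in> \<psi>" using cM[OF p_7_8, of 6] by (simp add: gtab)
    have p_7_0: "(7,0) \<in> \<psi>" using tr p_7_6 p_6_0 by (rule transD)
    have p_0_7: "(0,7) \<in> \<psi>" using sy p_7_0 by (rule symD)
    show ?thesis using p_0_7 .
  qed
  have f_8_0: "(8,0) \<in> \<psi> \<Longrightarrow> (0,7) \<in> \<psi>"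
  proof -
    assume p_8_0: "(8,0) \<in> \<psi>"
    have p_7_1: "(7,1) \<in> \<psi>" using cJ[OF p_8_0, of 1] by (simp add: gtab)
    have p_7_2: "(7,2) \<in> \<psi>" using cJ[OF p_8_0, of 2] by (simp add: gtab)
    have p_1_0: "(1,0) \<in> \<psi>" using cM[OF p_7_2, of 1] by (simp add: gtab)
    have p_7_0: "(7,0) \<in> \<psi>" using tr p_7_1 p_1_0 by (rule transD)
    have p_0_7: "(0,7) \<in> \<psi>" using sy p_7_0 by (rule symD)
    show ?thesis using p_0_7 .
  qed
  have f_8_1: "(8,1) \<in> \<psi> \<Longrightarrow> (0,7) \<in> \<psi>"
  proof -
    assume p_8_1: "(8,1) \<in> \<psi>"
    have p_0_1: "(0,1) \<in> \<psi>" using cM[OF p_8_1, of 1] by (simp add: gtab)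
    have p_7_1: "(7,1) \<in> \<psi>" using cJ[OF p_8_1, of 1] by (simp add: gtab)
    have p_1_7: "(1,7) \<in> \<psi>" using sy p_7_1 by (rule symD)
    have p_0_7: "(0,7) \<in> \<psi>" using tr p_0_1 p_1_7 by (rule transD)
    show ?thesis using p_0_7 .
  qed
  have f_8_2: "(8,2) \<in> \<psi> \<Longrightarrow> (0,7) \<in> \<psi>"
  proof -
    assume p_8_2: "(8,2) \<in> \<psi>"
    have p_0_2: "(0,2) \<in> \<psi>" using cM[OF p_8_2, of 2] by (simp add: gtab)
    have p_7_2: "(7,2) \<in> \<psi>" using cJ[OF p_8_2, of 2] by (simp add: gtab)
    have p_2_7: "(2,7) \<in> \<psi>" using sy p_7_2 by (rule symD)
    have p_0_7: "(0,7) \<in> \<psi>" using tr p_0_2 p_2_7 by (rule transD)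
    show ?thesis using p_0_7 .
  qed
  have f_8_3: "(8,3) \<in> \<psi> \<Longrightarrow> (0,7) \<in> \<psi>"
  proof -
    assume p_8_3: "(8,3) \<in> \<psi>"
    have p_0_3: "(0,3) \<in> \<psi>" using cM[OF p_8_3, of 3] by (simp add: gtab)
    have p_7_3: "(7,3) \<in> \<psi>" using cJ[OF p_8_3, of 1] by (simp add: gtab)
    have p_3_7: "(3,7) \<in> \<psi>" using sy p_7_3 by (rule symD)
    have p_0_7: "(0,7) \<in> \<psi>" using tr p_0_3 p_3_7 by (rule transD)
    show ?thesis using p_0_7 .
  qed
  have f_8_4: "(8,4) \<in> \<psi> \<Longrightarrow> (0,7) \<in> \<psi>"
  proof -
    assume p_8_4: "(8,4) \<in> \<psi>"
    have p_0_4: "(0,4) \<in> \<psi>" using cM[OF p_8_4, of 4] by (simp add: gtab)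
    have p_7_4: "(7,4) \<in> \<psi>" using cJ[OF p_8_4, of 4] by (simp add: gtab)
    have p_4_7: "(4,7) \<in> \<psi>" using sy p_7_4 by (rule symD)
    have p_0_7: "(0,7) \<in> \<psi>" using tr p_0_4 p_4_7 by (rule transD)
    show ?thesis using p_0_7 .
  qed
  have f_8_5: "(8,5) \<in> \<psi> \<Longrightarrow> (0,7) \<in> \<psi>"
  proof -
    assume p_8_5: "(8,5) \<in> \<psi>"
    have p_0_5: "(0,5) \<in> \<psi>" using cM[OF p_8_5, of 5] by (simp add: gtab)
    have p_7_5: "(7,5) \<in> \<psi>" using cJ[OF p_8_5, of 1] by (simp add: gtab)
    have p_5_7: "(5,7) \<in> \<psi>" using sy p_7_5 by (rule symD)
    have p_0_7: "(0,7) \<in> \<psi>" using tr p_0_5 p_5_7 by (rule transD)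
    show ?thesis using p_0_7 .
  qed
  have f_8_6: "(8,6) \<in> \<psi> \<Longrightarrow> (0,7) \<in> \<psi>"
  proof -
    assume p_8_6: "(8,6) \<in> \<psi>"
    have p_0_6: "(0,6) \<in> \<psi>" using cM[OF p_8_6, of 6] by (simp add: gtab)
    have p_7_6: "(7,6) \<in> \<psi>" using cJ[OF p_8_6, of 2] by (simp add: gtab)
    have p_6_7: "(6,7) \<in> \<psi>" using sy p_7_6 by (rule symD)
    have p_0_7: "(0,7) \<in> \<psi>" using tr p_0_6 p_6_7 by (rule transD)
    show ?thesis using p_0_7 .
  qed
  have f_8_7: "(8,7) \<in> \<psi> \<Longrightarrow> (0,7) \<in> \<psi>"
  proof -
    assume p_8_7: "(8,7) \<in> \<psi>"
    have p_0_1: "(0,1) \<in> \<psi>" using cM[OF p_8_7, of 1] by (simp add: gtab)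
    have p_0_6: "(0,6) \<in> \<psi>" using cM[OF p_8_7, of 6] by (simp add: gtab)
    have p_1_7: "(1,7) \<in> \<psi>" using cJ[OF p_0_6, of 1] by (simp add: gtab)
    have p_0_7: "(0,7) \<in> \<psi>" using tr p_0_1 p_1_7 by (rule transD)
    show ?thesis using p_0_7 .
  qed
  have p07: "(0,7) \<in> \<psi>"
  proof -
    consider (g0) "g = 0" | (g1) "g = 1" | (g2) "g = 2" | (g3) "g = 3" | (g4) "g = 4" | (g5) "g = 5" | (g6) "g = 6" | (g7) "g = 7" | (g8) "g = 8" using g9(1) unfolding nine by blast
    then show ?thesis
    proof cases
      case g0
      consider (h0) "h = 0" | (h1) "h = 1" | (h2) "h = 2" | (h3) "h = 3" | (h4) "h = 4" | (h5) "h = 5" | (h6) "h = 6" | (h7) "h = 7" | (h8) "h = 8" using g9(2) unfolding nine by blast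
      then show ?thesis
      proof cases
        case h0 then show ?thesis using gh(2) g0 by simp
      next
        case h1 then show ?thesis using f_0_1 gh(1) g0 by simp
      next
        case h2 then show ?thesis using f_0_2 gh(1) g0 by simp
      next
        case h3 then show ?thesis using f_0_3 gh(1) g0 by simp
      next
        case h4 then show ?thesis using f_0_4 gh(1) g0 by simp
      next
        case h5 then show ?thesis using f_0_5 gh(1) g0 by simp
      next
        case h6 then show ?thesis using f_0_6 gh(1) g0 by simp
      next
        case h7 then show ?thesis using f_0_7 gh(1) g0 by simp
      next
        case h8 then show ?thesis using f_0_8 gh(1) g0 by simp
      qed
    next
      case g1
      consider (h0) "h = 0" | (h1) "h = 1" | (h2) "h = 2" | (h3) "h = 3" | (h4) "h = 4" | (h5) "h = 5" | (h6) "h = 6" | (h7) "h = 7" | (h8) "h = 8" using g9(2) unfolding nine by blast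
      then show ?thesis
      proof cases
        case h0 then show ?thesis using f_1_0 gh(1) g1 by simp
      next
        case h1 then show ?thesis using gh(2) g1 by simp
      next
        case h2 then show ?thesis using f_1_2 gh(1) g1 by simp
      next
        case h3 then show ?thesis using f_1_3 gh(1) g1 by simp
      next
        case h4 then show ?thesis using f_1_4 gh(1) g1 by simp
      next
        case h5 then show ?thesis using f_1_5 gh(1) g1 by simp
      next
        case h6 then show ?thesis using f_1_6 gh(1) g1 by simp
      next
        case h7 then show ?thesis using f_1_7 gh(1) g1 by simp
      next
        case h8 then show ?thesis using f_1_8 gh(1) g1 by simp
      qed
    next
      case g2
      consider (h0) "h = 0" | (h1) "h = 1" | (h2) "h = 2" | (h3) "h = 3" | (h4) "h = 4" | (h5) "h = 5" | (h6) "h = 6" | (h7) "h = 7" | (h8) "h = 8" using g9(2) unfolding nine by blast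
      then show ?thesis
      proof cases
        case h0 then show ?thesis using f_2_0 gh(1) g2 by simp
      next
        case h1 then show ?thesis using f_2_1 gh(1) g2 by simp
      next
        case h2 then show ?thesis using gh(2) g2 by simp
      next
        case h3 then show ?thesis using f_2_3 gh(1) g2 by simp
      next
        case h4 then show ?thesis using f_2_4 gh(1) g2 by simp
      next
        case h5 then show ?thesis using f_2_5 gh(1) g2 by simp
      next
        case h6 then show ?thesis using f_2_6 gh(1) g2 by simp
      next
        case h7 then show ?thesis using f_2_7 gh(1) g2 by simp
      next
        case h8 then show ?thesis using f_2_8 gh(1) g2 by simp
      qed
    next
      case g3
      consider (h0) "h = 0" | (h1) "h = 1" | (h2) "h = 2" | (h3) "h = 3" | (h4) "h = 4" | (h5) "h = 5" | (h6) "h = 6" | (h7) "h = 7" | (h8) "h = 8" using g9(2) unfolding nine by blast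
      then show ?thesis
      proof cases
        case h0 then show ?thesis using f_3_0 gh(1) g3 by simp
      next
        case h1 then show ?thesis using f_3_1 gh(1) g3 by simp
      next
        case h2 then show ?thesis using f_3_2 gh(1) g3 by simp
      next
        case h3 then show ?thesis using gh(2) g3 by simp
      next
        case h4 then show ?thesis using f_3_4 gh(1) g3 by simp
      next
        case h5 then show ?thesis using f_3_5 gh(1) g3 by simp
      next
        case h6 then show ?thesis using f_3_6 gh(1) g3 by simp
      next
        case h7 then show ?thesis using f_3_7 gh(1) g3 by simp
      next
        case h8 then show ?thesis using f_3_8 gh(1) g3 by simp
      qed
    next
      case g4
      consider (h0) "h = 0" | (h1) "h = 1" | (h2) "h = 2" | (h3) "h = 3" | (h4) "h = 4" | (h5) "h = 5" | (h6) "h = 6" | (h7) "h = 7" | (h8) "h = 8" using g9(2) unfolding nine by blast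
      then show ?thesis
      proof cases
        case h0 then show ?thesis using f_4_0 gh(1) g4 by simp
      next
        case h1 then show ?thesis using f_4_1 gh(1) g4 by simp
      next
        case h2 then show ?thesis using f_4_2 gh(1) g4 by simp
      next
        case h3 then show ?thesis using f_4_3 gh(1) g4 by simp
      next
        case h4 then show ?thesis using gh(2) g4 by simp
      next
        case h5 then show ?thesis using f_4_5 gh(1) g4 by simp
      next
        case h6 then show ?thesis using f_4_6 gh(1) g4 by simp
      next
        case h7 then show ?thesis using f_4_7 gh(1) g4 by simp
      next
        case h8 then show ?thesis using f_4_8 gh(1) g4 by simp
      qed
    next
      case g5
      consider (h0) "h = 0" | (h1) "h = 1" | (h2) "h = 2" | (h3) "h = 3" | (h4) "h = 4" | (h5) "h = 5" | (h6) "h = 6" | (h7) "h = 7" | (h8) "h = 8" using g9(2) unfolding nine by blast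
      then show ?thesis
      proof cases
        case h0 then show ?thesis using f_5_0 gh(1) g5 by simp
      next
        case h1 then show ?thesis using f_5_1 gh(1) g5 by simp
      next
        case h2 then show ?thesis using f_5_2 gh(1) g5 by simp
      next
        case h3 then show ?thesis using f_5_3 gh(1) g5 by simp
      next
        case h4 then show ?thesis using f_5_4 gh(1) g5 by simp
      next
        case h5 then show ?thesis using gh(2) g5 by simp
      next
        case h6 then show ?thesis using f_5_6 gh(1) g5 by simp
      next
        case h7 then show ?thesis using f_5_7 gh(1) g5 by simp
      next
        case h8 then show ?thesis using f_5_8 gh(1) g5 by simp
      qed
    next
      case g6
      consider (h0) "h = 0" | (h1) "h = 1" | (h2) "h = 2" | (h3) "h = 3" | (h4) "h = 4" | (h5) "h = 5" | (h6) "h = 6" | (h7) "h = 7" | (h8) "h = 8" using g9(2) unfolding nine by blast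
      then show ?thesis
      proof cases
        case h0 then show ?thesis using f_6_0 gh(1) g6 by simp
      next
        case h1 then show ?thesis using f_6_1 gh(1) g6 by simp
      next
        case h2 then show ?thesis using f_6_2 gh(1) g6 by simp
      next
        case h3 then show ?thesis using f_6_3 gh(1) g6 by simp
      next
        case h4 then show ?thesis using f_6_4 gh(1) g6 by simp
      next
        case h5 then show ?thesis using f_6_5 gh(1) g6 by simp
      next
        case h6 then show ?thesis using gh(2) g6 by simp
      next
        case h7 then show ?thesis using f_6_7 gh(1) g6 by simp
      next
        case h8 then show ?thesis using f_6_8 gh(1) g6 by simp
      qed
    next
      case g7
      consider (h0) "h = 0" | (h1) "h = 1" | (h2) "h = 2" | (h3) "h = 3" | (h4) "h = 4" | (h5) "h = 5" | (h6) "h = 6" | (h7) "h = 7" | (h8) "h = 8" using g9(2) unfolding nine by blast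
      then show ?thesis
      proof cases
        case h0 then show ?thesis using f_7_0 gh(1) g7 by simp
      next
        case h1 then show ?thesis using f_7_1 gh(1) g7 by simp
      next
        case h2 then show ?thesis using f_7_2 gh(1) g7 by simp
      next
        case h3 then show ?thesis using f_7_3 gh(1) g7 by simp
      next
        case h4 then show ?thesis using f_7_4 gh(1) g7 by simp
      next
        case h5 then show ?thesis using f_7_5 gh(1) g7 by simp
      next
        case h6 then show ?thesis using f_7_6 gh(1) g7 by simp
      next
        case h7 then show ?thesis using gh(2) g7 by simp
      next
        case h8 then show ?thesis using f_7_8 gh(1) g7 by simp
      qed
    next
      case g8
      consider (h0) "h = 0" | (h1) "h = 1" | (h2) "h = 2" | (h3) "h = 3" | (h4) "h = 4" | (h5) "h = 5" | (h6) "h = 6" | (h7) "h = 7" | (h8) "h = 8" using g9(2) unfolding nine by blast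
      then show ?thesis
      proof cases
        case h0 then show ?thesis using f_8_0 gh(1) g8 by simp
      next
        case h1 then show ?thesis using f_8_1 gh(1) g8 by simp
      next
        case h2 then show ?thesis using f_8_2 gh(1) g8 by simp
      next
        case h3 then show ?thesis using f_8_3 gh(1) g8 by simp
      next
        case h4 then show ?thesis using f_8_4 gh(1) g8 by simp
      next
        case h5 then show ?thesis using f_8_5 gh(1) g8 by simp
      next
        case h6 then show ?thesis using f_8_6 gh(1) g8 by simp
      next
        case h7 then show ?thesis using f_8_7 gh(1) g8 by simp
      next
        case h8 then show ?thesis using gh(2) g8 by simp
      qed
    qed
  qed
  have x7: "(x,7) \<in> \<psi>" if "x < 9" for x
  proof -
    have "gj 0 x = x" "gj 7 x = 7" using that unfolding nine by (auto simp: gj_def cj_def)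
    then show ?thesis using cJ[OF p07 that] by simp
  qed
  show "\<psi> = {..<9} \<times> {..<9}"
  proof
    show "{..<9} \<times> {..<9} \<subseteq> \<psi>"
    proof
      fix p :: "nat \<times> nat" assume "p \<in> {..<9} \<times> {..<9}"
      then obtain x y :: nat where p: "p = (x,y)" "x < 9" "y < 9" by auto
      then have "(x,7) \<in> \<psi>" "(7,y) \<in> \<psi>" using x7 sy by (auto dest: symD)
      then show "p \<in> \<psi>" using tr p(1) by (auto dest: transD)
    qed
  qed (rule sub)
qed






lemma G0: "g < 9 \<Longrightarrow> gj g 0 = g \<and> gm g 7 = g \<and> gj 0 g = g \<and> gm 7 g = g"
  unfolding nine by (elim disjE) (simp_all add: gj_def gm_def cj_def cm_def)

definition lo :: nat where "lo = enc False False False False 0"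
definition hi :: nat where "hi = enc True True True True 7"

definition dif :: "nat \<times> nat \<Rightarrow> nat set" where "dif p = {c. c < 5 \<and> pr c (fst p) \<noteq> pr c (snd p)}"
definition Dset :: "nat set \<Rightarrow> nat set set" where "Dset C = {D F | F. finite F \<and> F \<subseteq> C \<times> C}"

lemma D_dif: "D F = \<Union> (dif ` F)" unfolding D_def dif_def by auto

lemma fin_union: assumes "finite F" "\<forall>p\<in>F. P (f p)" "P {}" "\<And>a b. P a \<Longrightarrow> P b \<Longrightarrow> P (a \<union> b)"
  shows "P (\<Union> (f ` F))"
  using assms(1,2)
proof (induction F rule: finite_induct)
  case empty then show ?case using assms(3) by simp
next
  case (insert x F) then show ?case using assms(4) by simp
qed

lemma Dset_sub: assumes "\<And>x y. x \<in> C \<Longrightarrow> y \<in> C \<Longrightarrow> P (dif (x,y))" "P {}" "\<And>a b. P a \<Longrightarrow> P b \<Longrightarrow> P (a \<union> b)"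
  shows "\<forall>S\<in>Dset C. P S"
proof
  fix S assume "S \<in> Dset C"
  then obtain F where F: "S = D F" "finite F" "F \<subseteq> C \<times> C" unfolding Dset_def by auto
  have "P (\<Union> (dif ` F))"
  proof (rule fin_union[OF F(2)])
    show "\<forall>p\<in>F. P (dif p)" using F(3) assms(1) by fastforce
    show "P {}" by (rule assms(2))
    show "\<And>a b. P a \<Longrightarrow> P b \<Longrightarrow> P (a \<union> b)" by (rule assms(3))
  qed
  then show "P S" using F(1) D_dif by simp
qed

lemma Dset_wit: assumes "x \<in> C" "y \<in> C" shows "dif (x,y) \<in> Dset C"
proof -
  have "D {(x,y)} = dif (x,y)" using D_dif by simp
  then show ?thesis unfolding Dset_def using assms by (auto intro!: exI[of _ "{(x,y)}"])
qed

lemma charC_prod: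
  assumes sub: "sub C" and I: "I \<subseteq> {..<5}"
    and inj: "\<forall>x\<in>C. \<forall>y\<in>C. (\<forall>c\<in>I. pr c x = pr c y) \<longrightarrow> x = y"
    and mix: "\<forall>x\<in>C. \<forall>y\<in>C. \<forall>c\<in>I. \<exists>z\<in>C. pr c z = pr c y \<and> (\<forall>c'\<in>I. c' \<noteq> c \<longrightarrow> pr c' z = pr c' x)"
    and bC: "b \<in> C" and tC: "t \<in> C" and bt: "\<forall>x\<in>C. meetU (joinU x b) t = x"
    and simp: "\<forall>c\<in>I. simple_on (pr c ` C) (jC c) (mC c)"
  shows "charC C"
  unfolding charC_def
proof (intro allI impI)
  fix \<theta> assume cong: "lcongruence (LL C) \<theta>"
  have "Th C (D \<theta>) \<subseteq> {(x,y). x \<in> C \<and> y \<in> C \<and> (\<forall>c\<in>I. pr c x \<noteq> pr c y \<longrightarrow> c \<in> D \<theta>)}"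
    using I unfolding Th_def by auto
  also have "\<dots> \<subseteq> \<theta>" by (rule prod_char[OF assms cong])
  finally show "Th C (D \<theta>) \<subseteq> \<theta>" .
qed

lemma chain_char:
  assumes sub: "sub {b,m,t}"
    and jm: "joinU b m = m" "joinU t m = t" "meetU b m = b" "meetU t m = m"
    and k1: "k1 < 5" "pr k1 b \<noteq> pr k1 m" "pr k1 m = pr k1 t" "pr k1 b \<noteq> pr k1 t"
    and k2: "k2 < 5" "pr k2 m \<noteq> pr k2 t" "pr k2 b = pr k2 m" "pr k2 b \<noteq> pr k2 t"
  shows "charC {b,m,t}"
  unfolding charC_def
proof (intro allI impI subsetI)
  fix \<theta> p assume cong: "lcongruence (LL {b,m,t}) \<theta>" and p: "p \<in> Th {b,m,t} (D \<theta>)"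
  have \<theta>C: "\<theta> \<subseteq> {b,m,t} \<times> {b,m,t}" using cong unfolding lcongruence_def equiv_def by simp
  have rfo: "refl_on {b,m,t} \<theta>" using cong unfolding lcongruence_def equiv_def LL_simps by blast
  have rf: "\<And>x. x \<in> {b,m,t} \<Longrightarrow> (x,x) \<in> \<theta>" using rfo by (rule refl_onD)
  have sy: "\<And>x y. (x,y) \<in> \<theta> \<Longrightarrow> (y,x) \<in> \<theta>" using cong unfolding lcongruence_def equiv_def sym_def by blast
  have tr: "\<And>x y z. (x,y) \<in> \<theta> \<Longrightarrow> (y,z) \<in> \<theta> \<Longrightarrow> (x,z) \<in> \<theta>"
    using cong unfolding lcongruence_def equiv_def trans_def by blast
  have cj: "\<And>x y u v. (x,y) \<in> \<theta> \<Longrightarrow> (u,v) \<in> \<theta> \<Longrightarrow> (joinU x u, joinU y v) \<in> \<theta>"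
    using cong unfolding lcongruence_def by simp
  have cm: "\<And>x y u v. (x,y) \<in> \<theta> \<Longrightarrow> (u,v) \<in> \<theta> \<Longrightarrow> (meetU x u, meetU y v) \<in> \<theta>"
    using cong unfolding lcongruence_def by simp
  have mC: "m \<in> {b,m,t}" by simp
  have bt_bm: "(b,m) \<in> \<theta>" if "(b,t) \<in> \<theta>"
    using cm[OF that rf[OF mC]] jm by simp
  have bt_mt: "(m,t) \<in> \<theta>" if "(b,t) \<in> \<theta>"
    using cj[OF that rf[OF mC]] jm by simp
  have c1: "(b,m) \<in> \<theta>" if kk: "k1 \<in> D \<theta>"
  proof -
    obtain x y where xy: "(x,y) \<in> \<theta>" "pr k1 x \<noteq> pr k1 y" using kk unfolding D_def by blast
    have "x \<in> {b,m,t}" "y \<in> {b,m,t}" using xy \<theta>C by auto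
    then have "(x,y) = (b,m) \<or> (x,y) = (m,b) \<or> (x,y) = (b,t) \<or> (x,y) = (t,b)" using xy(2) k1 by auto
    then show ?thesis using xy(1) sy bt_bm by blast
  qed
  have c2: "(m,t) \<in> \<theta>" if kk: "k2 \<in> D \<theta>"
  proof -
    obtain x y where xy: "(x,y) \<in> \<theta>" "pr k2 x \<noteq> pr k2 y" using kk unfolding D_def by blast
    have "x \<in> {b,m,t}" "y \<in> {b,m,t}" using xy \<theta>C by auto
    then have "(x,y) = (m,t) \<or> (x,y) = (t,m) \<or> (x,y) = (b,t) \<or> (x,y) = (t,b)" using xy(2) k2 by auto
    then show ?thesis using xy(1) sy bt_mt by blast
  qed
  obtain x y where pxy: "p = (x,y)" "x \<in> {b,m,t}" "y \<in> {b,m,t}" "\<forall>c<5. pr c x \<noteq> pr c y \<longrightarrow> c \<in> D \<theta>"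
    using p unfolding Th_def by auto
  have "x = y \<or> (x,y) = (b,m) \<or> (x,y) = (m,b) \<or> (x,y) = (m,t) \<or> (x,y) = (t,m) \<or> (x,y) = (b,t) \<or> (x,y) = (t,b)"
    using pxy by auto
  then show "p \<in> \<theta>"
  proof (elim disjE)
    assume "x = y" then show ?thesis using pxy rf by simp
  next
    assume e: "(x,y) = (b,m)" then show ?thesis using pxy c1 k1 by auto
  next
    assume e: "(x,y) = (m,b)" then show ?thesis using pxy c1 k1 sy by auto
  next
    assume e: "(x,y) = (m,t)" then show ?thesis using pxy c2 k2 by auto
  next
    assume e: "(x,y) = (t,m)" then show ?thesis using pxy c2 k2 sy by auto
  next
    assume e: "(x,y) = (b,t)"
    then have "(b,m) \<in> \<theta>" "(m,t) \<in> \<theta>" using pxy c1 c2 k1 k2 by auto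
    then show ?thesis using e pxy tr by auto
  next
    assume e: "(x,y) = (t,b)"
    then have "(b,m) \<in> \<theta>" "(m,t) \<in> \<theta>" using pxy c1 c2 k1 k2 by auto
    then show ?thesis using e pxy tr sy by blast
  qed
qed




definition gT :: "nat \<Rightarrow> bool \<Rightarrow> bool \<Rightarrow> bool \<Rightarrow> bool \<Rightarrow> nat" where
  "gT j b0 b1 b2 b3 = (if j = 0 then (if b0 then (if b1 then 7 else 1) else (if b1 then 8 else 0))
     else if j = 1 then (if b3 then (if b1 then (if b0 then 7 else 6) else (if b0 then 5 else 4))
                          else (if b1 then (if b0 then 3 else 2) else (if b0 then 1 else 0)))
     else (if b0 then (if b2 then 7 else 3) else (if b2 then 8 else 0)))"
definition tj :: "nat \<Rightarrow> bool \<Rightarrow> bool \<Rightarrow> bool \<Rightarrow> bool \<Rightarrow> nat" where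
  "tj j b0 b1 b2 b3 = enc b0 b1 b2 b3 (gT j b0 b1 b2 b3)"
definition CT :: "nat \<Rightarrow> nat set" where
  "CT j = {tj j b0 b1 b2 b3 | b0 b1 b2 b3. True}"

lemma gT_lt: "gT j b0 b1 b2 b3 < 9"
  by (simp add: gT_def)

lemma gT_hom0: "gj (gT 0 a0 a1 a2 a3) (gT 0 b0 b1 b2 b3) = gT 0 (a0 \<or> b0) (a1 \<or> b1) (a2 \<or> b2) (a3 \<or> b3) \<and>
   gm (gT 0 a0 a1 a2 a3) (gT 0 b0 b1 b2 b3) = gT 0 (a0 \<and> b0) (a1 \<and> b1) (a2 \<and> b2) (a3 \<and> b3)"
  by (cases a0; cases a1; cases b0; cases b1; simp add: gT_def gtab)
lemma gT_hom1: "gj (gT 1 a0 a1 a2 a3) (gT 1 b0 b1 b2 b3) = gT 1 (a0 \<or> b0) (a1 \<or> b1) (a2 \<or> b2) (a3 \<or> b3) \<and>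
   gm (gT 1 a0 a1 a2 a3) (gT 1 b0 b1 b2 b3) = gT 1 (a0 \<and> b0) (a1 \<and> b1) (a2 \<and> b2) (a3 \<and> b3)"
  by (cases a0; cases a1; cases a3; cases b0; cases b1; cases b3; simp add: gT_def gtab)
lemma gT_hom2: "gj (gT 2 a0 a1 a2 a3) (gT 2 b0 b1 b2 b3) = gT 2 (a0 \<or> b0) (a1 \<or> b1) (a2 \<or> b2) (a3 \<or> b3) \<and>
   gm (gT 2 a0 a1 a2 a3) (gT 2 b0 b1 b2 b3) = gT 2 (a0 \<and> b0) (a1 \<and> b1) (a2 \<and> b2) (a3 \<and> b3)"
  by (cases a0; cases a2; cases b0; cases b2; simp add: gT_def gtab)
lemma gT_hom: "gj (gT j a0 a1 a2 a3) (gT j b0 b1 b2 b3) = gT j (a0 \<or> b0) (a1 \<or> b1) (a2 \<or> b2) (a3 \<or> b3) \<and>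
   gm (gT j a0 a1 a2 a3) (gT j b0 b1 b2 b3) = gT j (a0 \<and> b0) (a1 \<and> b1) (a2 \<and> b2) (a3 \<and> b3)"
  if j3: "j < 3"
proof -
  consider "j = 0" | "j = 1" | "j = 2" using j3 by linarith
  then show ?thesis
  proof cases
    case 1 show ?thesis unfolding 1 by (rule gT_hom0)
  next
    case 2 show ?thesis unfolding 2 by (rule gT_hom1)
  next
    case 3 show ?thesis unfolding 3 by (rule gT_hom2)
  qed
qed

lemma tj_join: "j < 3 \<Longrightarrow> joinU (tj j a0 a1 a2 a3) (tj j b0 b1 b2 b3) = tj j (a0 \<or> b0) (a1 \<or> b1) (a2 \<or> b2) (a3 \<or> b3)"
  unfolding tj_def using gT_hom by simp
lemma tj_meet: "j < 3 \<Longrightarrow> meetU (tj j a0 a1 a2 a3) (tj j b0 b1 b2 b3) = tj j (a0 \<and> b0) (a1 \<and> b1) (a2 \<and> b2) (a3 \<and> b3)"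
  unfolding tj_def using gT_hom by simp

lemma pr_01: "c \<noteq> 4 \<Longrightarrow> pr c x \<in> {0,1}" by (simp add: pr_def)

lemma pr_enc_Suc[simp]: "pr (Suc 0) (enc b0 b1 b2 b3 g) = of_bool b1"
  using pr_enc(2) by simp

lemma tj_pr[simp]: "pr 0 (tj j b0 b1 b2 b3) = of_bool b0" "pr 1 (tj j b0 b1 b2 b3) = of_bool b1"
  "pr 2 (tj j b0 b1 b2 b3) = of_bool b2" "pr 3 (tj j b0 b1 b2 b3) = of_bool b3"
  "pr 4 (tj j b0 b1 b2 b3) = gT j b0 b1 b2 b3" "pr (Suc 0) (tj j b0 b1 b2 b3) = of_bool b1"
  by (simp_all add: tj_def)

lemma tj_inj[simp]: "tj j a0 a1 a2 a3 = tj j b0 b1 b2 b3 \<longleftrightarrow> a0 = b0 \<and> a1 = b1 \<and> a2 = b2 \<and> a3 = b3"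
  by (auto simp: tj_def)

lemma tj_lt: "tj j b0 b1 b2 b3 < 144" by (simp add: tj_def gT_lt)

lemma lo_tj: "lo = tj j False False False False" by (simp add: tj_def lo_def gT_def)
lemma hi_tj: "j < 3 \<Longrightarrow> hi = tj j True True True True" by (auto simp: tj_def hi_def gT_def)

lemma sub_CT: assumes "j < 3" shows "sub (CT j)"
  unfolding sub_def CT_def using assms tj_lt by (auto simp: tj_join tj_meet) blast

lemma charC_CT: assumes j: "j < 3" shows "charC (CT j)"
proof (rule charC_prod[where I = "{0,1,2,3}" and b = lo and t = hi])
  show "sub (CT j)" by (rule sub_CT[OF j])
  show "{0,1,2,3} \<subseteq> {..<(5::nat)}" by auto
  show "\<forall>x\<in>CT j. \<forall>y\<in>CT j. (\<forall>c\<in>{0,1,2,3}. pr c x = pr c y) \<longrightarrow> x = y"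
    unfolding CT_def by auto
  show "\<forall>x\<in>CT j. \<forall>y\<in>CT j. \<forall>c\<in>{0,1,2,3}. \<exists>z\<in>CT j. pr c z = pr c y \<and> (\<forall>c'\<in>{0,1,2,3}. c' \<noteq> c \<longrightarrow> pr c' z = pr c' x)"
  proof (intro ballI)
    fix x y c assume x: "x \<in> CT j" and y: "y \<in> CT j" and c: "c \<in> {0,1,2,3::nat}"
    obtain a0 a1 a2 a3 where xa: "x = tj j a0 a1 a2 a3" using x unfolding CT_def by auto
    obtain b0 b1 b2 b3 where yb: "y = tj j b0 b1 b2 b3" using y unfolding CT_def by auto
    define z where "z = tj j (if c = 0 then b0 else a0) (if c = 1 then b1 else a1) (if c = 2 then b2 else a2) (if c = 3 then b3 else a3)"
    have "z \<in> CT j" unfolding z_def CT_def by auto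
    moreover have "pr c z = pr c y \<and> (\<forall>c'\<in>{0,1,2,3}. c' \<noteq> c \<longrightarrow> pr c' z = pr c' x)"
      using c unfolding z_def xa yb by auto
    ultimately show "\<exists>z\<in>CT j. pr c z = pr c y \<and> (\<forall>c'\<in>{0,1,2,3}. c' \<noteq> c \<longrightarrow> pr c' z = pr c' x)" by blast
  qed
  show "lo \<in> CT j" unfolding CT_def lo_tj[of j] by auto
  show "hi \<in> CT j" unfolding CT_def hi_tj[OF j] by auto
  show "\<forall>x\<in>CT j. meetU (joinU x lo) hi = x"
    unfolding CT_def lo_tj[of j] hi_tj[OF j] using j by (auto simp: tj_join tj_meet)
  show "\<forall>c\<in>{0,1,2,3}. simple_on (pr c ` CT j) (jC c) (mC c)"
  proof
    fix c :: nat assume "c \<in> {0,1,2,3}"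
    then have "c \<noteq> 4" by auto
    then have "pr c ` CT j \<subseteq> {0,1}" unfolding image_subset_iff using pr_01 by blast
    then show "simple_on (pr c ` CT j) (jC c) (mC c)" by (rule simple_01)
  qed
qed




definition CU :: "nat set" where "CU = {..<144}"
definition C0 :: "nat set" where "C0 = {lo, hi}"
definition mS :: "nat \<Rightarrow> nat" where
  "mS i = (if i = 0 then enc True True False False 3 else if i = 1 then enc False True True False 8 else enc True False True False 1)"
definition CS :: "nat \<Rightarrow> nat set" where "CS i = {lo, mS i, hi}"

lemma bt_lt: "lo < 144" "hi < 144" by (simp_all add: lo_def hi_def)

lemma bt_law: assumes "x < 144" shows "meetU (joinU x lo) hi = x"
proof -
  obtain a0 a1 a2 a3 g where x: "g < 9" "x = enc a0 a1 a2 a3 g" using U_ex[OF assms] by blast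
  show ?thesis using x G0[of g] by (simp add: lo_def hi_def)
qed

lemma sub_CU: "sub CU"
proof -
  have "(0::nat) \<in> {..<144}" by simp
  moreover have "\<forall>x\<in>{..<144}. \<forall>y\<in>{..<144}. joinU x y \<in> {..<144} \<and> meetU x y \<in> {..<(144::nat)}"
    using U_laws(1,2) by simp
  ultimately show ?thesis unfolding sub_def CU_def by blast
qed

lemma pr4_CU: "pr 4 ` CU = {..<9}"
proof
  show "pr 4 ` CU \<subseteq> {..<9}"
  proof
    fix v assume "v \<in> pr 4 ` CU"
    then obtain x where x: "x < 144" "v = pr 4 x" unfolding CU_def by auto
    obtain a0 a1 a2 a3 g where "g < 9" "x = enc a0 a1 a2 a3 g" using U_ex[OF x(1)] by blast
    then show "v \<in> {..<9}" using x(2) by simp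
  qed
  show "{..<9} \<subseteq> pr 4 ` CU"
  proof
    fix v assume "v \<in> {..<(9::nat)}"
    then have "enc False False False False v \<in> CU" "pr 4 (enc False False False False v) = v" unfolding CU_def by auto
    then show "v \<in> pr 4 ` CU" by (metis image_eqI)
  qed
qed

lemma charC_CU: "charC CU"
proof (rule charC_prod[where I = "{..<5}" and b = lo and t = hi])
  show "sub CU" by (rule sub_CU)
  show "{..<5} \<subseteq> {..<(5::nat)}" by simp
  show "\<forall>x\<in>CU. \<forall>y\<in>CU. (\<forall>c\<in>{..<5}. pr c x = pr c y) \<longrightarrow> x = y"
    unfolding CU_def using U_eq by auto
  show "\<forall>x\<in>CU. \<forall>y\<in>CU. \<forall>c\<in>{..<5}. \<exists>z\<in>CU. pr c z = pr c y \<and> (\<forall>c'\<in>{..<5}. c' \<noteq> c \<longrightarrow> pr c' z = pr c' x)"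
  proof (intro ballI)
    fix x y c assume x: "x \<in> CU" and y: "y \<in> CU" and c: "c \<in> {..<(5::nat)}"
    obtain a0 a1 a2 a3 g where xa: "g < 9" "x = enc a0 a1 a2 a3 g" using U_ex x unfolding CU_def by blast
    obtain b0 b1 b2 b3 h where yb: "h < 9" "y = enc b0 b1 b2 b3 h" using U_ex y unfolding CU_def by blast
    define z where "z = enc (if c = 0 then b0 else a0) (if c = 1 then b1 else a1) (if c = 2 then b2 else a2) (if c = 3 then b3 else a3) (if c = 4 then h else g)"
    have "z \<in> CU" unfolding z_def CU_def using xa yb by simp
    moreover have "pr c z = pr c y" using c unfolding z_def xa yb five lessThan_iff by (elim disjE) simp_all
    moreover have "pr c' z = pr c' x" if "c' \<in> {..<5}" "c' \<noteq> c" for c'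
      using that c unfolding z_def xa yb five lessThan_iff by (elim disjE) simp_all
    ultimately show "\<exists>z\<in>CU. pr c z = pr c y \<and> (\<forall>c'\<in>{..<5}. c' \<noteq> c \<longrightarrow> pr c' z = pr c' x)" by blast
  qed
  show "lo \<in> CU" "hi \<in> CU" unfolding CU_def using bt_lt by auto
  show "\<forall>x\<in>CU. meetU (joinU x lo) hi = x" unfolding CU_def using bt_law by auto
  show "\<forall>c\<in>{..<5}. simple_on (pr c ` CU) (jC c) (mC c)"
  proof
    fix c :: nat assume "c \<in> {..<5}"
    show "simple_on (pr c ` CU) (jC c) (mC c)"
    proof (cases "c = 4")
      case True
      have "jC 4 = gj" "mC 4 = gm" by (auto simp: jC_def mC_def fun_eq_iff)
      then show ?thesis using True G_simple pr4_CU by simp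
    next
      case False
      then have "pr c ` CU \<subseteq> {0,1}" unfolding image_subset_iff using pr_01 by blast
      then show ?thesis by (rule simple_01)
    qed
  qed
qed

lemma C0_ops: "joinU lo lo = lo" "joinU lo hi = hi" "joinU hi lo = hi" "joinU hi hi = hi"
  "meetU lo lo = lo" "meetU lo hi = lo" "meetU hi lo = lo" "meetU hi hi = hi"
  by (simp_all add: lo_def hi_def gtab)

lemma sub_C0: "sub C0" unfolding sub_def C0_def using C0_ops bt_lt by auto

lemma pr_bt: "pr 0 lo = 0" "pr 0 hi = 1" "pr 4 lo = 0" "pr 4 hi = 7"
  by (simp_all add: lo_def hi_def)

lemma charC_C0: "charC C0"
proof (rule charC_prod[where I = "{0}" and b = lo and t = hi])
  show "sub C0" by (rule sub_C0)
  show "{0} \<subseteq> {..<(5::nat)}" by simp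
  show "\<forall>x\<in>C0. \<forall>y\<in>C0. (\<forall>c\<in>{0}. pr c x = pr c y) \<longrightarrow> x = y"
    unfolding C0_def using pr_bt by auto
  show "\<forall>x\<in>C0. \<forall>y\<in>C0. \<forall>c\<in>{0}. \<exists>z\<in>C0. pr c z = pr c y \<and> (\<forall>c'\<in>{0}. c' \<noteq> c \<longrightarrow> pr c' z = pr c' x)"
    by blast
  show "lo \<in> C0" "hi \<in> C0" unfolding C0_def by auto
  show "\<forall>x\<in>C0. meetU (joinU x lo) hi = x" unfolding C0_def using C0_ops by auto
  show "\<forall>c\<in>{0}. simple_on (pr c ` C0) (jC c) (mC c)"
  proof
    fix c :: nat assume "c \<in> {0}"
    then have "c \<noteq> 4" by auto
    then have "pr c ` C0 \<subseteq> {0,1}" unfolding image_subset_iff using pr_01 by blast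
    then show "simple_on (pr c ` C0) (jC c) (mC c)" by (rule simple_01)
  qed
qed

lemma lt3_cases: "i < (3::nat) \<Longrightarrow> (i = 0 \<Longrightarrow> P) \<Longrightarrow> (i = 1 \<Longrightarrow> P) \<Longrightarrow> (i = 2 \<Longrightarrow> P) \<Longrightarrow> P"
  by linarith

lemma mS_vals: "mS 0 = enc True True False False 3" "mS 1 = enc False True True False 8" "mS 2 = enc True False True False 1"
  "mS (Suc 0) = enc False True True False 8"
  by (simp_all add: mS_def)

lemma CS_ops: assumes i3: "i < 3" shows "joinU lo (mS i) = mS i \<and> joinU hi (mS i) = hi \<and> meetU lo (mS i) = lo \<and> meetU hi (mS i) = mS i \<and>
   joinU (mS i) lo = mS i \<and> joinU (mS i) hi = hi \<and> meetU (mS i) lo = lo \<and> meetU (mS i) hi = mS i \<and>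
   joinU (mS i) (mS i) = mS i \<and> meetU (mS i) (mS i) = mS i"
proof -
  have "i = 0 \<or> i = 1 \<or> i = 2" using i3 by linarith
  then show ?thesis
  proof (elim disjE)
    assume "i = 0" then show ?thesis by (simp add: mS_vals lo_def hi_def gtab)
  next
    assume "i = 1" then show ?thesis by (simp add: mS_vals lo_def hi_def gtab)
  next
    assume "i = 2" then show ?thesis by (simp add: mS_vals lo_def hi_def gtab)
  qed
qed

lemma sub_CS: assumes "i < 3" shows "sub (CS i)"
proof -
  have "i = 0 \<or> i = 1 \<or> i = 2" using assms by linarith
  then have "mS i < 144" by (elim disjE) (simp_all add: mS_vals)
  then show ?thesis unfolding sub_def CS_def using C0_ops CS_ops[OF assms] bt_lt by auto
qed

lemma charC_CS: assumes "i < 3" shows "charC (CS i)"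
proof -
  consider "i = 0" | "i = 1" | "i = 2" using assms by linarith
  then show ?thesis
  proof cases
    case 1
    show ?thesis unfolding CS_def 1
      by (rule chain_char[where ?k1.0 = 0 and ?k2.0 = 2]) (use sub_CS[of 0] CS_ops[of 0] in \<open>simp_all add: CS_def mS_vals lo_def hi_def\<close>)
  next
    case 2
    show ?thesis unfolding CS_def 2
      by (rule chain_char[where ?k1.0 = 1 and ?k2.0 = 0]) (use sub_CS[of 1] CS_ops[of 1] in \<open>simp_all add: CS_def mS_vals lo_def hi_def\<close>)
  next
    case 3
    show ?thesis unfolding CS_def 3
      by (rule chain_char[where ?k1.0 = 0 and ?k2.0 = 1]) (use sub_CS[of 2] CS_ops[of 2] in \<open>simp_all add: CS_def mS_vals lo_def hi_def\<close>)
  qed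
qed




lemma gen_sl_char:
  assumes g: "\<And>g. g \<in> G \<Longrightarrow> g \<subseteq> A \<and> Q g" and q0: "Q {}" and qu: "\<And>a b. Q a \<Longrightarrow> Q b \<Longrightarrow> Q (a \<union> b)"
    and fin: "finite G" and rec: "\<And>S. S \<subseteq> A \<Longrightarrow> Q S \<Longrightarrow> S = \<Union>{g\<in>G. g \<subseteq> S}"
  shows "gen_sl G = {S. S \<subseteq> A \<and> Q S}"
proof
  show "gen_sl G \<subseteq> {S. S \<subseteq> A \<and> Q S}"
  proof
    fix S assume "S \<in> gen_sl G"
    then obtain F where F: "S = \<Union>F" "F \<subseteq> G" unfolding gen_sl_def by auto
    have fF: "finite F" using F(2) fin finite_subset by blast
    have "Q (\<Union> (id ` F))"
    proof (rule fin_union[OF fF])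
      show "\<forall>p\<in>F. Q (id p)" using F(2) g by auto
      show "Q {}" by (rule q0)
      show "\<And>a b. Q a \<Longrightarrow> Q b \<Longrightarrow> Q (a \<union> b)" by (rule qu)
    qed
    then show "S \<in> {S. S \<subseteq> A \<and> Q S}" using F g by auto
  qed
  show "{S. S \<subseteq> A \<and> Q S} \<subseteq> gen_sl G"
  proof
    fix S assume "S \<in> {S. S \<subseteq> A \<and> Q S}"
    then have "S = \<Union>{g\<in>G. g \<subseteq> S}" using rec by auto
    then show "S \<in> gen_sl G" unfolding gen_sl_def by blast
  qed
qed

lemma dif_mem[simp]: "c \<in> dif (x,y) \<longleftrightarrow> c < 5 \<and> pr c x \<noteq> pr c y" by (simp add: dif_def)
lemma dif_sym: "dif (x,y) = dif (y,x)" unfolding dif_def by auto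
lemma dif_sub: "dif p \<subseteq> {0,1,2,3,4}" unfolding dif_def by auto

lemma dif_eq: assumes "\<And>c. c < 5 \<Longrightarrow> (pr c x \<noteq> pr c y \<longleftrightarrow> c \<in> S)" "S \<subseteq> {0,1,2,3,4}"
  shows "dif (x,y) = S"
  using assms by auto

lemma Dset_eqI:
  assumes "\<And>x y. x \<in> C \<Longrightarrow> y \<in> C \<Longrightarrow> P (dif (x,y))" "P {}" "\<And>a b. P a \<Longrightarrow> P b \<Longrightarrow> P (a \<union> b)"
    "\<And>S. P S \<Longrightarrow> \<exists>x\<in>C. \<exists>y\<in>C. dif (x,y) = S"
  shows "Dset C = {S. P S}"
proof
  show "Dset C \<subseteq> {S. P S}" using Dset_sub[of C P, OF assms(1-3)] by auto
  show "{S. P S} \<subseteq> Dset C" using assms(4) Dset_wit by blast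
qed

lemma five_cases: "(c::nat) < 5 \<Longrightarrow> (c = 0 \<Longrightarrow> P) \<Longrightarrow> (c = 1 \<Longrightarrow> P) \<Longrightarrow> (c = 2 \<Longrightarrow> P) \<Longrightarrow> (c = 3 \<Longrightarrow> P) \<Longrightarrow> (c = 4 \<Longrightarrow> P) \<Longrightarrow> P"
  by linarith

lemma Dset_CU: "Dset CU = Pow {0,1,2,3,4}"
proof -
  have "Dset CU = {S. S \<subseteq> {0,1,2,3,4}}"
  proof (rule Dset_eqI)
    show "\<And>x y. x \<in> CU \<Longrightarrow> y \<in> CU \<Longrightarrow> dif (x,y) \<subseteq> {0,1,2,3,4}" using dif_sub by blast
    show "{} \<subseteq> {0,1,2,3,4::nat}" by simp
    show "\<And>a b. a \<subseteq> {0,1,2,3,4} \<Longrightarrow> b \<subseteq> {0,1,2,3,4} \<Longrightarrow> a \<union> b \<subseteq> {0,1,2,3,4::nat}" by simp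
    fix S :: "nat set" assume S: "S \<subseteq> {0,1,2,3,4}"
    define y where "y = enc (0 \<in> S) (1 \<in> S) (2 \<in> S) (3 \<in> S) (if 4 \<in> S then 1 else 0)"
    have "y \<in> CU" "lo \<in> CU" unfolding y_def CU_def using bt_lt by auto
    moreover have "dif (lo, y) = S"
    proof (rule dif_eq[OF _ S])
      fix c :: nat assume "c < 5"
      then show "pr c lo \<noteq> pr c y \<longleftrightarrow> c \<in> S"
        by (rule five_cases) (simp_all add: y_def lo_def)
    qed
    ultimately show "\<exists>x\<in>CU. \<exists>y\<in>CU. dif (x,y) = S" by blast
  qed
  then show ?thesis by auto
qed

lemma Dset_C0: "Dset C0 = {S. S = {} \<or> S = {0,1,2,3,4}}"
proof (rule Dset_eqI)
  have dbt: "dif (lo, hi) = {0,1,2,3,4}"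
  proof (rule dif_eq)
    fix c :: nat assume "c < 5"
    then show "pr c lo \<noteq> pr c hi \<longleftrightarrow> c \<in> {0,1,2,3,4}"
      by (rule five_cases) (simp_all add: hi_def lo_def)
  qed simp
  have dtb: "dif (hi, lo) = {0,1,2,3,4}" using dbt dif_sym by metis
  have dd: "dif (x,x) = {}" for x unfolding dif_def by auto
  show "\<And>x y. x \<in> C0 \<Longrightarrow> y \<in> C0 \<Longrightarrow> dif (x,y) = {} \<or> dif (x,y) = {0,1,2,3,4}"
    unfolding C0_def using dbt dtb dd by auto
  show "{} = {} \<or> {} = {0,1,2,3,4::nat}" by simp
  show "\<And>a b. a = {} \<or> a = {0,1,2,3,4} \<Longrightarrow> b = {} \<or> b = {0,1,2,3,4} \<Longrightarrow> a \<union> b = {} \<or> a \<union> b = {0,1,2,3,4::nat}"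
    by auto
  show "\<And>S. S = {} \<or> S = {0,1,2,3,4} \<Longrightarrow> \<exists>x\<in>C0. \<exists>y\<in>C0. dif (x,y) = S"
    unfolding C0_def using dbt dd by blast
qed

lemma Dset_CT0: "Dset (CT 0) = {S. S \<subseteq> {0,1,2,3,4} \<and> (4 \<in> S \<longleftrightarrow> 0 \<in> S \<or> 1 \<in> S)}"
proof (rule Dset_eqI)
  show "\<And>x y. x \<in> CT 0 \<Longrightarrow> y \<in> CT 0 \<Longrightarrow> dif (x,y) \<subseteq> {0,1,2,3,4} \<and> (4 \<in> dif (x,y) \<longleftrightarrow> 0 \<in> dif (x,y) \<or> 1 \<in> dif (x,y))"
  proof -
    fix x y assume "x \<in> CT 0" "y \<in> CT 0"
    then obtain a0 a1 a2 a3 b0 b1 b2 b3 where xy: "x = tj 0 a0 a1 a2 a3" "y = tj 0 b0 b1 b2 b3"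
      unfolding CT_def by auto
    have "(4 \<in> dif (x,y) \<longleftrightarrow> 0 \<in> dif (x,y) \<or> 1 \<in> dif (x,y))" unfolding xy by (cases a0; cases a1; cases b0; cases b1; simp add: gT_def)
    then show "dif (x,y) \<subseteq> {0,1,2,3,4} \<and> (4 \<in> dif (x,y) \<longleftrightarrow> 0 \<in> dif (x,y) \<or> 1 \<in> dif (x,y))" using dif_sub by blast
  qed
  show "{} \<subseteq> {0,1,2,3,4::nat} \<and> (4 \<in> {} \<longleftrightarrow> 0 \<in> {} \<or> 1 \<in> {})" by simp
  show "\<And>a b. a \<subseteq> {0,1,2,3,4} \<and> (4 \<in> a \<longleftrightarrow> 0 \<in> a \<or> 1 \<in> a) \<Longrightarrow> b \<subseteq> {0,1,2,3,4} \<and> (4 \<in> b \<longleftrightarrow> 0 \<in> b \<or> 1 \<in> b) \<Longrightarrow>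
      a \<union> b \<subseteq> {0,1,2,3,4::nat} \<and> (4 \<in> (a \<union> b) \<longleftrightarrow> 0 \<in> (a \<union> b) \<or> 1 \<in> (a \<union> b))" by auto
  fix S :: "nat set" assume S: "S \<subseteq> {0,1,2,3,4} \<and> (4 \<in> S \<longleftrightarrow> 0 \<in> S \<or> 1 \<in> S)"
  define y where "y = tj 0 (0 \<in> S) (1 \<in> S) (2 \<in> S) (3 \<in> S)"
  have "y \<in> CT 0" "lo \<in> CT 0" unfolding y_def CT_def lo_tj[of 0] by auto
  moreover have "dif (lo, y) = S"
  proof (rule dif_eq)
    show "S \<subseteq> {0,1,2,3,4}" using S by simp
    fix c :: nat assume "c < 5"
    then show "pr c lo \<noteq> pr c y \<longleftrightarrow> c \<in> S"
      by (rule five_cases) (use S in \<open>simp_all add: y_def lo_tj[of 0] gT_def\<close>)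
  qed
  ultimately show "\<exists>x\<in>CT 0. \<exists>y\<in>CT 0. dif (x,y) = S" by blast
qed

lemma Dset_CT1: "Dset (CT 1) = {S. S \<subseteq> {0,1,2,3,4} \<and> (4 \<in> S \<longleftrightarrow> 0 \<in> S \<or> 1 \<in> S \<or> 3 \<in> S)}"
proof (rule Dset_eqI)
  show "\<And>x y. x \<in> CT 1 \<Longrightarrow> y \<in> CT 1 \<Longrightarrow> dif (x,y) \<subseteq> {0,1,2,3,4} \<and> (4 \<in> dif (x,y) \<longleftrightarrow> 0 \<in> dif (x,y) \<or> 1 \<in> dif (x,y) \<or> 3 \<in> dif (x,y))"
  proof -
    fix x y assume "x \<in> CT 1" "y \<in> CT 1"
    then obtain a0 a1 a2 a3 b0 b1 b2 b3 where xy: "x = tj 1 a0 a1 a2 a3" "y = tj 1 b0 b1 b2 b3"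
      unfolding CT_def by auto
    have "(4 \<in> dif (x,y) \<longleftrightarrow> 0 \<in> dif (x,y) \<or> 1 \<in> dif (x,y) \<or> 3 \<in> dif (x,y))" unfolding xy by (cases a0; cases a1; cases a3; cases b0; cases b1; cases b3; simp add: gT_def)
    then show "dif (x,y) \<subseteq> {0,1,2,3,4} \<and> (4 \<in> dif (x,y) \<longleftrightarrow> 0 \<in> dif (x,y) \<or> 1 \<in> dif (x,y) \<or> 3 \<in> dif (x,y))" using dif_sub by blast
  qed
  show "{} \<subseteq> {0,1,2,3,4::nat} \<and> (4 \<in> {} \<longleftrightarrow> 0 \<in> {} \<or> 1 \<in> {} \<or> 3 \<in> {})" by simp
  show "\<And>a b. a \<subseteq> {0,1,2,3,4} \<and> (4 \<in> a \<longleftrightarrow> 0 \<in> a \<or> 1 \<in> a \<or> 3 \<in> a) \<Longrightarrow> b \<subseteq> {0,1,2,3,4} \<and> (4 \<in> b \<longleftrightarrow> 0 \<in> b \<or> 1 \<in> b \<or> 3 \<in> b) \<Longrightarrow>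
      a \<union> b \<subseteq> {0,1,2,3,4::nat} \<and> (4 \<in> (a \<union> b) \<longleftrightarrow> 0 \<in> (a \<union> b) \<or> 1 \<in> (a \<union> b) \<or> 3 \<in> (a \<union> b))" by auto
  fix S :: "nat set" assume S: "S \<subseteq> {0,1,2,3,4} \<and> (4 \<in> S \<longleftrightarrow> 0 \<in> S \<or> 1 \<in> S \<or> 3 \<in> S)"
  define y where "y = tj 1 (0 \<in> S) (1 \<in> S) (2 \<in> S) (3 \<in> S)"
  have "y \<in> CT 1" "lo \<in> CT 1" unfolding y_def CT_def lo_tj[of 1] by auto
  moreover have "dif (lo, y) = S"
  proof (rule dif_eq)
    show "S \<subseteq> {0,1,2,3,4}" using S by simp
    fix c :: nat assume "c < 5"
    then show "pr c lo \<noteq> pr c y \<longleftrightarrow> c \<in> S"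
      by (rule five_cases) (use S in \<open>simp_all add: y_def lo_tj[of 1] gT_def\<close>)
  qed
  ultimately show "\<exists>x\<in>CT 1. \<exists>y\<in>CT 1. dif (x,y) = S" by blast
qed

lemma Dset_CT2: "Dset (CT 2) = {S. S \<subseteq> {0,1,2,3,4} \<and> (4 \<in> S \<longleftrightarrow> 0 \<in> S \<or> 2 \<in> S)}"
proof (rule Dset_eqI)
  show "\<And>x y. x \<in> CT 2 \<Longrightarrow> y \<in> CT 2 \<Longrightarrow> dif (x,y) \<subseteq> {0,1,2,3,4} \<and> (4 \<in> dif (x,y) \<longleftrightarrow> 0 \<in> dif (x,y) \<or> 2 \<in> dif (x,y))"
  proof -
    fix x y assume "x \<in> CT 2" "y \<in> CT 2"
    then obtain a0 a1 a2 a3 b0 b1 b2 b3 where xy: "x = tj 2 a0 a1 a2 a3" "y = tj 2 b0 b1 b2 b3"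
      unfolding CT_def by auto
    have "(4 \<in> dif (x,y) \<longleftrightarrow> 0 \<in> dif (x,y) \<or> 2 \<in> dif (x,y))" unfolding xy by (cases a0; cases a2; cases b0; cases b2; simp add: gT_def)
    then show "dif (x,y) \<subseteq> {0,1,2,3,4} \<and> (4 \<in> dif (x,y) \<longleftrightarrow> 0 \<in> dif (x,y) \<or> 2 \<in> dif (x,y))" using dif_sub by blast
  qed
  show "{} \<subseteq> {0,1,2,3,4::nat} \<and> (4 \<in> {} \<longleftrightarrow> 0 \<in> {} \<or> 2 \<in> {})" by simp
  show "\<And>a b. a \<subseteq> {0,1,2,3,4} \<and> (4 \<in> a \<longleftrightarrow> 0 \<in> a \<or> 2 \<in> a) \<Longrightarrow> b \<subseteq> {0,1,2,3,4} \<and> (4 \<in> b \<longleftrightarrow> 0 \<in> b \<or> 2 \<in> b) \<Longrightarrow>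
      a \<union> b \<subseteq> {0,1,2,3,4::nat} \<and> (4 \<in> (a \<union> b) \<longleftrightarrow> 0 \<in> (a \<union> b) \<or> 2 \<in> (a \<union> b))" by auto
  fix S :: "nat set" assume S: "S \<subseteq> {0,1,2,3,4} \<and> (4 \<in> S \<longleftrightarrow> 0 \<in> S \<or> 2 \<in> S)"
  define y where "y = tj 2 (0 \<in> S) (1 \<in> S) (2 \<in> S) (3 \<in> S)"
  have "y \<in> CT 2" "lo \<in> CT 2" unfolding y_def CT_def lo_tj[of 2] by auto
  moreover have "dif (lo, y) = S"
  proof (rule dif_eq)
    show "S \<subseteq> {0,1,2,3,4}" using S by simp
    fix c :: nat assume "c < 5"
    then show "pr c lo \<noteq> pr c y \<longleftrightarrow> c \<in> S"
      by (rule five_cases) (use S in \<open>simp_all add: y_def lo_tj[of 2] gT_def\<close>)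
  qed
  ultimately show "\<exists>x\<in>CT 2. \<exists>y\<in>CT 2. dif (x,y) = S" by blast
qed

lemma Dset_CS0: "Dset (CS 0) = {S. S \<subseteq> {0,1,2,3,4} \<and> (0 \<in> S \<longleftrightarrow> 1 \<in> S) \<and> (2 \<in> S \<longleftrightarrow> 3 \<in> S) \<and> (4 \<in> S \<longleftrightarrow> 0 \<in> S \<or> 2 \<in> S)}"
proof (rule Dset_eqI)
  show "\<And>x y. x \<in> CS 0 \<Longrightarrow> y \<in> CS 0 \<Longrightarrow> dif (x,y) \<subseteq> {0,1,2,3,4} \<and> (0 \<in> dif (x,y) \<longleftrightarrow> 1 \<in> dif (x,y)) \<and> (2 \<in> dif (x,y) \<longleftrightarrow> 3 \<in> dif (x,y)) \<and> (4 \<in> dif (x,y) \<longleftrightarrow> 0 \<in> dif (x,y) \<or> 2 \<in> dif (x,y))"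
  proof -
    fix x y assume "x \<in> CS 0" "y \<in> CS 0"
    then have "(0 \<in> dif (x,y) \<longleftrightarrow> 1 \<in> dif (x,y)) \<and> (2 \<in> dif (x,y) \<longleftrightarrow> 3 \<in> dif (x,y)) \<and> (4 \<in> dif (x,y) \<longleftrightarrow> 0 \<in> dif (x,y) \<or> 2 \<in> dif (x,y))" unfolding CS_def by (auto simp: mS_vals lo_def hi_def)
    then show "dif (x,y) \<subseteq> {0,1,2,3,4} \<and> (0 \<in> dif (x,y) \<longleftrightarrow> 1 \<in> dif (x,y)) \<and> (2 \<in> dif (x,y) \<longleftrightarrow> 3 \<in> dif (x,y)) \<and> (4 \<in> dif (x,y) \<longleftrightarrow> 0 \<in> dif (x,y) \<or> 2 \<in> dif (x,y))" using dif_sub by blast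
  qed
  show "{} \<subseteq> {0,1,2,3,4::nat} \<and> (0 \<in> {} \<longleftrightarrow> 1 \<in> {}) \<and> (2 \<in> {} \<longleftrightarrow> 3 \<in> {}) \<and> (4 \<in> {} \<longleftrightarrow> 0 \<in> {} \<or> 2 \<in> {})" by simp
  show "\<And>a b. a \<subseteq> {0,1,2,3,4} \<and> (0 \<in> a \<longleftrightarrow> 1 \<in> a) \<and> (2 \<in> a \<longleftrightarrow> 3 \<in> a) \<and> (4 \<in> a \<longleftrightarrow> 0 \<in> a \<or> 2 \<in> a) \<Longrightarrow> b \<subseteq> {0,1,2,3,4} \<and> (0 \<in> b \<longleftrightarrow> 1 \<in> b) \<and> (2 \<in> b \<longleftrightarrow> 3 \<in> b) \<and> (4 \<in> b \<longleftrightarrow> 0 \<in> b \<or> 2 \<in> b) \<Longrightarrow>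
      a \<union> b \<subseteq> {0,1,2,3,4::nat} \<and> (0 \<in> (a \<union> b) \<longleftrightarrow> 1 \<in> (a \<union> b)) \<and> (2 \<in> (a \<union> b) \<longleftrightarrow> 3 \<in> (a \<union> b)) \<and> (4 \<in> (a \<union> b) \<longleftrightarrow> 0 \<in> (a \<union> b) \<or> 2 \<in> (a \<union> b))" by auto
  fix S :: "nat set" assume S: "S \<subseteq> {0,1,2,3,4} \<and> (0 \<in> S \<longleftrightarrow> 1 \<in> S) \<and> (2 \<in> S \<longleftrightarrow> 3 \<in> S) \<and> (4 \<in> S \<longleftrightarrow> 0 \<in> S \<or> 2 \<in> S)"
  define pp where "pp = (if 0 \<in> S then (if 2 \<in> S then (lo,hi) else (lo,mS 0)) else (if 2 \<in> S then (mS 0,hi) else (lo,lo)))"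
  have "fst pp \<in> CS 0" "snd pp \<in> CS 0" unfolding pp_def CS_def by auto
  moreover have "dif (fst pp, snd pp) = S"
  proof (rule dif_eq)
    show "S \<subseteq> {0,1,2,3,4}" using S by simp
    fix c :: nat assume c5: "c < 5"
    show "pr c (fst pp) \<noteq> pr c (snd pp) \<longleftrightarrow> c \<in> S"
    proof (cases "0 \<in> S"; cases "2 \<in> S")
      assume "0 \<in> S" "2 \<in> S"
      with c5 S show ?thesis by (rule_tac five_cases[OF c5]) (simp_all add: pp_def mS_vals lo_def hi_def)
    next
      assume "0 \<in> S" "2 \<notin> S"
      with c5 S show ?thesis by (rule_tac five_cases[OF c5]) (simp_all add: pp_def mS_vals lo_def hi_def)
    next
      assume "0 \<notin> S" "2 \<in> S"
      with c5 S show ?thesis by (rule_tac five_cases[OF c5]) (simp_all add: pp_def mS_vals lo_def hi_def)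
    next
      assume "0 \<notin> S" "2 \<notin> S"
      with c5 S show ?thesis by (rule_tac five_cases[OF c5]) (simp_all add: pp_def mS_vals lo_def hi_def)
    qed
  qed
  ultimately show "\<exists>x\<in>CS 0. \<exists>y\<in>CS 0. dif (x,y) = S" by (metis prod.collapse)
qed

lemma S_sl0: "S_sl 0 = {S. S \<subseteq> {0,1,2,3,4} \<and> (0 \<in> S \<longleftrightarrow> 1 \<in> S) \<and> (2 \<in> S \<longleftrightarrow> 3 \<in> S) \<and> (4 \<in> S \<longleftrightarrow> 0 \<in> S \<or> 2 \<in> S)}"
  unfolding S_sl_def by (simp, rule gen_sl_char) auto

lemma Dset_CS1: "Dset (CS 1) = {S. S \<subseteq> {0,1,2,3,4} \<and> (0 \<in> S \<longleftrightarrow> 3 \<in> S) \<and> (1 \<in> S \<longleftrightarrow> 2 \<in> S) \<and> (4 \<in> S \<longleftrightarrow> 0 \<in> S \<or> 1 \<in> S)}"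
proof (rule Dset_eqI)
  show "\<And>x y. x \<in> CS 1 \<Longrightarrow> y \<in> CS 1 \<Longrightarrow> dif (x,y) \<subseteq> {0,1,2,3,4} \<and> (0 \<in> dif (x,y) \<longleftrightarrow> 3 \<in> dif (x,y)) \<and> (1 \<in> dif (x,y) \<longleftrightarrow> 2 \<in> dif (x,y)) \<and> (4 \<in> dif (x,y) \<longleftrightarrow> 0 \<in> dif (x,y) \<or> 1 \<in> dif (x,y))"
  proof -
    fix x y assume "x \<in> CS 1" "y \<in> CS 1"
    then have "(0 \<in> dif (x,y) \<longleftrightarrow> 3 \<in> dif (x,y)) \<and> (1 \<in> dif (x,y) \<longleftrightarrow> 2 \<in> dif (x,y)) \<and> (4 \<in> dif (x,y) \<longleftrightarrow> 0 \<in> dif (x,y) \<or> 1 \<in> dif (x,y))" unfolding CS_def by (auto simp: mS_vals lo_def hi_def)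
    then show "dif (x,y) \<subseteq> {0,1,2,3,4} \<and> (0 \<in> dif (x,y) \<longleftrightarrow> 3 \<in> dif (x,y)) \<and> (1 \<in> dif (x,y) \<longleftrightarrow> 2 \<in> dif (x,y)) \<and> (4 \<in> dif (x,y) \<longleftrightarrow> 0 \<in> dif (x,y) \<or> 1 \<in> dif (x,y))" using dif_sub by blast
  qed
  show "{} \<subseteq> {0,1,2,3,4::nat} \<and> (0 \<in> {} \<longleftrightarrow> 3 \<in> {}) \<and> (1 \<in> {} \<longleftrightarrow> 2 \<in> {}) \<and> (4 \<in> {} \<longleftrightarrow> 0 \<in> {} \<or> 1 \<in> {})" by simp
  show "\<And>a b. a \<subseteq> {0,1,2,3,4} \<and> (0 \<in> a \<longleftrightarrow> 3 \<in> a) \<and> (1 \<in> a \<longleftrightarrow> 2 \<in> a) \<and> (4 \<in> a \<longleftrightarrow> 0 \<in> a \<or> 1 \<in> a) \<Longrightarrow> b \<subseteq> {0,1,2,3,4} \<and> (0 \<in> b \<longleftrightarrow> 3 \<in> b) \<and> (1 \<in> b \<longleftrightarrow> 2 \<in> b) \<and> (4 \<in> b \<longleftrightarrow> 0 \<in> b \<or> 1 \<in> b) \<Longrightarrow>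
      a \<union> b \<subseteq> {0,1,2,3,4::nat} \<and> (0 \<in> (a \<union> b) \<longleftrightarrow> 3 \<in> (a \<union> b)) \<and> (1 \<in> (a \<union> b) \<longleftrightarrow> 2 \<in> (a \<union> b)) \<and> (4 \<in> (a \<union> b) \<longleftrightarrow> 0 \<in> (a \<union> b) \<or> 1 \<in> (a \<union> b))" by auto
  fix S :: "nat set" assume S: "S \<subseteq> {0,1,2,3,4} \<and> (0 \<in> S \<longleftrightarrow> 3 \<in> S) \<and> (1 \<in> S \<longleftrightarrow> 2 \<in> S) \<and> (4 \<in> S \<longleftrightarrow> 0 \<in> S \<or> 1 \<in> S)"
  define pp where "pp = (if 0 \<in> S then (if 1 \<in> S then (lo,hi) else (mS 1,hi)) else (if 1 \<in> S then (lo,mS 1) else (lo,lo)))"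
  have "fst pp \<in> CS 1" "snd pp \<in> CS 1" unfolding pp_def CS_def by auto
  moreover have "dif (fst pp, snd pp) = S"
  proof (rule dif_eq)
    show "S \<subseteq> {0,1,2,3,4}" using S by simp
    fix c :: nat assume c5: "c < 5"
    show "pr c (fst pp) \<noteq> pr c (snd pp) \<longleftrightarrow> c \<in> S"
    proof (cases "0 \<in> S"; cases "1 \<in> S")
      assume "0 \<in> S" "1 \<in> S"
      with c5 S show ?thesis by (rule_tac five_cases[OF c5]) (simp_all add: pp_def mS_vals lo_def hi_def)
    next
      assume "0 \<in> S" "1 \<notin> S"
      with c5 S show ?thesis by (rule_tac five_cases[OF c5]) (simp_all add: pp_def mS_vals lo_def hi_def)
    next
      assume "0 \<notin> S" "1 \<in> S"
      with c5 S show ?thesis by (rule_tac five_cases[OF c5]) (simp_all add: pp_def mS_vals lo_def hi_def)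
    next
      assume "0 \<notin> S" "1 \<notin> S"
      with c5 S show ?thesis by (rule_tac five_cases[OF c5]) (simp_all add: pp_def mS_vals lo_def hi_def)
    qed
  qed
  ultimately show "\<exists>x\<in>CS 1. \<exists>y\<in>CS 1. dif (x,y) = S" by (metis prod.collapse)
qed

lemma S_sl1: "S_sl 1 = {S. S \<subseteq> {0,1,2,3,4} \<and> (0 \<in> S \<longleftrightarrow> 3 \<in> S) \<and> (1 \<in> S \<longleftrightarrow> 2 \<in> S) \<and> (4 \<in> S \<longleftrightarrow> 0 \<in> S \<or> 1 \<in> S)}"
  unfolding S_sl_def by (simp, rule gen_sl_char) auto

lemma Dset_CS2: "Dset (CS 2) = {S. S \<subseteq> {0,1,2,3,4} \<and> (0 \<in> S \<longleftrightarrow> 2 \<in> S) \<and> (1 \<in> S \<longleftrightarrow> 3 \<in> S) \<and> (4 \<in> S \<longleftrightarrow> 0 \<in> S \<or> 1 \<in> S)}"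
proof (rule Dset_eqI)
  show "\<And>x y. x \<in> CS 2 \<Longrightarrow> y \<in> CS 2 \<Longrightarrow> dif (x,y) \<subseteq> {0,1,2,3,4} \<and> (0 \<in> dif (x,y) \<longleftrightarrow> 2 \<in> dif (x,y)) \<and> (1 \<in> dif (x,y) \<longleftrightarrow> 3 \<in> dif (x,y)) \<and> (4 \<in> dif (x,y) \<longleftrightarrow> 0 \<in> dif (x,y) \<or> 1 \<in> dif (x,y))"
  proof -
    fix x y assume "x \<in> CS 2" "y \<in> CS 2"
    then have "(0 \<in> dif (x,y) \<longleftrightarrow> 2 \<in> dif (x,y)) \<and> (1 \<in> dif (x,y) \<longleftrightarrow> 3 \<in> dif (x,y)) \<and> (4 \<in> dif (x,y) \<longleftrightarrow> 0 \<in> dif (x,y) \<or> 1 \<in> dif (x,y))" unfolding CS_def by (auto simp: mS_vals lo_def hi_def)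
    then show "dif (x,y) \<subseteq> {0,1,2,3,4} \<and> (0 \<in> dif (x,y) \<longleftrightarrow> 2 \<in> dif (x,y)) \<and> (1 \<in> dif (x,y) \<longleftrightarrow> 3 \<in> dif (x,y)) \<and> (4 \<in> dif (x,y) \<longleftrightarrow> 0 \<in> dif (x,y) \<or> 1 \<in> dif (x,y))" using dif_sub by blast
  qed
  show "{} \<subseteq> {0,1,2,3,4::nat} \<and> (0 \<in> {} \<longleftrightarrow> 2 \<in> {}) \<and> (1 \<in> {} \<longleftrightarrow> 3 \<in> {}) \<and> (4 \<in> {} \<longleftrightarrow> 0 \<in> {} \<or> 1 \<in> {})" by simp
  show "\<And>a b. a \<subseteq> {0,1,2,3,4} \<and> (0 \<in> a \<longleftrightarrow> 2 \<in> a) \<and> (1 \<in> a \<longleftrightarrow> 3 \<in> a) \<and> (4 \<in> a \<longleftrightarrow> 0 \<in> a \<or> 1 \<in> a) \<Longrightarrow> b \<subseteq> {0,1,2,3,4} \<and> (0 \<in> b \<longleftrightarrow> 2 \<in> b) \<and> (1 \<in> b \<longleftrightarrow> 3 \<in> b) \<and> (4 \<in> b \<longleftrightarrow> 0 \<in> b \<or> 1 \<in> b) \<Longrightarrow>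
      a \<union> b \<subseteq> {0,1,2,3,4::nat} \<and> (0 \<in> (a \<union> b) \<longleftrightarrow> 2 \<in> (a \<union> b)) \<and> (1 \<in> (a \<union> b) \<longleftrightarrow> 3 \<in> (a \<union> b)) \<and> (4 \<in> (a \<union> b) \<longleftrightarrow> 0 \<in> (a \<union> b) \<or> 1 \<in> (a \<union> b))" by auto
  fix S :: "nat set" assume S: "S \<subseteq> {0,1,2,3,4} \<and> (0 \<in> S \<longleftrightarrow> 2 \<in> S) \<and> (1 \<in> S \<longleftrightarrow> 3 \<in> S) \<and> (4 \<in> S \<longleftrightarrow> 0 \<in> S \<or> 1 \<in> S)"
  define pp where "pp = (if 0 \<in> S then (if 1 \<in> S then (lo,hi) else (lo,mS 2)) else (if 1 \<in> S then (mS 2,hi) else (lo,lo)))"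
  have "fst pp \<in> CS 2" "snd pp \<in> CS 2" unfolding pp_def CS_def by auto
  moreover have "dif (fst pp, snd pp) = S"
  proof (rule dif_eq)
    show "S \<subseteq> {0,1,2,3,4}" using S by simp
    fix c :: nat assume c5: "c < 5"
    show "pr c (fst pp) \<noteq> pr c (snd pp) \<longleftrightarrow> c \<in> S"
    proof (cases "0 \<in> S"; cases "1 \<in> S")
      assume "0 \<in> S" "1 \<in> S"
      with c5 S show ?thesis by (rule_tac five_cases[OF c5]) (simp_all add: pp_def mS_vals lo_def hi_def)
    next
      assume "0 \<in> S" "1 \<notin> S"
      with c5 S show ?thesis by (rule_tac five_cases[OF c5]) (simp_all add: pp_def mS_vals lo_def hi_def)
    next
      assume "0 \<notin> S" "1 \<in> S"
      with c5 S show ?thesis by (rule_tac five_cases[OF c5]) (simp_all add: pp_def mS_vals lo_def hi_def)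
    next
      assume "0 \<notin> S" "1 \<notin> S"
      with c5 S show ?thesis by (rule_tac five_cases[OF c5]) (simp_all add: pp_def mS_vals lo_def hi_def)
    qed
  qed
  ultimately show "\<exists>x\<in>CS 2. \<exists>y\<in>CS 2. dif (x,y) = S" by (metis prod.collapse)
qed

lemma S_sl2: "S_sl 2 = {S. S \<subseteq> {0,1,2,3,4} \<and> (0 \<in> S \<longleftrightarrow> 2 \<in> S) \<and> (1 \<in> S \<longleftrightarrow> 3 \<in> S) \<and> (4 \<in> S \<longleftrightarrow> 0 \<in> S \<or> 1 \<in> S)}"
  unfolding S_sl_def by (simp, rule gen_sl_char) auto

lemma T_sl0: "T_sl 0 = {S. S \<subseteq> {0,1,2,3,4} \<and> (4 \<in> S \<longleftrightarrow> 0 \<in> S \<or> 1 \<in> S)}"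
  unfolding T_sl_def xi_gens_def by (simp, rule gen_sl_char) auto

lemma T_sl1: "T_sl 1 = {S. S \<subseteq> {0,1,2,3,4} \<and> (4 \<in> S \<longleftrightarrow> 0 \<in> S \<or> 1 \<in> S \<or> 3 \<in> S)}"
  unfolding T_sl_def eta_gens_def by (simp, rule gen_sl_char) auto

lemma T_sl2: "T_sl 2 = {S. S \<subseteq> {0,1,2,3,4} \<and> (4 \<in> S \<longleftrightarrow> 0 \<in> S \<or> 2 \<in> S)}"
  unfolding T_sl_def zeta_gens_def by (simp, rule gen_sl_char) auto




definition Cp :: "nat set \<Rightarrow> nat set" where
  "Cp p = (if 0 \<in> p \<and> 1 \<in> p \<and> 2 \<in> p then CU else if 1 \<in> p \<and> 2 \<in> p then CT 0
     else if 0 \<in> p \<and> 2 \<in> p then CT 1 else if 0 \<in> p \<and> 1 \<in> p then CT 2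
     else if 0 \<in> p then CS 0 else if 1 \<in> p then CS 1 else if 2 \<in> p then CS 2 else C0)"

lemma subs3: assumes "p \<subseteq> {0,1,2::nat}"
  shows "p = {} \<or> p = {0} \<or> p = {1} \<or> p = {2} \<or> p = {1,2} \<or> p = {0,2} \<or> p = {0,1} \<or> p = {0,1,2}"
proof (cases "0 \<in> p"; cases "1 \<in> p"; cases "2 \<in> p")
  assume "0 \<in> p" "1 \<in> p" "2 \<in> p" then have "p = {0,1,2}" using assms by auto then show ?thesis by simp
next
  assume "0 \<in> p" "1 \<in> p" "2 \<notin> p" then have "p = {0,1}" using assms by auto then show ?thesis by simp
next
  assume "0 \<in> p" "1 \<notin> p" "2 \<in> p" then have "p = {0,2}" using assms by auto then show ?thesis by simp
next
  assume "0 \<in> p" "1 \<notin> p" "2 \<notin> p" then have "p = {0}" using assms by auto then show ?thesis by simp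
next
  assume "0 \<notin> p" "1 \<in> p" "2 \<in> p" then have "p = {1,2}" using assms by auto then show ?thesis by simp
next
  assume "0 \<notin> p" "1 \<in> p" "2 \<notin> p" then have "p = {1}" using assms by auto then show ?thesis by simp
next
  assume "0 \<notin> p" "1 \<notin> p" "2 \<in> p" then have "p = {2}" using assms by auto then show ?thesis by simp
next
  assume "0 \<notin> p" "1 \<notin> p" "2 \<notin> p" then have "p = {}" using assms by auto then show ?thesis by simp
qed

lemma Dc_vals: "Dc {} = two_sl" "Dc {0} = S_sl 0" "Dc {1} = S_sl 1" "Dc {2} = S_sl 2"
  "Dc {1,2} = T_sl 0" "Dc {0,2} = T_sl 1" "Dc {0,1} = T_sl 2" "Dc {0,1,2} = U_sl"
proof -
  have ne_by: "\<And>x A B. x \<in> B \<Longrightarrow> x \<notin> A \<Longrightarrow> A \<noteq> B" by blast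
  have n0: "({0}::nat set) \<noteq> {0,1,2}" by (rule ne_by[of 1]) simp_all
  have n1: "({1}::nat set) \<noteq> {0,1,2}" by (rule ne_by[of 0]) simp_all
  have n2: "({2}::nat set) \<noteq> {0,1,2}" by (rule ne_by[of 0]) simp_all
  have n3: "({1,2}::nat set) \<noteq> {0,1,2}" by (rule ne_by[of 0]) simp_all
  have n4: "({0,2}::nat set) \<noteq> {0,1,2}" by (rule ne_by[of 1]) simp_all
  have n5: "({0,1}::nat set) \<noteq> {0,1,2}" by (rule ne_by[of 2]) simp_all
  note n = n0 n1 n2 n3 n4 n5
  have d: "{0,1,2} - {1,2} = ({0}::nat set)" "{0,1,2} - {0,2} = ({1}::nat set)" "{0,1,2} - {0,1} = ({2}::nat set)" by auto
  show "Dc {} = two_sl" "Dc {0} = S_sl 0" "Dc {1} = S_sl 1" "Dc {2} = S_sl 2"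
    "Dc {1,2} = T_sl 0" "Dc {0,2} = T_sl 1" "Dc {0,1} = T_sl 2" "Dc {0,1,2} = U_sl"
    unfolding Dc_def using n d by simp_all
qed

lemma two_sl_eq: "two_sl = {S. S = {} \<or> S = {0,1,2,3,4}}" unfolding two_sl_def by auto

definition good :: "nat set \<Rightarrow> bool" where
  "good p \<longleftrightarrow> sub (Cp p) \<and> charC (Cp p) \<and> Dset (Cp p) = Dc p"

lemma good_all: assumes "p \<subseteq> {0,1,2}" shows "good p"
proof -
  have "good {}" unfolding good_def Cp_def Dc_vals two_sl_eq using sub_C0 charC_C0 Dset_C0 by simp
  moreover have "good {0}" unfolding good_def Cp_def Dc_vals S_sl0 using sub_CS[of 0] charC_CS[of 0] Dset_CS0 by simp
  moreover have "good {1}" unfolding good_def Cp_def Dc_vals S_sl1 using sub_CS[of 1] charC_CS[of 1] Dset_CS1 by simp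
  moreover have "good {2}" unfolding good_def Cp_def Dc_vals S_sl2 using sub_CS[of 2] charC_CS[of 2] Dset_CS2 by simp
  moreover have "good {1,2}" unfolding good_def Cp_def Dc_vals T_sl0 using sub_CT[of 0] charC_CT[of 0] Dset_CT0 by simp
  moreover have "good {0,2}" unfolding good_def Cp_def Dc_vals T_sl1 using sub_CT[of 1] charC_CT[of 1] Dset_CT1 by simp
  moreover have "good {0,1}" unfolding good_def Cp_def Dc_vals T_sl2 using sub_CT[of 2] charC_CT[of 2] Dset_CT2 by simp
  moreover have "good {0,1,2}" unfolding good_def Cp_def Dc_vals U_sl_def using sub_CU charC_CU Dset_CU by simp
  ultimately show ?thesis using subs3[OF assms] by auto
qed

lemma mS_CT: "mS 0 \<in> CT 1" "mS 0 \<in> CT 2" "mS 1 \<in> CT 0" "mS 1 \<in> CT 2" "mS 2 \<in> CT 0" "mS 2 \<in> CT 1"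
proof -
  have "mS 0 = tj 1 True True False False" "mS 0 = tj 2 True True False False"
    "mS 1 = tj 0 False True True False" "mS 1 = tj 2 False True True False"
    "mS 2 = tj 0 True False True False" "mS 2 = tj 1 True False True False"
    by (simp_all add: mS_vals tj_def gT_def)
  then show "mS 0 \<in> CT 1" "mS 0 \<in> CT 2" "mS 1 \<in> CT 0" "mS 1 \<in> CT 2" "mS 2 \<in> CT 0" "mS 2 \<in> CT 1"
    unfolding CT_def by blast+
qed

lemma incl_basic:
  "C0 \<subseteq> CS i" "i < 3 \<Longrightarrow> CS i \<subseteq> CU" "C0 \<subseteq> CU" "j < 3 \<Longrightarrow> C0 \<subseteq> CT j" "CT j \<subseteq> CU"
  "CS 0 \<subseteq> CT 1" "CS 0 \<subseteq> CT 2" "CS 1 \<subseteq> CT 0" "CS 1 \<subseteq> CT 2" "CS 2 \<subseteq> CT 0" "CS 2 \<subseteq> CT 1"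
proof -
  have l: "lo \<in> CT j" for j unfolding CT_def lo_tj[of j] by blast
  have h: "hi \<in> CT j" if "j < 3" for j unfolding CT_def hi_tj[OF that] by blast
  show "C0 \<subseteq> CS i" unfolding C0_def CS_def by auto
  show "i < 3 \<Longrightarrow> CS i \<subseteq> CU" using sub_CS unfolding sub_def CU_def by auto
  show "C0 \<subseteq> CU" unfolding C0_def CU_def using bt_lt by auto
  show "CT j \<subseteq> CU" unfolding CT_def CU_def using tj_lt by auto
  show "j < 3 \<Longrightarrow> C0 \<subseteq> CT j" unfolding C0_def using l h by auto
  show "CS 0 \<subseteq> CT 1" "CS 0 \<subseteq> CT 2" "CS 1 \<subseteq> CT 0" "CS 1 \<subseteq> CT 2" "CS 2 \<subseteq> CT 0" "CS 2 \<subseteq> CT 1"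
    unfolding CS_def using mS_CT l h by auto
qed

lemma Cp_mono: assumes pq: "p \<subseteq> q" and q3: "q \<subseteq> {0,1,2}" shows "Cp p \<subseteq> Cp q"
proof -
  have p3: "p \<subseteq> {0,1,2}" using pq q3 by auto
  have i: "CS 0 \<subseteq> CU" "CS 1 \<subseteq> CU" "CS 2 \<subseteq> CU" "C0 \<subseteq> CT 0" "C0 \<subseteq> CT 1" "C0 \<subseteq> CT 2"
    using incl_basic by auto
  have m: "0 \<in> p \<Longrightarrow> 0 \<in> q" "1 \<in> p \<Longrightarrow> 1 \<in> q" "2 \<in> p \<Longrightarrow> 2 \<in> q" using pq by auto
  have m': "Suc 0 \<in> p \<Longrightarrow> Suc 0 \<in> q" using m(2) by simp
  have i2: "CS (Suc 0) \<subseteq> CT 0" "CS (Suc 0) \<subseteq> CT 2" "CS 0 \<subseteq> CT (Suc 0)" "CS 2 \<subseteq> CT (Suc 0)"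
    "CS (Suc 0) \<subseteq> CU" "C0 \<subseteq> CT (Suc 0)" "C0 \<subseteq> CS (Suc 0)" "CT (Suc 0) \<subseteq> CU"
    using incl_basic i by simp_all
  show ?thesis
    by (cases "0 \<in> p"; cases "1 \<in> p"; cases "2 \<in> p"; cases "0 \<in> q"; cases "1 \<in> q"; cases "2 \<in> q")
       (simp_all add: m m' Cp_def i i2 incl_basic)
qed

theorem theorem6p1:
  "\<exists>(L :: nat set \<Rightarrow> nat latt) (f :: nat set \<Rightarrow> nat set \<Rightarrow> nat \<Rightarrow> nat).
     lattice_diagram L f \<and>
     (\<forall>p. p \<subseteq> {0,1,2} \<longrightarrow> finite (lcarrier (L p))) \<and>
     (\<forall>p q. p \<subseteq> q \<and> q \<subseteq> {0,1,2} \<longrightarrow> lattice_embedding (L p) (L q) (f p q)) \<and>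
     lifts_Dc L f"
proof (intro exI conjI)
  let ?L = "\<lambda>p. LL (Cp p)"
  let ?f = "\<lambda>(p::nat set) (q::nat set) (x::nat). x"
  have G: "\<And>p. p \<subseteq> {0,1,2} \<Longrightarrow> sub (Cp p) \<and> charC (Cp p) \<and> Dset (Cp p) = Dc p"
    using good_all unfolding good_def by blast
  have hom: "lattice_hom (?L p) (?L q) (?f p q)" if "p \<subseteq> q \<and> q \<subseteq> {0,1,2}" for p q
  proof -
    have p3: "p \<subseteq> {0,1,2}" and pq: "Cp p \<subseteq> Cp q" using that Cp_mono by auto
    have "sub (Cp p)" using G[OF p3] by blast
    from sub_hom[OF this pq] show ?thesis by simp
  qed
  show "lattice_diagram ?L ?f"
    unfolding lattice_diagram_def
  proof (intro conjI allI impI ballI)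
    fix p :: "nat set" assume "p \<subseteq> {0,1,2}"
    then show "is_lattice (?L p)" using G sub_lattice by blast
  next
    fix p q :: "nat set" assume "p \<subseteq> q \<and> q \<subseteq> {0,1,2}"
    then show "lattice_hom (?L p) (?L q) (?f p q)" by (rule hom)
  qed simp_all
  show "\<forall>p. p \<subseteq> {0,1,2} \<longrightarrow> finite (lcarrier (?L p))"
  proof (intro allI impI)
    fix p :: "nat set" assume "p \<subseteq> {0,1,2}"
    then have "Cp p \<subseteq> {..<144}" using G unfolding sub_def by blast
    then show "finite (lcarrier (?L p))" using finite_subset by auto
  qed
  show "\<forall>p q. p \<subseteq> q \<and> q \<subseteq> {0,1,2} \<longrightarrow> lattice_embedding (?L p) (?L q) (?f p q)"
    unfolding lattice_embedding_def using hom by auto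
  show "lifts_Dc ?L ?f"
    unfolding lifts_Dc_def
  proof (intro exI[of _ "\<lambda>p. D"] conjI allI impI ballI)
    fix p :: "nat set" assume p3: "p \<subseteq> {0,1,2}"
    have sp: "sub (Cp p)" and cp: "charC (Cp p)" and dp: "Dset (Cp p) = Dc p" using G[OF p3] by auto
    show "bij_betw D (Con_c (?L p)) (Dc p)"
      unfolding bij_betw_def using inj_D[OF sp cp] img_D[OF sp] dp unfolding Dset_def by simp
    show "D (con_zero (?L p)) = {}" unfolding con_zero_def by (simp add: D_Id)
    fix a b assume a: "a \<in> Con_c (?L p)" and b: "b \<in> Con_c (?L p)"
    have "a \<subseteq> Cp p \<times> Cp p" "b \<subseteq> Cp p \<times> Cp p" using Con_c_cong[OF sp] cong_sub a b by blast+
    then have "a \<union> b \<subseteq> Cp p \<times> Cp p" by blast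
    then show "D (con_join (?L p) a b) = D a \<union> D b" unfolding con_join_def using D_Cg[OF sp] D_Un by simp
  next
    fix p q :: "nat set" and a assume pq: "p \<subseteq> q \<and> q \<subseteq> {0,1,2}" and a: "a \<in> Con_c (?L p)"
    have p3: "p \<subseteq> {0,1,2}" using pq by auto
    have sp: "sub (Cp p)" and sq: "sub (Cp q)" using G p3 pq by auto
    have "a \<subseteq> Cp p \<times> Cp p" using Con_c_cong[OF sp] cong_sub a by blast
    moreover have "Cp p \<subseteq> Cp q" using Cp_mono pq by auto
    ultimately have aq: "a \<subseteq> Cp q \<times> Cp q" by blast
    have im: "(\<lambda>(x, y). (?f p q x, ?f p q y)) ` a = a" by auto
    show "D (Con_c_map (?L q) (?f p q) a) = D a"
      unfolding Con_c_map_def im using D_Cg[OF sq aq] .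
  qed
qed



end
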